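(* A road map $(\{H^\alpha_p\},\{V^\beta_q\})$ is straight if and only if all of the following hold: (a) for each arrow $h_k$ and all $1\le p\le u_{\mathrm{t}(h_k)}$, $1\le q\le u_{\mathrm{s}(h_k)}$, the intersection $H^{\mathrm{t}(h_k)}_p|_k\cap V^{\mathrm{s}(h_k)}_q|_k$ is a (nonempty) connected path $P^k_{pq}\rightsquigarrow Q^k_{pq}$, with SW endpoint $P^k_{pq}$ and NE endpoint $Q^k_{pq}$; (b) for each $\alpha\in V_{\rm target}$, with $r_1<\dots<r_s$ the indices of the arrows with target $\alpha$, and each $p$, the path $H^\alpha_p$ is the unique path obtained by joining, from SW to NE, by straight horizontal segments, the following in order: the point $(a_\alpha-u_\alpha+p,1)$; the subpaths $P^{r_1}_{p,1}\rightsquigarrow Q^{r_1}_{p,1},\dots,P^{r_1}_{p,u_{\mathrm{s}(h_{r_1})}}\rightsquigarrow Q^{r_1}_{p,u_{\mathrm{s}(h_{r_1})}}$; then the analogous subpaths for $r_2$, ..., for $r_s$ (all regarded in $A_\alpha$); and the point $(p,b_\alpha)$; (c) for each $\beta\in V_{\rm source}$, with $r'_1<\dots<r'_t$ the indices of the arrows with source $\beta$, and each $q$, the path $V^\beta_q$ is the unique path obtained by joining, from NE to SW, by straight vertical segments, the following in order: the point $(1,b_\beta-u_\beta+q)$; the subpaths $Q^{r'_1}_{1,q}\rightsquigarrow P^{r'_1}_{1,q},\dots,Q^{r'_1}_{u_{\mathrm{t}(h_{r'_1})},q}\rightsquigarrow P^{r'_1}_{u_{\mathrm{t}(h_{r'_1})},q}$;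 then the analogous subpaths for $r'_2$, ..., for $r'_t$ (all regarded in $A_\beta$); and the point $(a_\beta,q)$.
   Context: Let $\mathcal{Q}$ be a bipartite quiver with vertex set $V_{\mathcal{Q}}=V_{\rm source}\sqcup V_{\rm target}$ and arrows $h_1,\dots,h_r$, each $h_k$ from $\mathrm{s}(h_k)\in V_{\rm source}$ to $\mathrm{t}(h_k)\in V_{\rm target}$. Let $\mathbf{m}=(m_\gamma)$, $\mathbf{u}=(u_\gamma)$ be tuples of nonnegative integers indexed by $V_{\mathcal{Q}}$. For $k=1,\dots,r$ let $X^{(k)}$ be an $m_{\mathrm{t}(h_k)}\times m_{\mathrm{s}(h_k)}$ matrix of variables $x^{(k)}_{ij}$; page $k$ is the grid $[1,m_{\mathrm{t}(h_k)}]\times[1,m_{\mathrm{s}(h_k)}]$. For $\alpha\in V_{\rm target}$ with $r_1<\dots<r_s$ the indices of arrows with target $\alpha$, $A_\alpha=[X^{(r_1)}|\cdots|X^{(r_s)}]$; for $\beta\in V_{\rm source}$ with $r'_1<\dots<r'_t$ the indices of arrows with source $\beta$, $A_\beta$ is the stack of $X^{(r'_1)},\dots,X^{(r'_t)}$ top to bottom. $a_\gamma\times b_\gamma$ is the size of $A_\gamma$; $v_\alpha=\sum_{k:\mathrm{t}(h_k)=\alpha}u_{\mathrm{s}(h_k)}$, $v_\beta=\sum_{k:\mathrm{s}(h_k)=\beta}u_{\mathrm{t}(h_k)}$. Standing assumption: $0<u_\gamma\le\min(a_\gamma,b_\gamma)$, $u_\alpha\le v_\alpha$, $u_\beta\le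 v_\beta$. $L=\{(i,j,k):1\le k\le r,(i,j)\text{ in page }k\}$; $\phi_\gamma$ sends a position $(p,q)$ of $A_\gamma$ to $(i,j,k)$ if that entry is $x^{(k)}_{ij}$ (so each page is a block of $A_{\mathrm{t}(h_k)}$ and a block of $A_{\mathrm{s}(h_k)}$). Coordinates $(i,j)$: $i$ row index (increasing downward; north = decreasing $i$), $j$ column index (increasing eastward). A path is a lattice path with unit steps going east $(0,1)$ or north $(-1,0)$ from its SW endpoint to its NE endpoint; nonintersecting = no shared vertex; a path is straight horizontal (vertical) if it has no vertical (horizontal) edge. A corner of a path is a vertex adjacent to both a horizontal and a vertical edge of it. A road map consists of, for each $\alpha\in V_{\rm target}$, nonintersecting paths $H^\alpha_1,\dots,H^\alpha_{u_\alpha}$ in the grid of $A_\alpha$, $H^\alpha_p$ with endpoints $(a_\alpha-u_\alpha+p,1)$ and $(p,b_\alpha)$, and for each $\beta\in V_{\rm source}$ nonintersecting paths $V^\beta_1,\dots,V^\beta_{u_\beta}$ in the grid of $A_\beta$, $V^\beta_q$ with endpoints $(1,b_\beta-u_\beta+q)$ and $(a_\beta,q)$. $H|_k$ denotes the restriction of a path $H$ to the block of page $k$, regarded in page-$k$ coordinates. The road map is straight if every corner of a horizontal path lies (via the $\phi_\gamma$, as a point of $L$) on some vertical path and every corner of a vertical path lies on some horizontal path. *)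

theory Defs
  imports Main
begin

text \<open>Points of a grid are pairs (i,j) of integers: i = row index (increasing
downward, north = decreasing i), j = column index (increasing eastward).
A lattice path is represented by the list of its vertices from its SW endpoint
to its NE endpoint; every step goes east (0,1) or north (-1,0).\<close>

type_synonym pt = "int \<times> int"

definition lattice_path :: "pt list \<Rightarrow> bool" where
  "lattice_path P \<longleftrightarrow> P \<noteq> [] \<and>
     (\<forall>n. Suc n < length P \<longrightarrow>
        P ! Suc n = (fst (P ! n), snd (P ! n) + 1) \<or> P ! Suc n = (fst (P ! n) - 1, snd (P ! n)))"

definition in_grid :: "nat \<Rightarrow> nat \<Rightarrow> pt list \<Rightarrow> bool" where
  "in_grid a b P \<longleftrightarrow> (\<forall>x\<in>set P. 1 \<le> fst x \<and> fst x \<le> int a \<and> 1 \<le> snd x \<and> snd x \<le> int b)"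

text \<open>Corners: vertices adjacent to both a horizontal and a vertical edge of the path.\<close>
definition corners :: "pt list \<Rightarrow> pt set" where
  "corners P = {P ! n | n. 0 < n \<and> Suc n < length P \<and>
      ((fst (P ! (n - 1)) = fst (P ! n)) \<noteq> (fst (P ! n) = fst (P ! Suc n)))}"

definition arrows_into :: "nat \<Rightarrow> (nat \<Rightarrow> 'v) \<Rightarrow> 'v \<Rightarrow> nat list" where
  "arrows_into r tgt \<alpha> = filter (\<lambda>k. tgt k = \<alpha>) [1..<Suc r]"

definition arrows_from :: "nat \<Rightarrow> (nat \<Rightarrow> 'v) \<Rightarrow> 'v \<Rightarrow> nat list" where
  "arrows_from r src \<beta> = filter (\<lambda>k. src k = \<beta>) [1..<Suc r]"

definition aT :: "('v \<Rightarrow> nat) \<Rightarrow> 'v \<Rightarrow> nat" where "aT m \<alpha> = m \<alpha>"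
definition bT :: "nat \<Rightarrow> (nat \<Rightarrow> 'v) \<Rightarrow> (nat \<Rightarrow> 'v) \<Rightarrow> ('v \<Rightarrow> nat) \<Rightarrow> 'v \<Rightarrow> nat" where
  "bT r src tgt m \<alpha> = (\<Sum>k\<in>{k\<in>{1..r}. tgt k = \<alpha>}. m (src k))"
definition aS :: "nat \<Rightarrow> (nat \<Rightarrow> 'v) \<Rightarrow> (nat \<Rightarrow> 'v) \<Rightarrow> ('v \<Rightarrow> nat) \<Rightarrow> 'v \<Rightarrow> nat" where
  "aS r src tgt m \<beta> = (\<Sum>k\<in>{k\<in>{1..r}. src k = \<beta>}. m (tgt k))"
definition bS :: "('v \<Rightarrow> nat) \<Rightarrow> 'v \<Rightarrow> nat" where "bS m \<beta> = m \<beta>"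

definition vT :: "nat \<Rightarrow> (nat \<Rightarrow> 'v) \<Rightarrow> (nat \<Rightarrow> 'v) \<Rightarrow> ('v \<Rightarrow> nat) \<Rightarrow> 'v \<Rightarrow> nat" where
  "vT r src tgt u \<alpha> = (\<Sum>k\<in>{k\<in>{1..r}. tgt k = \<alpha>}. u (src k))"
definition vS :: "nat \<Rightarrow> (nat \<Rightarrow> 'v) \<Rightarrow> (nat \<Rightarrow> 'v) \<Rightarrow> ('v \<Rightarrow> nat) \<Rightarrow> 'v \<Rightarrow> nat" where
  "vS r src tgt u \<beta> = (\<Sum>k\<in>{k\<in>{1..r}. src k = \<beta>}. u (tgt k))"

text \<open>Offsets of page k: column offset inside A_(tgt k) (pages placed side by side in
increasing arrow order) and row offset inside A_(src k) (pages stacked top to bottom).\<close>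
definition colOff :: "(nat \<Rightarrow> 'v) \<Rightarrow> (nat \<Rightarrow> 'v) \<Rightarrow> ('v \<Rightarrow> nat) \<Rightarrow> nat \<Rightarrow> int" where
  "colOff src tgt m k = int (\<Sum>k'\<in>{k'\<in>{1..<k}. tgt k' = tgt k}. m (src k'))"
definition rowOff :: "(nat \<Rightarrow> 'v) \<Rightarrow> (nat \<Rightarrow> 'v) \<Rightarrow> ('v \<Rightarrow> nat) \<Rightarrow> nat \<Rightarrow> int" where
  "rowOff src tgt m k = int (\<Sum>k'\<in>{k'\<in>{1..<k}. src k' = src k}. m (tgt k'))"

definition embT :: "(nat \<Rightarrow> 'v) \<Rightarrow> (nat \<Rightarrow> 'v) \<Rightarrow> ('v \<Rightarrow> nat) \<Rightarrow> nat \<Rightarrow> pt \<Rightarrow> pt" where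
  "embT src tgt m k x = (fst x, colOff src tgt m k + snd x)"
definition embS :: "(nat \<Rightarrow> 'v) \<Rightarrow> (nat \<Rightarrow> 'v) \<Rightarrow> ('v \<Rightarrow> nat) \<Rightarrow> nat \<Rightarrow> pt \<Rightarrow> pt" where
  "embS src tgt m k x = (rowOff src tgt m k + fst x, snd x)"

text \<open>Restriction H|_k of a path in A_(tgt k) (resp. V|_k of a path in A_(src k)) to the
block of page k, in page-k coordinates.\<close>
definition restrT :: "(nat \<Rightarrow> 'v) \<Rightarrow> (nat \<Rightarrow> 'v) \<Rightarrow> ('v \<Rightarrow> nat) \<Rightarrow> nat \<Rightarrow> pt list \<Rightarrow> pt list" where
  "restrT src tgt m k P =
     map (\<lambda>x. (fst x, snd x - colOff src tgt m k))
       (filter (\<lambda>x. colOff src tgt m k < snd x \<and> snd x \<le> colOff src tgt m k + int (m (src k))) P)"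
definition restrS :: "(nat \<Rightarrow> 'v) \<Rightarrow> (nat \<Rightarrow> 'v) \<Rightarrow> ('v \<Rightarrow> nat) \<Rightarrow> nat \<Rightarrow> pt list \<Rightarrow> pt list" where
  "restrS src tgt m k P =
     map (\<lambda>x. (fst x - rowOff src tgt m k, snd x))
       (filter (\<lambda>x. rowOff src tgt m k < fst x \<and> fst x \<le> rowOff src tgt m k + int (m (tgt k))) P)"

definition road_map ::
  "'v set \<Rightarrow> 'v set \<Rightarrow> nat \<Rightarrow> (nat \<Rightarrow> 'v) \<Rightarrow> (nat \<Rightarrow> 'v) \<Rightarrow> ('v \<Rightarrow> nat) \<Rightarrow> ('v \<Rightarrow> nat)
   \<Rightarrow> ('v \<Rightarrow> nat \<Rightarrow> pt list) \<Rightarrow> ('v \<Rightarrow> nat \<Rightarrow> pt list) \<Rightarrow> bool" where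
  "road_map Vs Vt r src tgt m u H V \<longleftrightarrow>
     (\<forall>\<alpha>\<in>Vt. (\<forall>p\<in>{1..u \<alpha>}.
          lattice_path (H \<alpha> p) \<and> in_grid (aT m \<alpha>) (bT r src tgt m \<alpha>) (H \<alpha> p) \<and>
          hd (H \<alpha> p) = (int (aT m \<alpha>) - int (u \<alpha>) + int p, 1) \<and>
          last (H \<alpha> p) = (int p, int (bT r src tgt m \<alpha>))) \<and>
        (\<forall>p\<in>{1..u \<alpha>}. \<forall>p'\<in>{1..u \<alpha>}. p \<noteq> p' \<longrightarrow> set (H \<alpha> p) \<inter> set (H \<alpha> p') = {})) \<and>
     (\<forall>\<beta>\<in>Vs. (\<forall>q\<in>{1..u \<beta>}.
          lattice_path (V \<beta> q) \<and> in_grid (aS r src tgt m \<beta>) (bS m \<beta>) (V \<beta> q) \<and>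
          last (V \<beta> q) = (1, int (bS m \<beta>) - int (u \<beta>) + int q) \<and>
          hd (V \<beta> q) = (int (aS r src tgt m \<beta>), int q)) \<and>
        (\<forall>q\<in>{1..u \<beta>}. \<forall>q'\<in>{1..u \<beta>}. q \<noteq> q' \<longrightarrow> set (V \<beta> q) \<inter> set (V \<beta> q') = {}))"

text \<open>A position c of A_alpha corresponds to the point (i,j,k) of L
iff tgt k = alpha, (i,j) lies in page k and c = embT k (i,j); similarly for A_beta.\<close>
definition straight_road_map ::
  "'v set \<Rightarrow> 'v set \<Rightarrow> nat \<Rightarrow> (nat \<Rightarrow> 'v) \<Rightarrow> (nat \<Rightarrow> 'v) \<Rightarrow> ('v \<Rightarrow> nat) \<Rightarrow> ('v \<Rightarrow> nat)
   \<Rightarrow> ('v \<Rightarrow> nat \<Rightarrow> pt list) \<Rightarrow> ('v \<Rightarrow> nat \<Rightarrow> pt list) \<Rightarrow> bool" where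
  "straight_road_map Vs Vt r src tgt m u H V \<longleftrightarrow>
     (\<forall>\<alpha>\<in>Vt. \<forall>p\<in>{1..u \<alpha>}. \<forall>c\<in>corners (H \<alpha> p).
        \<exists>k\<in>{1..r}. \<exists>x. tgt k = \<alpha> \<and>
          1 \<le> fst x \<and> fst x \<le> int (m (tgt k)) \<and> 1 \<le> snd x \<and> snd x \<le> int (m (src k)) \<and>
          c = embT src tgt m k x \<and>
          (\<exists>q\<in>{1..u (src k)}. embS src tgt m k x \<in> set (V (src k) q))) \<and>
     (\<forall>\<beta>\<in>Vs. \<forall>q\<in>{1..u \<beta>}. \<forall>c\<in>corners (V \<beta> q).
        \<exists>k\<in>{1..r}. \<exists>x. src k = \<beta> \<and>
          1 \<le> fst x \<and> fst x \<le> int (m (tgt k)) \<and> 1 \<le> snd x \<and> snd x \<le> int (m (src k)) \<and>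
          c = embS src tgt m k x \<and>
          (\<exists>p\<in>{1..u (tgt k)}. embT src tgt m k x \<in> set (H (tgt k) p)))"

definition segH :: "(nat \<Rightarrow> 'v) \<Rightarrow> (nat \<Rightarrow> 'v) \<Rightarrow> ('v \<Rightarrow> nat)
   \<Rightarrow> ('v \<Rightarrow> nat \<Rightarrow> pt list) \<Rightarrow> ('v \<Rightarrow> nat \<Rightarrow> pt list) \<Rightarrow> nat \<Rightarrow> nat \<Rightarrow> nat \<Rightarrow> pt list" where
  "segH src tgt m H V k p q =
     filter (\<lambda>x. x \<in> set (restrS src tgt m k (V (src k) q))) (restrT src tgt m k (H (tgt k) p))"
definition segV :: "(nat \<Rightarrow> 'v) \<Rightarrow> (nat \<Rightarrow> 'v) \<Rightarrow> ('v \<Rightarrow> nat)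
   \<Rightarrow> ('v \<Rightarrow> nat \<Rightarrow> pt list) \<Rightarrow> ('v \<Rightarrow> nat \<Rightarrow> pt list) \<Rightarrow> nat \<Rightarrow> nat \<Rightarrow> nat \<Rightarrow> pt list" where
  "segV src tgt m H V k p q =
     filter (\<lambda>x. x \<in> set (restrT src tgt m k (H (tgt k) p))) (restrS src tgt m k (V (src k) q))"

text \<open>Condition (a) for a triple (k,p,q): the intersection is nonempty and forms a connected
(contiguous) subpath of both restricted paths; it is then the path P^k_pq ~> Q^k_pq with
P^k_pq = hd, Q^k_pq = last of segH.\<close>
definition connected_inter :: "(nat \<Rightarrow> 'v) \<Rightarrow> (nat \<Rightarrow> 'v) \<Rightarrow> ('v \<Rightarrow> nat)
   \<Rightarrow> ('v \<Rightarrow> nat \<Rightarrow> pt list) \<Rightarrow> ('v \<Rightarrow> nat \<Rightarrow> pt list) \<Rightarrow> nat \<Rightarrow> nat \<Rightarrow> nat \<Rightarrow> bool" where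
  "connected_inter src tgt m H V k p q \<longleftrightarrow>
     segH src tgt m H V k p q \<noteq> [] \<and>
     lattice_path (segH src tgt m H V k p q) \<and>
     (\<exists>xs ys. restrT src tgt m k (H (tgt k) p) = xs @ segH src tgt m H V k p q @ ys) \<and>
     (\<exists>xs ys. restrS src tgt m k (V (src k) q) = xs @ segV src tgt m H V k p q @ ys)"

fun hjoin :: "pt list \<Rightarrow> pt list list \<Rightarrow> pt list option" where
  "hjoin acc [] = Some acc"
| "hjoin acc (Y # Ys) =
     (if acc \<noteq> [] \<and> Y \<noteq> [] \<and> fst (last acc) = fst (hd Y) \<and> snd (last acc) \<le> snd (hd Y)
      then hjoin (acc @ map (\<lambda>j. (fst (last acc), j)) [snd (last acc) + 1 .. snd (hd Y) - 1]
                      @ (if last acc = hd Y then tl Y else Y)) Ys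
      else None)"

fun vjoin :: "pt list \<Rightarrow> pt list list \<Rightarrow> pt list option" where
  "vjoin acc [] = Some acc"
| "vjoin acc (Y # Ys) =
     (if acc \<noteq> [] \<and> Y \<noteq> [] \<and> snd (last acc) = snd (hd Y) \<and> fst (last acc) \<le> fst (hd Y)
      then vjoin (acc @ map (\<lambda>i. (i, snd (last acc))) [fst (last acc) + 1 .. fst (hd Y) - 1]
                      @ (if last acc = hd Y then tl Y else Y)) Ys
      else None)"

text \<open>Pieces for (b): for alpha and p, the subpaths P^k_{p,q} ~> Q^k_{p,q} regarded in A_alpha,
for the arrows k into alpha in increasing order and q = 1..u(src k).\<close>
definition pieces_H :: "nat \<Rightarrow> (nat \<Rightarrow> 'v) \<Rightarrow> (nat \<Rightarrow> 'v) \<Rightarrow> ('v \<Rightarrow> nat) \<Rightarrow> ('v \<Rightarrow> nat)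
   \<Rightarrow> ('v \<Rightarrow> nat \<Rightarrow> pt list) \<Rightarrow> ('v \<Rightarrow> nat \<Rightarrow> pt list) \<Rightarrow> 'v \<Rightarrow> nat \<Rightarrow> pt list list" where
  "pieces_H r src tgt m u H V \<alpha> p =
     concat (map (\<lambda>k. map (\<lambda>q. map (embT src tgt m k) (segH src tgt m H V k p q)) [1..<Suc (u (src k))])
                 (arrows_into r tgt \<alpha>))"

text \<open>Pieces for (c): for beta and q, the subpaths Q^k_{p,q} ~> P^k_{p,q} (traversed from NE to SW)
regarded in A_beta, for the arrows k out of beta in increasing order and p = 1..u(tgt k).\<close>
definition pieces_V :: "nat \<Rightarrow> (nat \<Rightarrow> 'v) \<Rightarrow> (nat \<Rightarrow> 'v) \<Rightarrow> ('v \<Rightarrow> nat) \<Rightarrow> ('v \<Rightarrow> nat)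
   \<Rightarrow> ('v \<Rightarrow> nat \<Rightarrow> pt list) \<Rightarrow> ('v \<Rightarrow> nat \<Rightarrow> pt list) \<Rightarrow> 'v \<Rightarrow> nat \<Rightarrow> pt list list" where
  "pieces_V r src tgt m u H V \<beta> q =
     concat (map (\<lambda>k. map (\<lambda>p. rev (map (embS src tgt m k) (segV src tgt m H V k p q))) [1..<Suc (u (tgt k))])
                 (arrows_from r src \<beta>))"

end

theory Submission
  imports Defs
begin

definition lvl :: "pt \<Rightarrow> int" where "lvl z = snd z - fst z"
definition Ep :: "pt \<Rightarrow> pt" where "Ep z = (fst z, snd z + 1)"
definition Np :: "pt \<Rightarrow> pt" where "Np z = (fst z - 1, snd z)"
definition Wp :: "pt \<Rightarrow> pt" where "Wp z = (fst z, snd z - 1)"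
definition Sp :: "pt \<Rightarrow> pt" where "Sp z = (fst z + 1, snd z)"

lemma lp_step:
  assumes "lattice_path P" "Suc n < length P"
  shows "P ! Suc n = Ep (P ! n) \<or> P ! Suc n = Np (P ! n)"
  using assms unfolding lattice_path_def Ep_def Np_def by blast

lemma lp_nonempty: "lattice_path P \<Longrightarrow> P \<noteq> []"
  unfolding lattice_path_def by blast

lemma lp_lvl:
  assumes "lattice_path P" "n < length P"
  shows "lvl (P ! n) = lvl (P ! 0) + int n"
  using assms(2)
proof (induction n)
  case 0 then show ?case by simp
next
  case (Suc n)
  then have "lvl (P ! n) = lvl (P ! 0) + int n" by simp
  moreover from lp_step[OF assms(1) Suc.prems] have "lvl (P ! Suc n) = lvl (P ! n) + 1"
    by (auto simp: lvl_def Ep_def Np_def)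
  ultimately show ?case by simp
qed

lemma lp_mono:
  assumes "lattice_path P" "i \<le> j" "j < length P"
  shows "fst (P ! j) \<le> fst (P ! i) \<and> snd (P ! i) \<le> snd (P ! j)"
  using assms(2,3)
proof (induction j)
  case 0 then show ?case by simp
next
  case (Suc j)
  show ?case
  proof (cases "i = Suc j")
    case True then show ?thesis by simp
  next
    case False
    with Suc.prems have "fst (P ! j) \<le> fst (P ! i) \<and> snd (P ! i) \<le> snd (P ! j)"
      using Suc.IH by simp
    moreover from lp_step[OF assms(1) Suc.prems(2)]
    have "fst (P ! Suc j) \<le> fst (P ! j) \<and> snd (P ! j) \<le> snd (P ! Suc j)"
      by (auto simp: Ep_def Np_def)
    ultimately show ?thesis by linarith
  qed
qed

lemma lp_idx:
  assumes "lattice_path P" "z \<in> set P"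
  obtains n where "n < length P" "P ! n = z" "int n = lvl z - lvl (hd P)"
proof -
  from assms(2) obtain n where n: "n < length P" "P ! n = z" by (auto simp: in_set_conv_nth)
  with lp_lvl[OF assms(1) n(1)] have "int n = lvl z - lvl (hd P)"
    using lp_nonempty[OF assms(1)] by (simp add: hd_conv_nth)
  with n show ?thesis using that by blast
qed

lemma lp_same_lvl:
  assumes "lattice_path P" "z \<in> set P" "w \<in> set P" "lvl z = lvl w"
  shows "z = w"
proof -
  obtain n where n: "n < length P" "P ! n = z" "int n = lvl z - lvl (hd P)" using lp_idx assms by metis
  obtain k where k: "k < length P" "P ! k = w" "int k = lvl w - lvl (hd P)" using lp_idx assms by metis
  from n k assms(4) have "n = k" by simp
  with n k show ?thesis by simp
qed

lemma lp_distinct: assumes "lattice_path P" shows "distinct P"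
proof -
  have "i = j" if "i < length P" "j < length P" "P ! i = P ! j" for i j
  proof -
    have "lvl (P ! i) = lvl (P ! j)" using that(3) by (rule arg_cong)
    then show ?thesis using lp_lvl[OF assms that(1)] lp_lvl[OF assms that(2)] by linarith
  qed
  then show ?thesis unfolding distinct_conv_nth by blast
qed

lemma lp_order:
  assumes "lattice_path P" "z \<in> set P" "w \<in> set P" "lvl z \<le> lvl w"
  shows "fst w \<le> fst z \<and> snd z \<le> snd w"
proof -
  obtain n where n: "n < length P" "P ! n = z" "int n = lvl z - lvl (hd P)" using lp_idx assms by metis
  obtain k where k: "k < length P" "P ! k = w" "int k = lvl w - lvl (hd P)" using lp_idx assms by metis
  from n k assms(4) have "n \<le> k" by simp
  from lp_mono[OF assms(1) this k(1)] n k show ?thesis by simp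
qed

lemma lvl_E[simp]: "lvl (Ep z) = lvl z + 1" and lvl_N[simp]: "lvl (Np z) = lvl z + 1"
  and lvl_W[simp]: "lvl (Wp z) = lvl z - 1" and lvl_S[simp]: "lvl (Sp z) = lvl z - 1"
  by (auto simp: lvl_def Ep_def Np_def Wp_def Sp_def)

lemma lp_succ:
  assumes "lattice_path P" "z \<in> set P" "z \<noteq> last P"
  shows "Ep z \<in> set P \<or> Np z \<in> set P"
proof -
  obtain n where n: "n < length P" "P ! n = z" using assms(2) by (auto simp: in_set_conv_nth)
  have "Suc n < length P"
  proof (rule ccontr)
    assume "\<not> ?thesis" then have "n = length P - 1" using n by simp
    then have "z = last P" using n lp_nonempty[OF assms(1)] by (simp add: last_conv_nth)
    with assms(3) show False by simp
  qed
  from lp_step[OF assms(1) this] n nth_mem[OF this] show ?thesis by auto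
qed

lemma lp_pred:
  assumes "lattice_path P" "z \<in> set P" "z \<noteq> hd P"
  shows "Wp z \<in> set P \<or> Sp z \<in> set P"
proof -
  obtain n where n: "n < length P" "P ! n = z" using assms(2) by (auto simp: in_set_conv_nth)
  have "n \<noteq> 0"
  proof
    assume "n = 0" then have "z = hd P" using n lp_nonempty[OF assms(1)] by (simp add: hd_conv_nth)
    with assms(3) show False by simp
  qed
  then obtain k where k: "n = Suc k" by (cases n) auto
  from lp_step[OF assms(1), of k] n k have "P ! n = Ep (P ! k) \<or> P ! n = Np (P ! k)" by simp
  then have "P ! k = Wp z \<or> P ! k = Sp z" using n by (auto simp: Ep_def Np_def Wp_def Sp_def)
  moreover have "P ! k \<in> set P" using n k by simp
  ultimately show ?thesis by auto
qed

lemma EN_excl: "lattice_path P \<Longrightarrow> Ep z \<in> set P \<Longrightarrow> Np z \<in> set P \<Longrightarrow> False"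
  using lp_same_lvl[of P "Ep z" "Np z"] by (auto simp: Ep_def Np_def lvl_def)
lemma WS_excl: "lattice_path P \<Longrightarrow> Wp z \<in> set P \<Longrightarrow> Sp z \<in> set P \<Longrightarrow> False"
  using lp_same_lvl[of P "Wp z" "Sp z"] by (auto simp: Wp_def Sp_def lvl_def)

lemma lp_next_idx:
  assumes "lattice_path P" "n < length P" "w \<in> set P" "lvl w = lvl (P ! n) + 1"
  shows "Suc n < length P \<and> P ! Suc n = w"
proof -
  obtain k where k: "k < length P" "P ! k = w" "int k = lvl w - lvl (hd P)" using lp_idx assms by metis
  have "lvl (P ! n) = lvl (hd P) + int n" using lp_lvl[OF assms(1,2)] lp_nonempty[OF assms(1)]
    by (simp add: hd_conv_nth)
  with k assms(4) have "k = Suc n" by simp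
  with k show ?thesis by simp
qed

lemma corner_WN:
  assumes "lattice_path P" "z \<in> set P" "Wp z \<in> set P" "Np z \<in> set P"
  shows "z \<in> corners P"
proof -
  obtain n where n: "n < length P" "P ! n = z" using assms(2) by (auto simp: in_set_conv_nth)
  obtain k where k: "k < length P" "P ! k = Wp z" using assms(3) by (auto simp: in_set_conv_nth)
  from lp_next_idx[OF assms(1) k(1) assms(2)] k have "Suc k < length P" "P ! Suc k = z" by auto
  then have kn: "Suc k = n" using n nth_eq_iff_index_eq[OF lp_distinct[OF assms(1)]] by metis
  from lp_next_idx[OF assms(1) n(1) assms(4)] n have "Suc n < length P" "P ! Suc n = Np z" by auto
  moreover have "0 < n" using kn by simp
  moreover have "P ! (n - 1) = Wp z" using kn k by auto
  ultimately have "0 < n \<and> Suc n < length P \<and> ((fst (P ! (n - 1)) = fst (P ! n)) \<noteq> (fst (P ! n) = fst (P ! Suc n)))"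
    using n by (auto simp: Wp_def Np_def)
  then show ?thesis unfolding corners_def using n(2) by blast
qed

lemma corner_SE:
  assumes "lattice_path P" "z \<in> set P" "Sp z \<in> set P" "Ep z \<in> set P"
  shows "z \<in> corners P"
proof -
  obtain n where n: "n < length P" "P ! n = z" using assms(2) by (auto simp: in_set_conv_nth)
  obtain k where k: "k < length P" "P ! k = Sp z" using assms(3) by (auto simp: in_set_conv_nth)
  from lp_next_idx[OF assms(1) k(1) assms(2)] k have "Suc k < length P" "P ! Suc k = z" by auto
  then have kn: "Suc k = n" using n nth_eq_iff_index_eq[OF lp_distinct[OF assms(1)]] by metis
  from lp_next_idx[OF assms(1) n(1) assms(4)] n have "Suc n < length P" "P ! Suc n = Ep z" by auto
  moreover have "0 < n" using kn by simp
  moreover have "P ! (n - 1) = Sp z" using kn k by auto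
  ultimately have "0 < n \<and> Suc n < length P \<and> ((fst (P ! (n - 1)) = fst (P ! n)) \<noteq> (fst (P ! n) = fst (P ! Suc n)))"
    using n by (auto simp: Sp_def Ep_def)
  then show ?thesis unfolding corners_def using n(2) by blast
qed


lemma dIVT:
  fixes f :: "nat \<Rightarrow> int"
  assumes "f 0 \<le> c" "c \<le> f n" "\<forall>k<n. f (Suc k) \<le> f k + 1"
  shows "\<exists>k\<le>n. f k = c"
  using assms
proof (induction n)
  case 0 then show ?case by auto
next
  case (Suc n)
  show ?case
  proof (cases "c \<le> f n")
    case True
    with Suc.IH Suc.prems show ?thesis by (metis le_SucI less_SucI)
  next
    case False
    with Suc.prems have "f (Suc n) = c" by force
    then show ?thesis by blast
  qed
qed

lemma lp_col_fwd:
  assumes "lattice_path P" "n < length P" "snd (P ! n) \<le> c" "c \<le> snd (last P)"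
  shows "\<exists>k. n \<le> k \<and> k < length P \<and> snd (P ! k) = c"
proof -
  define f where "f k = snd (P ! (n + k))" for k
  have ne: "P \<noteq> []" using lp_nonempty[OF assms(1)] .
  have "f 0 \<le> c" using assms(3) by (simp add: f_def)
  moreover have "c \<le> f (length P - 1 - n)" using assms(2,4) ne by (simp add: f_def last_conv_nth)
  moreover have "\<forall>k<length P - 1 - n. f (Suc k) \<le> f k + 1"
  proof (intro allI impI)
    fix k assume "k < length P - 1 - n"
    then have "Suc (n + k) < length P" by simp
    from lp_step[OF assms(1) this] show "f (Suc k) \<le> f k + 1" by (auto simp: f_def Ep_def Np_def)
  qed
  ultimately obtain k where "k \<le> length P - 1 - n" "f k = c" using dIVT by blast
  then show ?thesis using assms(2) by (intro exI[of _ "n + k"]) (auto simp: f_def)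
qed

lemma lp_col_bwd:
  assumes "lattice_path P" "n < length P" "snd (hd P) \<le> c" "c \<le> snd (P ! n)"
  shows "\<exists>k\<le>n. snd (P ! k) = c"
proof -
  define f where "f k = snd (P ! k)" for k
  have ne: "P \<noteq> []" using lp_nonempty[OF assms(1)] .
  have "f 0 \<le> c" using assms(3) ne by (simp add: f_def hd_conv_nth)
  moreover have "c \<le> f n" using assms(4) by (simp add: f_def)
  moreover have "\<forall>k<n. f (Suc k) \<le> f k + 1"
  proof (intro allI impI)
    fix k assume "k < n"
    then have "Suc k < length P" using assms(2) by simp
    from lp_step[OF assms(1) this] show "f (Suc k) \<le> f k + 1" by (auto simp: f_def Ep_def Np_def)
  qed
  ultimately show ?thesis using dIVT by (simp add: f_def)
qed

lemma lp_row_fwd: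
  assumes "lattice_path P" "n < length P" "fst (last P) \<le> r" "r \<le> fst (P ! n)"
  shows "\<exists>k. n \<le> k \<and> k < length P \<and> fst (P ! k) = r"
proof -
  define f where "f k = - fst (P ! (n + k))" for k
  have ne: "P \<noteq> []" using lp_nonempty[OF assms(1)] .
  have "f 0 \<le> - r" using assms(4) by (simp add: f_def)
  moreover have "- r \<le> f (length P - 1 - n)" using assms(2,3) ne by (simp add: f_def last_conv_nth)
  moreover have "\<forall>k<length P - 1 - n. f (Suc k) \<le> f k + 1"
  proof (intro allI impI)
    fix k assume "k < length P - 1 - n"
    then have "Suc (n + k) < length P" by simp
    from lp_step[OF assms(1) this] show "f (Suc k) \<le> f k + 1" by (auto simp: f_def Ep_def Np_def)
  qed
  ultimately obtain k where "k \<le> length P - 1 - n" "f k = - r" using dIVT by blast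
  then show ?thesis using assms(2) by (intro exI[of _ "n + k"]) (auto simp: f_def)
qed

lemma lp_row_bwd:
  assumes "lattice_path P" "n < length P" "fst (P ! n) \<le> r" "r \<le> fst (hd P)"
  shows "\<exists>k\<le>n. fst (P ! k) = r"
proof -
  define f where "f k = - fst (P ! k)" for k
  have ne: "P \<noteq> []" using lp_nonempty[OF assms(1)] .
  have "f 0 \<le> - r" using assms(4) ne by (simp add: f_def hd_conv_nth)
  moreover have "- r \<le> f n" using assms(3) by (simp add: f_def)
  moreover have "\<forall>k<n. f (Suc k) \<le> f k + 1"
  proof (intro allI impI)
    fix k assume "k < n"
    then have "Suc k < length P" using assms(2) by simp
    from lp_step[OF assms(1) this] show "f (Suc k) \<le> f k + 1" by (auto simp: f_def Ep_def Np_def)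
  qed
  ultimately obtain k where "k \<le> n" "f k = - r" using dIVT by blast
  then show ?thesis by (auto simp: f_def)
qed

lemma lp_hd_in: "lattice_path P \<Longrightarrow> hd P \<in> set P"
  using lp_nonempty by auto
lemma lp_last_in: "lattice_path P \<Longrightarrow> last P \<in> set P"
  using lp_nonempty by auto

lemma lp_lvl_hd: "lattice_path P \<Longrightarrow> z \<in> set P \<Longrightarrow> lvl (hd P) \<le> lvl z"
  by (metis lp_idx of_nat_0_le_iff diff_ge_0_iff_ge)
lemma lp_lvl_last: "lattice_path P \<Longrightarrow> z \<in> set P \<Longrightarrow> lvl z \<le> lvl (last P)"
proof -
  assume a: "lattice_path P" "z \<in> set P"
  obtain n where n: "n < length P" "P ! n = z" "int n = lvl z - lvl (hd P)" using lp_idx a by metis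
  have ne: "P \<noteq> []" using lp_nonempty a by auto
  have "int (length P - 1) = lvl (last P) - lvl (hd P)"
    using lp_lvl[OF a(1), of "length P - 1"] ne by (simp add: last_conv_nth hd_conv_nth)
  with n show ?thesis by linarith
qed

lemma col_fwd:
  assumes "lattice_path P" "z \<in> set P" "snd z \<le> c" "c \<le> snd (last P)"
  shows "\<exists>w\<in>set P. snd w = c \<and> lvl z \<le> lvl w"
proof -
  obtain n where n: "n < length P" "P ! n = z" "int n = lvl z - lvl (hd P)" using lp_idx assms by metis
  from lp_col_fwd[OF assms(1) n(1)] n assms obtain k where k: "n \<le> k" "k < length P" "snd (P ! k) = c"
    by auto
  have "lvl (P ! k) = lvl (P ! 0) + int k" "lvl (P ! n) = lvl (P ! 0) + int n"
    using lp_lvl[OF assms(1)] k n by auto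
  with k n show ?thesis by (intro bexI[of _ "P ! k"]) auto
qed

lemma col_bwd:
  assumes "lattice_path P" "z \<in> set P" "snd (hd P) \<le> c" "c \<le> snd z"
  shows "\<exists>w\<in>set P. snd w = c \<and> lvl w \<le> lvl z"
proof -
  obtain n where n: "n < length P" "P ! n = z" "int n = lvl z - lvl (hd P)" using lp_idx assms by metis
  from lp_col_bwd[OF assms(1) n(1)] n assms obtain k where k: "k \<le> n" "snd (P ! k) = c"
    by auto
  have "lvl (P ! k) = lvl (P ! 0) + int k" "lvl (P ! n) = lvl (P ! 0) + int n"
    using lp_lvl[OF assms(1)] k n by auto
  with k n show ?thesis by (intro bexI[of _ "P ! k"]) auto
qed

lemma row_fwd:
  assumes "lattice_path P" "z \<in> set P" "fst (last P) \<le> r" "r \<le> fst z"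
  shows "\<exists>w\<in>set P. fst w = r \<and> lvl z \<le> lvl w"
proof -
  obtain n where n: "n < length P" "P ! n = z" "int n = lvl z - lvl (hd P)" using lp_idx assms by metis
  from lp_row_fwd[OF assms(1) n(1)] n assms obtain k where k: "n \<le> k" "k < length P" "fst (P ! k) = r"
    by auto
  have "lvl (P ! k) = lvl (P ! 0) + int k" "lvl (P ! n) = lvl (P ! 0) + int n"
    using lp_lvl[OF assms(1)] k n by auto
  with k n show ?thesis by (intro bexI[of _ "P ! k"]) auto
qed

lemma row_bwd:
  assumes "lattice_path P" "z \<in> set P" "fst z \<le> r" "r \<le> fst (hd P)"
  shows "\<exists>w\<in>set P. fst w = r \<and> lvl w \<le> lvl z"
proof -
  obtain n where n: "n < length P" "P ! n = z" "int n = lvl z - lvl (hd P)" using lp_idx assms by metis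
  from lp_row_bwd[OF assms(1) n(1)] n assms obtain k where k: "k \<le> n" "fst (P ! k) = r"
    by auto
  have "lvl (P ! k) = lvl (P ! 0) + int k" "lvl (P ! n) = lvl (P ! 0) + int n"
    using lp_lvl[OF assms(1)] k n by auto
  with k n show ?thesis by (intro bexI[of _ "P ! k"]) auto
qed

lemma col_interval:
  assumes "lattice_path P" "(r1, c) \<in> set P" "(r2, c) \<in> set P" "r2 \<le> r" "r \<le> r1"
  shows "(r, c) \<in> set P"
proof -
  obtain n1 where n1: "n1 < length P" "P ! n1 = (r1, c)" "int n1 = lvl (r1, c) - lvl (hd P)"
    using lp_idx assms by metis
  obtain n2 where n2: "n2 < length P" "P ! n2 = (r2, c)" "int n2 = lvl (r2, c) - lvl (hd P)"
    using lp_idx assms by metis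
  define n where "n = n1 + nat (r1 - r)"
  have nn2: "n \<le> n2" using n1(3) n2(3) assms(4,5) by (simp add: n_def lvl_def)
  have nl: "n < length P" using nn2 n2 by simp
  have "snd (P ! n1) \<le> snd (P ! n)" "snd (P ! n) \<le> snd (P ! n2)"
    using lp_mono[OF assms(1), of n1 n] lp_mono[OF assms(1), of n n2] nn2 nl n2 by (auto simp: n_def)
  then have sc: "snd (P ! n) = c" using n1 n2 by simp
  have "lvl (P ! n) = lvl (P ! 0) + int n" "lvl (P ! n1) = lvl (P ! 0) + int n1"
    using lp_lvl[OF assms(1) nl] lp_lvl[OF assms(1) n1(1)] by auto
  then have "lvl (P ! n) = lvl (r1, c) + (r1 - r)" using n1 assms(5) lp_nonempty[OF assms(1)] by (simp add: n_def hd_conv_nth)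
  with sc have "fst (P ! n) = r" by (simp add: lvl_def)
  with sc have "P ! n = (r, c)" by (metis prod.collapse)
  with nl show ?thesis by (metis nth_mem)
qed

lemma row_interval:
  assumes "lattice_path P" "(r, c1) \<in> set P" "(r, c2) \<in> set P" "c1 \<le> c" "c \<le> c2"
  shows "(r, c) \<in> set P"
proof -
  obtain n1 where n1: "n1 < length P" "P ! n1 = (r, c1)" "int n1 = lvl (r, c1) - lvl (hd P)"
    using lp_idx assms by metis
  obtain n2 where n2: "n2 < length P" "P ! n2 = (r, c2)" "int n2 = lvl (r, c2) - lvl (hd P)"
    using lp_idx assms by metis
  define n where "n = n1 + nat (c - c1)"
  have nn2: "n \<le> n2" using n1(3) n2(3) assms(4,5) by (simp add: n_def lvl_def)
  have nl: "n < length P" using nn2 n2 by simp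
  have "fst (P ! n) \<le> fst (P ! n1)" "fst (P ! n2) \<le> fst (P ! n)"
    using lp_mono[OF assms(1), of n1 n] lp_mono[OF assms(1), of n n2] nn2 nl n2 by (auto simp: n_def)
  then have sc: "fst (P ! n) = r" using n1 n2 by simp
  have "lvl (P ! n) = lvl (P ! 0) + int n" "lvl (P ! n1) = lvl (P ! 0) + int n1"
    using lp_lvl[OF assms(1) nl] lp_lvl[OF assms(1) n1(1)] by auto
  then have "lvl (P ! n) = lvl (r, c1) + (c - c1)" using n1 assms(4) lp_nonempty[OF assms(1)] by (simp add: n_def hd_conv_nth)
  with sc have "snd (P ! n) = c" by (simp add: lvl_def)
  with sc have "P ! n = (r, c)" by (metis prod.collapse)
  with nl show ?thesis by (metis nth_mem)
qed


lemma cross: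
  assumes P: "lattice_path P" and Q: "lattice_path Q"
    and cols: "\<forall>z\<in>set Q. snd (hd P) \<le> snd z \<and> snd z \<le> snd (last P)"
    and below: "\<exists>p\<in>set P. snd p = snd (hd Q) \<and> fst p \<le> fst (hd Q)"
    and above: "\<exists>p\<in>set P. snd p = snd (last Q) \<and> fst (last Q) \<le> fst p"
  shows "\<exists>z. z \<in> set P \<and> z \<in> set Q"
proof (rule ccontr)
  assume nc: "\<not> ?thesis"
  have ne: "Q \<noteq> []" using lp_nonempty[OF Q] .
  have claim: "\<exists>p\<in>set P. snd p = snd (Q ! n) \<and> fst p < fst (Q ! n)" if "n < length Q" for n
    using that
  proof (induction n)
    case 0
    from below obtain p where p: "p \<in> set P" "snd p = snd (Q ! 0)" "fst p \<le> fst (Q ! 0)"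
      using ne by (auto simp: hd_conv_nth)
    have "Q ! 0 \<in> set Q" using ne by simp
    then have "p \<noteq> Q ! 0" using nc p(1) by blast
    then have "fst p \<noteq> fst (Q ! 0)" using p(2) by (metis prod.collapse)
    with p show ?case by force
  next
    case (Suc n)
    then obtain p where p: "p \<in> set P" "snd p = snd (Q ! n)" "fst p < fst (Q ! n)" by auto
    have qs: "Q ! Suc n \<in> set Q" using Suc.prems by simp
    from lp_step[OF Q Suc.prems] show ?case
    proof
      assume e: "Q ! Suc n = Ep (Q ! n)"
      have "snd (Q ! Suc n) \<le> snd (last P)" using cols qs by blast
      then have "snd p \<le> snd p + 1" "snd p + 1 \<le> snd (last P)" using e p by (auto simp: Ep_def)
      from col_fwd[OF P p(1) this] obtain w where w: "w \<in> set P" "snd w = snd p + 1" "lvl p \<le> lvl w"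
        by blast
      have "fst w \<le> fst p" using lp_order[OF P p(1) w(1) w(3)] by simp
      then have "fst w \<le> fst (Q ! Suc n)" using e p by (simp add: Ep_def)
      moreover have "w \<noteq> Q ! Suc n" using nc w(1) qs by blast
      moreover have "snd w = snd (Q ! Suc n)" using e p w by (simp add: Ep_def)
      ultimately have "fst w < fst (Q ! Suc n)" by (metis prod.collapse order.order_iff_strict)
      with w(1) \<open>snd w = snd (Q ! Suc n)\<close> show ?case by blast
    next
      assume e: "Q ! Suc n = Np (Q ! n)"
      then have "fst p \<le> fst (Q ! Suc n)" "snd p = snd (Q ! Suc n)" using p by (auto simp: Np_def)
      moreover have "p \<noteq> Q ! Suc n" using nc p(1) qs by blast
      ultimately have "fst p < fst (Q ! Suc n)" by (metis prod.collapse order.order_iff_strict)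
      with p(1) \<open>snd p = snd (Q ! Suc n)\<close> show ?case by blast
    qed
  qed
  from claim[of "length Q - 1"] ne obtain p where p: "p \<in> set P" "snd p = snd (last Q)" "fst p < fst (last Q)"
    by (auto simp: last_conv_nth)
  from above obtain p2 where p2: "p2 \<in> set P" "snd p2 = snd (last Q)" "fst (last Q) \<le> fst p2" by blast
  have "(fst p2, snd (last Q)) \<in> set P" "(fst p, snd (last Q)) \<in> set P"
    using p p2 by (metis prod.collapse)+
  from col_interval[OF P this(1) this(2), of "fst (last Q)"] p p2
  have "(fst (last Q), snd (last Q)) \<in> set P" by simp
  then have "last Q \<in> set P" by simp
  moreover have "last Q \<in> set Q" using ne by simp
  ultimately show False using nc by blast
qed

lemma contig_P:
  assumes P: "lattice_path P" and Q: "lattice_path Q"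
    and A: "\<forall>z. z \<in> set P \<longrightarrow> Np z \<in> set P \<longrightarrow> (z \<in> set Q \<or> Np z \<in> set Q) \<longrightarrow> z \<in> set Q \<and> Np z \<in> set Q"
    and z1: "z1 \<in> set P" "z1 \<in> set Q" and z2: "z2 \<in> set P" "z2 \<in> set Q"
    and w: "w \<in> set P" "lvl z1 \<le> lvl w" "lvl w \<le> lvl z2"
  shows "w \<in> set Q"
proof (rule ccontr)
  assume wQ: "w \<notin> set Q"
  obtain a where a: "a < length P" "P ! a = z1" "int a = lvl z1 - lvl (hd P)" using lp_idx[OF P z1(1)] by metis
  obtain b where b: "b < length P" "P ! b = z2" "int b = lvl z2 - lvl (hd P)" using lp_idx[OF P z2(1)] by metis
  obtain a' where a': "a' < length Q" "Q ! a' = z1" "int a' = lvl z1 - lvl (hd Q)" using lp_idx[OF Q z1(2)] by metis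
  obtain b' where b': "b' < length Q" "Q ! b' = z2" "int b' = lvl z2 - lvl (hd Q)" using lp_idx[OF Q z2(2)] by metis
  obtain c where c: "c < length P" "P ! c = w" "int c = lvl w - lvl (hd P)" using lp_idx[OF P w(1)] by metis
  have ab: "a \<le> c" "c \<le> b" using a b c w by linarith+
  have b'eq: "b' = a' + (b - a)" using a b a' b' ab by linarith
  define d where "d k = fst (Q ! (a' + k)) - fst (P ! (a + k))" for k
  have hdP: "lvl (hd P) = lvl (P ! 0)" and hdQ: "lvl (hd Q) = lvl (Q ! 0)"
    using lp_nonempty[OF P] lp_nonempty[OF Q] by (simp_all add: hd_conv_nth)
  have lvleq: "lvl (Q ! (a' + k)) = lvl (P ! (a + k))" if "k \<le> b - a" for k
  proof -
    have "a + k < length P" "a' + k < length Q" using that b b'eq b' ab by linarith+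
    from lp_lvl[OF P this(1)] lp_lvl[OF Q this(2)] lp_lvl[OF P a(1)] lp_lvl[OF Q a'(1)] a a' hdP hdQ
    show ?thesis by simp
  qed
  have d0: "Q ! (a' + k) = P ! (a + k)" if "k \<le> b - a" "d k = 0" for k
  proof -
    from lvleq[OF that(1)] that(2) have "snd (Q ! (a' + k)) = snd (P ! (a + k))" "fst (Q ! (a' + k)) = fst (P ! (a + k))"
      by (auto simp: d_def lvl_def)
    then show ?thesis by (metis prod.collapse)
  qed
  have dmem: "d k = 0" if "k \<le> b - a" "P ! (a + k) \<in> set Q" for k
  proof -
    have "a' + k < length Q" using that b'eq b' ab by linarith
    then have "Q ! (a' + k) \<in> set Q" by simp
    from lp_same_lvl[OF Q this that(2)] lvleq[OF that(1)] have "Q ! (a' + k) = P ! (a + k)" by simp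
    then show ?thesis by (simp add: d_def)
  qed
  have step: "d (Suc k) \<le> d k + 1 \<and> (d k = 0 \<longrightarrow> d (Suc k) \<le> 0) \<and> (d (Suc k) = 0 \<longrightarrow> d k \<ge> 0)"
    if k: "k < b - a" for k
  proof -
    have l1: "Suc (a + k) < length P" "Suc (a' + k) < length Q" using k b b'eq b' ab by linarith+
    have sP: "P ! Suc (a + k) = Ep (P ! (a + k)) \<or> P ! Suc (a + k) = Np (P ! (a + k))" by (rule lp_step[OF P l1(1)])
    have sQ: "Q ! Suc (a' + k) = Ep (Q ! (a' + k)) \<or> Q ! Suc (a' + k) = Np (Q ! (a' + k))" by (rule lp_step[OF Q l1(2)])
    have dS: "d (Suc k) = fst (Q ! Suc (a' + k)) - fst (P ! Suc (a + k))" by (simp add: d_def)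
    have memP: "P ! (a + k) \<in> set P" "P ! Suc (a + k) \<in> set P" using l1 by simp_all
    have memQ: "Q ! (a' + k) \<in> set Q" "Q ! Suc (a' + k) \<in> set Q" using l1 by simp_all
    have A1: "d k = 0 \<longrightarrow> d (Suc k) \<le> 0"
    proof
      assume dk: "d k = 0"
      then have eq: "Q ! (a' + k) = P ! (a + k)" using d0 k by simp
      show "d (Suc k) \<le> 0"
        using sP
      proof
        assume "P ! Suc (a + k) = Ep (P ! (a + k))"
        then show ?thesis using sQ dS eq by (auto simp: Ep_def Np_def)
      next
        assume pn: "P ! Suc (a + k) = Np (P ! (a + k))"
        then have "Np (P ! (a + k)) \<in> set Q" using A memP eq memQ by metis
        then have "Q ! Suc (a' + k) = Np (P ! (a + k))"
          using lp_same_lvl[OF Q memQ(2)] lvleq[OF less_imp_le[OF k]] eq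
          by (metis lvl_N sQ lvl_E)
        then show ?thesis using pn dS by simp
      qed
    qed
    have A2: "d (Suc k) = 0 \<longrightarrow> d k \<ge> 0"
    proof
      assume dk: "d (Suc k) = 0"
      have kk: "Suc k \<le> b - a" using k by simp
      have eq: "Q ! (a' + Suc k) = P ! (a + Suc k)" using d0[OF kk dk] by simp
      show "d k \<ge> 0"
        using sP
      proof
        assume pe: "P ! Suc (a + k) = Ep (P ! (a + k))"
        show ?thesis using sQ
        proof
          assume "Q ! Suc (a' + k) = Ep (Q ! (a' + k))"
          with pe eq have "Ep (Q ! (a' + k)) = Ep (P ! (a + k))" by simp
          then show ?thesis by (auto simp: d_def Ep_def)
        next
          assume "Q ! Suc (a' + k) = Np (Q ! (a' + k))"
          with pe eq have "Np (Q ! (a' + k)) = Ep (P ! (a + k))" by simp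
          then show ?thesis by (auto simp: d_def Ep_def Np_def)
        qed
      next
        assume pn: "P ! Suc (a + k) = Np (P ! (a + k))"
        then have "P ! Suc (a + k) \<in> set Q" using eq memQ by simp
        then have "P ! (a + k) \<in> set Q" using A memP pn by metis
        then have "d k = 0" using dmem less_imp_le[OF k] by simp
        then show ?thesis by simp
      qed
    qed
    have "d (Suc k) \<le> d k + 1" using sP sQ dS by (auto simp: d_def Ep_def Np_def)
    with A1 A2 show ?thesis by blast
  qed
  have le0: "d k \<le> 0" if "k \<le> b - a" for k
    using that
  proof (induction k)
    case 0 then show ?case using dmem[of 0] a z1 by simp
  next
    case (Suc k)
    then have "d k \<le> 0" by simp
    with step[of k] Suc.prems show ?case by (cases "d k = 0") auto
  qed
  have k0: "c - a \<le> b - a" using ab by simp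
  have dc: "d (c - a) \<noteq> 0"
  proof
    assume "d (c - a) = 0"
    then have "Q ! (a' + (c - a)) = P ! (a + (c - a))" using d0 k0 by simp
    moreover have "a' + (c - a) < length Q" using b'eq b' ab by linarith
    ultimately have "P ! c \<in> set Q" using ab by (metis nth_mem le_add_diff_inverse)
    with c wQ show False by simp
  qed
  have neg: "d k < 0" if "c - a \<le> k" "k \<le> b - a" for k
    using that
  proof (induction k)
    case 0 then have "c - a = 0" by simp
    with dc le0[of 0] show ?case by simp
  next
    case (Suc k)
    show ?case
    proof (cases "c - a = Suc k")
      case True
      then have "d (Suc k) \<noteq> 0" using dc by simp
      moreover have "d (Suc k) \<le> 0" using le0 Suc.prems by simp
      ultimately show ?thesis by simp
    next
      case False
      then have "d k < 0" using Suc by simp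
      moreover have "d (Suc k) \<le> 0" using le0 Suc.prems by simp
      ultimately show ?thesis using step[of k] Suc.prems by (cases "d (Suc k) = 0") auto
    qed
  qed
  have "d (b - a) = 0" using dmem[of "b - a"] ab b z2 by simp
  moreover have "d (b - a) < 0" using neg[of "b - a"] k0 by simp
  ultimately show False by simp
qed

lemma contig_Q:
  assumes P: "lattice_path P" and Q: "lattice_path Q"
    and A: "\<forall>z. z \<in> set P \<longrightarrow> Np z \<in> set P \<longrightarrow> (z \<in> set Q \<or> Np z \<in> set Q) \<longrightarrow> z \<in> set Q \<and> Np z \<in> set Q"
    and z1: "z1 \<in> set P" "z1 \<in> set Q" and z2: "z2 \<in> set P" "z2 \<in> set Q"
    and w: "w \<in> set Q" "lvl z1 \<le> lvl w" "lvl w \<le> lvl z2"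
  shows "w \<in> set P"
proof -
  obtain a where a: "a < length P" "P ! a = z1" "int a = lvl z1 - lvl (hd P)" using lp_idx[OF P z1(1)] by metis
  obtain b where b: "b < length P" "P ! b = z2" "int b = lvl z2 - lvl (hd P)" using lp_idx[OF P z2(1)] by metis
  define c where "c = nat (lvl w - lvl (hd P))"
  have c: "int c = lvl w - lvl (hd P)" "c < length P" using a b w by (simp_all add: c_def)
  have "lvl (P ! c) = lvl (P ! 0) + int c" using lp_lvl[OF P c(2)] .
  moreover have "lvl (hd P) = lvl (P ! 0)" using lp_nonempty[OF P] by (simp add: hd_conv_nth)
  ultimately have lc: "lvl (P ! c) = lvl w" using c by simp
  have "P ! c \<in> set P" using c by simp
  from contig_P[OF P Q A z1 z2 this] lc w have "P ! c \<in> set Q" by simp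
  from lp_same_lvl[OF Q this w(1) lc] have "P ! c = w" .
  with \<open>P ! c \<in> set P\<close> show ?thesis by simp
qed


lemma lp_take:
  assumes "lattice_path P" "0 < n"
  shows "lattice_path (take n P)"
  using assms unfolding lattice_path_def by auto

lemma lp_prefix:
  assumes P: "lattice_path P" and w: "w \<in> set P"
  obtains Q where "lattice_path Q" "hd Q = hd P" "last Q = w" "set Q \<subseteq> set P"
    "\<forall>u\<in>set Q. lvl u \<le> lvl w"
proof -
  obtain k where k: "k < length P" "P ! k = w" "int k = lvl w - lvl (hd P)" using lp_idx[OF P w] by metis
  define Q where "Q = take (Suc k) P"
  have "lattice_path Q" using lp_take[OF P] by (simp add: Q_def)
  moreover have "hd Q = hd P" using k lp_nonempty[OF P] by (simp add: Q_def hd_conv_nth)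
  moreover have "last Q = w"
  proof -
    have "Q \<noteq> []" "length Q = Suc k" using k by (auto simp: Q_def)
    then have "last Q = Q ! k" by (simp add: last_conv_nth)
    then show ?thesis using k by (simp add: Q_def)
  qed
  moreover have "set Q \<subseteq> set P" by (simp add: Q_def set_take_subset)
  moreover have "\<forall>u\<in>set Q. lvl u \<le> lvl w"
  proof
    fix u assume "u \<in> set Q"
    then obtain n where n: "n < length Q" "Q ! n = u" by (auto simp: in_set_conv_nth)
    then have "n \<le> k" "P ! n = u" "n < length P" using k by (auto simp: Q_def)
    with lp_lvl[OF P this(3)] lp_lvl[OF P k(1)] k show "lvl u \<le> lvl w" by simp
  qed
  ultimately show ?thesis using that by blast
qed

locale page =
  fixes M N :: int and I J :: "nat set" and h v :: "nat \<Rightarrow> pt list"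
  assumes h_lp: "i \<in> I \<Longrightarrow> lattice_path (h i)"
    and v_lp: "j \<in> J \<Longrightarrow> lattice_path (v j)"
    and h_in: "i \<in> I \<Longrightarrow> z \<in> set (h i) \<Longrightarrow> 1 \<le> fst z \<and> fst z \<le> M \<and> 1 \<le> snd z \<and> snd z \<le> N"
    and v_in: "j \<in> J \<Longrightarrow> z \<in> set (v j) \<Longrightarrow> 1 \<le> fst z \<and> fst z \<le> M \<and> 1 \<le> snd z \<and> snd z \<le> N"
    and h_hd: "i \<in> I \<Longrightarrow> snd (hd (h i)) = 1" and h_last: "i \<in> I \<Longrightarrow> snd (last (h i)) = N"
    and v_hd: "j \<in> J \<Longrightarrow> fst (hd (v j)) = M" and v_last: "j \<in> J \<Longrightarrow> fst (last (v j)) = 1"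
    and h_disj: "i \<in> I \<Longrightarrow> i' \<in> I \<Longrightarrow> z \<in> set (h i) \<Longrightarrow> z \<in> set (h i') \<Longrightarrow> i = i'"
    and v_disj: "j \<in> J \<Longrightarrow> j' \<in> J \<Longrightarrow> z \<in> set (v j) \<Longrightarrow> z \<in> set (v j') \<Longrightarrow> j = j'"
    and h_str: "i \<in> I \<Longrightarrow> z \<in> set (h i) \<Longrightarrow>
       (Wp z \<in> set (h i) \<and> Np z \<in> set (h i)) \<or> (Sp z \<in> set (h i) \<and> Ep z \<in> set (h i)) \<Longrightarrow>
       \<exists>j\<in>J. z \<in> set (v j)"
    and v_str: "j \<in> J \<Longrightarrow> z \<in> set (v j) \<Longrightarrow>
       (Wp z \<in> set (v j) \<and> Np z \<in> set (v j)) \<or> (Sp z \<in> set (v j) \<and> Ep z \<in> set (v j)) \<Longrightarrow>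
       \<exists>i\<in>I. z \<in> set (h i)"
    and J_ne: "J \<noteq> {}"
begin

definition goodV :: "pt \<Rightarrow> bool" where
  "goodV z \<longleftrightarrow> (\<exists>j\<in>J. z \<in> set (v j) \<and> Np z \<in> set (v j))"

definition goodH :: "pt \<Rightarrow> bool" where
  "goodH x \<longleftrightarrow> (\<exists>i\<in>I. x \<in> set (h i) \<and> Ep x \<in> set (h i))"

lemma h_not_last: "i \<in> I \<Longrightarrow> z \<in> set (h i) \<Longrightarrow> snd z < N \<Longrightarrow> z \<noteq> last (h i)"
  using h_last by auto
lemma v_not_hd: "j \<in> J \<Longrightarrow> z \<in> set (v j) \<Longrightarrow> fst z < M \<Longrightarrow> z \<noteq> hd (v j)"
  using v_hd by auto
lemma v_not_last: "j \<in> J \<Longrightarrow> z \<in> set (v j) \<Longrightarrow> 1 < fst z \<Longrightarrow> z \<noteq> last (v j)"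
  using v_last by auto
lemma h_not_hd: "i \<in> I \<Longrightarrow> z \<in> set (h i) \<Longrightarrow> 1 < snd z \<Longrightarrow> z \<noteq> hd (h i)"
  using h_hd by auto

lemma UL_helper:
  assumes IH: "\<forall>i\<in>I. \<forall>z. fst z = t + 1 \<longrightarrow> snd z < N \<longrightarrow> z \<in> set (h i) \<longrightarrow> Np z \<in> set (h i) \<longrightarrow> goodV z"
    and i: "i \<in> I" "x \<in> set (h i)" and j: "j \<in> J" "x \<in> set (v j)" "Ep x \<in> set (v j)"
    and bad: "\<not> goodH x" and fx: "fst x = t + 1"
  shows False
proof -
  have "snd (Ep x) \<le> N" using v_in[OF j(1) j(3)] by simp
  then have xN: "snd x < N" by (simp add: Ep_def)
  from lp_succ[OF h_lp[OF i(1)] i(2) h_not_last[OF i xN]]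
  show False
  proof
    assume "Ep x \<in> set (h i)" with i bad show False by (auto simp: goodH_def)
  next
    assume "Np x \<in> set (h i)"
    with IH i fx xN have "goodV x" by blast
    then obtain j' where j': "j' \<in> J" "x \<in> set (v j')" "Np x \<in> set (v j')" by (auto simp: goodV_def)
    with v_disj[OF j(1) j'(1) j(2)] have "j' = j" by simp
    with j' have "Np x \<in> set (v j)" by simp
    from EN_excl[OF v_lp[OF j(1)] j(3) this] show False .
  qed
qed

lemma UL_row:
  assumes IH: "\<forall>i\<in>I. \<forall>z. fst z = t + 1 \<longrightarrow> snd z < N \<longrightarrow> z \<in> set (h i) \<longrightarrow> Np z \<in> set (h i) \<longrightarrow> goodV z"
    and t: "t + 1 < M"
  shows "\<forall>j\<in>J. \<forall>x. fst x = t + 1 \<longrightarrow> snd x = c \<longrightarrow> x \<in> set (v j) \<longrightarrow> Ep x \<in> set (v j) \<longrightarrow> \<not> goodH x \<longrightarrow> False"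
proof (cases "c \<ge> 1")
  case False
  show ?thesis
  proof (intro ballI allI impI)
    fix j x assume "j \<in> J" "fst x = t + 1" "snd x = c" "x \<in> set (v j)"
    then show False using v_in[of j x] False by simp
  qed
next
  case True
  then show ?thesis
  proof (induction c rule: int_ge_induct)
    case base
    show ?case
    proof (intro ballI allI impI)
      fix j x assume j: "j \<in> J" and x: "fst x = t + 1" "snd x = 1" "x \<in> set (v j)" "Ep x \<in> set (v j)" "\<not> goodH x"
      have "x \<noteq> hd (v j)" using v_not_hd[OF j x(3)] x t by simp
      moreover have "Wp x \<notin> set (v j)"
      proof
        assume "Wp x \<in> set (v j)" from v_in[OF j this] x show False by (simp add: Wp_def)
      qed
      ultimately have "Sp x \<in> set (v j)" using lp_pred[OF v_lp[OF j] x(3)] by blast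
      with corner_SE[OF v_lp[OF j] x(3) _ x(4)] v_str[OF j x(3)] x(4) obtain i where "i \<in> I" "x \<in> set (h i)"
        by blast
      from UL_helper[OF IH this j x(3,4,5,1)] show False .
    qed
  next
    case (step c)
    show ?case
    proof (intro ballI allI impI)
      fix j x assume j: "j \<in> J" and x: "fst x = t + 1" "snd x = c + 1" "x \<in> set (v j)" "Ep x \<in> set (v j)" "\<not> goodH x"
      have "x \<noteq> hd (v j)" using v_not_hd[OF j x(3)] x t by simp
      from lp_pred[OF v_lp[OF j] x(3) this] show False
      proof
        assume W: "Wp x \<in> set (v j)"
        have EW: "Ep (Wp x) = x" by (simp add: Ep_def Wp_def)
        show False
        proof (cases "goodH (Wp x)")
          case False
          have "fst (Wp x) = t + 1" "snd (Wp x) = c" using x by (simp_all add: Wp_def)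
          from step.IH[rule_format, OF j this W] EW x(3) False show False by simp
        next
          case True
          then obtain i where i: "i \<in> I" "Wp x \<in> set (h i)" "x \<in> set (h i)" using EW by (auto simp: goodH_def)
          from UL_helper[OF IH i(1,3) j x(3,4,5,1)] show False .
        qed
      next
        assume "Sp x \<in> set (v j)"
        with corner_SE[OF v_lp[OF j] x(3) _ x(4)] v_str[OF j x(3)] x(4) obtain i where "i \<in> I" "x \<in> set (h i)"
          by blast
        from UL_helper[OF IH this j x(3,4,5,1)] show False .
      qed
    qed
  qed
qed

lemma UL:
  assumes "0 \<le> t"
  shows "\<forall>i\<in>I. \<forall>z. fst z = t + 1 \<longrightarrow> snd z < N \<longrightarrow> z \<in> set (h i) \<longrightarrow> Np z \<in> set (h i) \<longrightarrow> goodV z"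
  using assms
proof (induction t rule: int_ge_induct)
  case base
  show ?case
  proof (intro ballI allI impI)
    fix i z assume "i \<in> I" "fst z = 0 + 1" "Np z \<in> set (h i)"
    then show "goodV z" using h_in[of i "Np z"] by (simp add: Np_def)
  qed
next
  case (step t)
  show ?case
  proof (intro ballI allI impI)
    fix i z assume i: "i \<in> I" and z: "fst z = t + 1 + 1" "snd z < N" "z \<in> set (h i)" "Np z \<in> set (h i)"
    show "goodV z"
    proof (rule ccontr)
      assume bad: "\<not> goodV z"
      obtain y where y_def: "Np z = y" by simp
      have zy: "Sp y = z" using y_def by (auto simp: Np_def Sp_def)
      have fy: "fst y = t + 1" "snd y < N" using z y_def by (auto simp: Np_def)
      have tM: "t + 1 < M" using h_in[OF i z(3)] z by simp
      have yh: "y \<in> set (h i)" using z y_def by simp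
      have "\<exists>j\<in>J. y \<in> set (v j) \<and> Wp y \<in> set (v j)"
      proof -
        have "\<exists>j\<in>J. y \<in> set (v j)"
          using lp_succ[OF h_lp[OF i] yh h_not_last[OF i yh fy(2)]]
        proof
          assume "Ep y \<in> set (h i)"
          moreover have "Sp y \<in> set (h i)" using z(3) zy by simp
          ultimately show ?thesis using h_str[OF i yh] by blast
        next
          assume "Np y \<in> set (h i)"
          with step.IH i fy yh have "goodV y" by blast
          then show ?thesis by (auto simp: goodV_def)
        qed
        then obtain j where j: "j \<in> J" "y \<in> set (v j)" by blast
        have "y \<noteq> hd (v j)" using v_not_hd[OF j] fy tM by simp
        from lp_pred[OF v_lp[OF j(1)] j(2) this] show ?thesis
        proof
          assume "Sp y \<in> set (v j)"
          then have "z \<in> set (v j)" "Np z \<in> set (v j)" using zy y_def j(2) by simp_all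
          with j(1) bad have False unfolding goodV_def by blast
          then show ?thesis ..
        qed (use j in blast)
      qed
      then obtain j where j: "j \<in> J" "y \<in> set (v j)" "Wp y \<in> set (v j)" by blast
      have EW: "Ep (Wp y) = y" by (simp add: Ep_def Wp_def)
      have hb: "\<not> goodH (Wp y)"
      proof
        assume "goodH (Wp y)"
        then obtain i' where i': "i' \<in> I" "Wp y \<in> set (h i')" "y \<in> set (h i')" using EW by (auto simp: goodH_def)
        with h_disj[OF i i'(1) yh] have "i' = i" by simp
        with i' have "Wp y \<in> set (h i)" by simp
        moreover have "Sp y \<in> set (h i)" using z(3) zy by simp
        ultimately show False using WS_excl[OF h_lp[OF i]] by blast
      qed
      have "fst (Wp y) = t + 1" using fy by (simp add: Wp_def)
      from UL_row[OF step.IH tM, of "snd (Wp y)", rule_format, OF j(1) this refl j(3)] EW j(2) hb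
      show False by simp
    qed
  qed
qed

lemma colN_N1:
  assumes "N = 1" "i \<in> I" "z \<in> set (h i)" "Np z \<in> set (h i)"
  shows "goodV z"
proof -
  obtain j where j: "j \<in> J" using J_ne by blast
  have l: "lattice_path (v j)" using v_lp[OF j] .
  have c1: "snd (hd (v j)) = 1" "snd (last (v j)) = 1"
    using v_in[OF j lp_hd_in[OF l]] v_in[OF j lp_last_in[OF l]] assms(1) by auto
  have "hd (v j) = (M, 1)" "last (v j) = (1, 1)" using v_hd[OF j] v_last[OF j] c1
    by (simp_all add: prod_eq_iff)
  then have "(M, 1) \<in> set (v j)" "(1, 1) \<in> set (v j)"
    using lp_hd_in[OF l] lp_last_in[OF l] by metis+
  moreover have "1 \<le> fst z" "fst z \<le> M" "snd z = 1" "1 \<le> fst (Np z)"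
    using h_in[OF assms(2) assms(3)] h_in[OF assms(2) assms(4)] assms(1) by auto
  ultimately have "(fst z, 1) \<in> set (v j)" "(fst z - 1, 1) \<in> set (v j)"
    using col_interval[OF l \<open>(M, 1) \<in> set (v j)\<close> \<open>(1, 1) \<in> set (v j)\<close>, of "fst z"]
      col_interval[OF l \<open>(M, 1) \<in> set (v j)\<close> \<open>(1, 1) \<in> set (v j)\<close>, of "fst z - 1"]
    by (simp_all add: Np_def)
  moreover have "z = (fst z, 1)" "Np z = (fst z - 1, 1)" using \<open>snd z = 1\<close> by (simp_all add: Np_def prod_eq_iff)
  ultimately show ?thesis using j unfolding goodV_def by metis
qed

lemma colN:
  assumes "i \<in> I" "z \<in> set (h i)" "Np z \<in> set (h i)" "snd z = N"
  shows "goodV z"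
proof (cases "N = 1")
  case True then show ?thesis using colN_N1 assms by blast
next
  case False
  have "fst z \<le> M" using h_in assms by blast
  have "\<forall>i\<in>I. \<forall>z. fst z = M - int n \<longrightarrow> snd z = N \<longrightarrow> z \<in> set (h i) \<longrightarrow> Np z \<in> set (h i) \<longrightarrow> goodV z" for n
  proof (induction n)
    case 0
    show ?case
    proof (intro ballI allI impI)
      fix i z assume i: "i \<in> I" and z: "fst z = M - int 0" "snd z = N" "z \<in> set (h i)" "Np z \<in> set (h i)"
      have N1: "1 < N" using False h_in[OF i z(3)] by simp
      have "z \<noteq> hd (h i)" using h_not_hd[OF i z(3)] N1 z by simp
      from lp_pred[OF h_lp[OF i] z(3) this] have "Wp z \<in> set (h i)"
        using h_in[OF i, of "Sp z"] z by (auto simp: Sp_def)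
      with h_str[OF i z(3)] z obtain j where j: "j \<in> J" "z \<in> set (v j)" by blast
      have fz: "1 < fst z" using h_in[OF i z(4)] by (simp add: Np_def)
      from lp_succ[OF v_lp[OF j(1)] j(2) v_not_last[OF j fz]]
      have "Ep z \<in> set (v j) \<or> Np z \<in> set (v j)" .
      moreover have "Ep z \<notin> set (v j)"
      proof
        assume "Ep z \<in> set (v j)" from v_in[OF j(1) this] z(2) show False by (simp add: Ep_def)
      qed
      ultimately have "Np z \<in> set (v j)" by blast
      with j show "goodV z" unfolding goodV_def by blast
    qed
  next
    case (Suc n)
    show ?case
    proof (intro ballI allI impI)
      fix i z assume i: "i \<in> I" and z: "fst z = M - int (Suc n)" "snd z = N" "z \<in> set (h i)" "Np z \<in> set (h i)"
      have N1: "1 < N" using False h_in[OF i z(3)] by simp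
      have "z \<noteq> hd (h i)" using h_not_hd[OF i z(3)] N1 z by simp
      have fz: "1 < fst z" using h_in[OF i z(4)] by (simp add: Np_def)
      have "\<exists>j\<in>J. z \<in> set (v j)"
        using lp_pred[OF h_lp[OF i] z(3) \<open>z \<noteq> hd (h i)\<close>]
      proof
        assume "Wp z \<in> set (h i)"
        with h_str[OF i z(3)] z show ?thesis by blast
      next
        assume S: "Sp z \<in> set (h i)"
        have NS: "Np (Sp z) = z" by (simp add: Np_def Sp_def)
        have "fst (Sp z) = M - int n" "snd (Sp z) = N" using z(1,2) by (simp_all add: Sp_def)
        from Suc.IH[rule_format, OF i this S] NS z(3) have "goodV (Sp z)" by simp
        then show ?thesis using \<open>Np (Sp z) = z\<close> by (auto simp: goodV_def)
      qed
      then obtain j where j: "j \<in> J" "z \<in> set (v j)" by blast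
      from lp_succ[OF v_lp[OF j(1)] j(2) v_not_last[OF j fz]]
      have "Ep z \<in> set (v j) \<or> Np z \<in> set (v j)" .
      moreover have "Ep z \<notin> set (v j)"
      proof
        assume "Ep z \<in> set (v j)" from v_in[OF j(1) this] z(2) show False by (simp add: Ep_def)
      qed
      ultimately have "Np z \<in> set (v j)" by blast
      with j show "goodV z" unfolding goodV_def by blast
    qed
  qed
  moreover have "fst z = M - int (nat (M - fst z))" using \<open>fst z \<le> M\<close> by simp
  ultimately show ?thesis using assms by blast
qed

theorem L1:
  assumes "i \<in> I" "z \<in> set (h i)" "Np z \<in> set (h i)"
  shows "\<exists>j\<in>J. z \<in> set (v j) \<and> Np z \<in> set (v j)"
proof -
  have "snd z \<le> N" "1 \<le> fst (Np z)" using h_in assms by auto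
  show ?thesis
  proof (cases "snd z = N")
    case True then show ?thesis using colN assms by (auto simp: goodV_def)
  next
    case False
    then have "snd z < N" using \<open>snd z \<le> N\<close> by simp
    moreover have "0 \<le> fst z - 1" using \<open>1 \<le> fst (Np z)\<close> by (simp add: Np_def)
    from UL[OF this] have "\<forall>i\<in>I. \<forall>z'. fst z' = fst z - 1 + 1 \<longrightarrow> snd z' < N \<longrightarrow> z' \<in> set (h i) \<longrightarrow> Np z' \<in> set (h i) \<longrightarrow> goodV z'" .
    from this[rule_format, OF assms(1) _ \<open>snd z < N\<close> assms(2) assms(3)] show ?thesis
      by (simp add: goodV_def)
  qed
qed

theorem C2: assumes "i \<in> I" "j \<in> J" shows "\<exists>z. z \<in> set (h i) \<and> z \<in> set (v j)"
proof -
  have P: "lattice_path (h i)" and Q: "lattice_path (v j)" using assms h_lp v_lp by auto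
  show ?thesis
  proof (rule cross[OF P Q])
    show "\<forall>z\<in>set (v j). snd (hd (h i)) \<le> snd z \<and> snd z \<le> snd (last (h i))"
      using v_in[OF assms(2)] h_hd[OF assms(1)] h_last[OF assms(1)] by auto
    have hq: "1 \<le> snd (hd (v j))" "snd (hd (v j)) \<le> N" using v_in[OF assms(2) lp_hd_in[OF Q]] by auto
    from col_fwd[OF P lp_hd_in[OF P], of "snd (hd (v j))"] hq h_hd[OF assms(1)] h_last[OF assms(1)]
    obtain p where p: "p \<in> set (h i)" "snd p = snd (hd (v j))" by auto
    have "fst p \<le> fst (hd (v j))" using h_in[OF assms(1) p(1)] v_hd[OF assms(2)] by simp
    with p show "\<exists>p\<in>set (h i). snd p = snd (hd (v j)) \<and> fst p \<le> fst (hd (v j))" by blast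
    have lq: "1 \<le> snd (last (v j))" "snd (last (v j)) \<le> N" using v_in[OF assms(2) lp_last_in[OF Q]] by auto
    from col_fwd[OF P lp_hd_in[OF P], of "snd (last (v j))"] lq h_hd[OF assms(1)] h_last[OF assms(1)]
    obtain p where p: "p \<in> set (h i)" "snd p = snd (last (v j))" by auto
    have "fst (last (v j)) \<le> fst p" using h_in[OF assms(1) p(1)] v_last[OF assms(2)] by simp
    with p show "\<exists>p\<in>set (h i). snd p = snd (last (v j)) \<and> fst (last (v j)) \<le> fst p" by blast
  qed
qed

lemma A_hyp:
  assumes "i \<in> I" "j \<in> J"
  shows "\<forall>z. z \<in> set (h i) \<longrightarrow> Np z \<in> set (h i) \<longrightarrow> (z \<in> set (v j) \<or> Np z \<in> set (v j)) \<longrightarrow> z \<in> set (v j) \<and> Np z \<in> set (v j)"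
proof (intro allI impI)
  fix z assume z: "z \<in> set (h i)" "Np z \<in> set (h i)" "z \<in> set (v j) \<or> Np z \<in> set (v j)"
  from L1[OF assms(1) z(1,2)] obtain j' where j': "j' \<in> J" "z \<in> set (v j')" "Np z \<in> set (v j')" by blast
  with z(3) v_disj[OF assms(2) j'(1)] have "j' = j" by blast
  with j' show "z \<in> set (v j) \<and> Np z \<in> set (v j)" by simp
qed

theorem C3h:
  assumes "i \<in> I" "j \<in> J" "z1 \<in> set (h i)" "z1 \<in> set (v j)" "z2 \<in> set (h i)" "z2 \<in> set (v j)"
    "w \<in> set (h i)" "lvl z1 \<le> lvl w" "lvl w \<le> lvl z2"
  shows "w \<in> set (v j)"
  using contig_P[OF h_lp[OF assms(1)] v_lp[OF assms(2)] A_hyp[OF assms(1,2)]] assms by blast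

theorem C3v:
  assumes "i \<in> I" "j \<in> J" "z1 \<in> set (h i)" "z1 \<in> set (v j)" "z2 \<in> set (h i)" "z2 \<in> set (v j)"
    "w \<in> set (v j)" "lvl z1 \<le> lvl w" "lvl w \<le> lvl z2"
  shows "w \<in> set (h i)"
  using contig_Q[OF h_lp[OF assms(1)] v_lp[OF assms(2)] A_hyp[OF assms(1,2)]] assms by blast

theorem C4:
  assumes i: "i \<in> I" and j: "j \<in> J" "j' \<in> J"
    and ord: "\<forall>z\<in>set (v j). \<forall>z'\<in>set (v j'). fst z = fst z' \<longrightarrow> snd z < snd z'"
    and z: "z \<in> set (h i)" "z \<in> set (v j)" and z': "z' \<in> set (h i)" "z' \<in> set (v j')"
  shows "lvl z < lvl z'"
proof (rule ccontr)
  assume "\<not> ?thesis"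
  then have le: "lvl z' \<le> lvl z" by simp
  have P: "lattice_path (h i)" and Q: "lattice_path (v j)" using h_lp v_lp i j by auto
  have jj: "j \<noteq> j'" using ord z(2) by auto
  have "z \<noteq> z'" using v_disj[OF j] z z' jj by blast
  then have "lvl z' \<noteq> lvl z" using lp_same_lvl[OF P z(1) z'(1)] by metis
  with le have lt: "lvl z' < lvl z" by simp
  from lp_order[OF P z'(1) z(1) le] have o1: "fst z \<le> fst z'" "snd z' \<le> snd z" by auto
  have "fst z' \<le> M" using h_in[OF i z'(1)] by simp
  from row_bwd[OF Q z(2) o1(1)] this v_hd[OF j(1)]
  obtain w where w: "w \<in> set (v j)" "fst w = fst z'" "lvl w \<le> lvl z" by auto
  have wz': "snd w < snd z'" using ord w z'(2) by auto
  have "1 \<le> snd w" using v_in[OF j(1) w(1)] by simp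
  from col_bwd[OF P z'(1), of "snd w"] this h_hd[OF i] wz'
  obtain p where p: "p \<in> set (h i)" "snd p = snd w" "lvl p \<le> lvl z'" by auto
  have "fst z' \<le> fst p" using lp_order[OF P p(1) z'(1) p(3)] by simp
  obtain Q' where Q': "lattice_path Q'" "hd Q' = hd (v j)" "last Q' = w" "set Q' \<subseteq> set (v j)"
    "\<forall>u\<in>set Q'. lvl u \<le> lvl w" using lp_prefix[OF Q w(1)] by blast
  have "\<exists>u. u \<in> set (h i) \<and> u \<in> set Q'"
  proof (rule cross[OF P Q'(1)])
    show "\<forall>z\<in>set Q'. snd (hd (h i)) \<le> snd z \<and> snd z \<le> snd (last (h i))"
      using Q'(4) v_in[OF j(1)] h_hd[OF i] h_last[OF i] by force
    have hq: "1 \<le> snd (hd (v j))" "snd (hd (v j)) \<le> N" using v_in[OF j(1) lp_hd_in[OF Q]] by auto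
    from col_fwd[OF P lp_hd_in[OF P], of "snd (hd (v j))"] hq h_hd[OF i] h_last[OF i]
    obtain p0 where p0: "p0 \<in> set (h i)" "snd p0 = snd (hd (v j))" by auto
    have "fst p0 \<le> fst (hd (v j))" using h_in[OF i p0(1)] v_hd[OF j(1)] by simp
    with p0 Q'(2) show "\<exists>p\<in>set (h i). snd p = snd (hd Q') \<and> fst p \<le> fst (hd Q')" by auto
    show "\<exists>p\<in>set (h i). snd p = snd (last Q') \<and> fst (last Q') \<le> fst p"
      using p Q'(3) w(2) \<open>fst z' \<le> fst p\<close> by auto
  qed
  then obtain u where u: "u \<in> set (h i)" "u \<in> set Q'" by blast
  have uv: "u \<in> set (v j)" using u Q'(4) by blast
  have "lvl u \<le> lvl w" using Q'(5) u by blast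
  then have "snd u \<le> snd w" using lp_order[OF Q uv w(1)] by simp
  then have "snd u < snd z'" using wz' by simp
  have "lvl u < lvl z'"
  proof (rule ccontr)
    assume "\<not> ?thesis"
    then have "lvl z' \<le> lvl u" by simp
    from lp_order[OF P z'(1) u(1) this] \<open>snd u < snd z'\<close> show False by simp
  qed
  have "z' \<in> set (v j)" using C3h[OF i j(1) u(1) uv z(1) z(2) z'(1)] \<open>lvl u < lvl z'\<close> lt by simp
  with v_disj[OF j(1) j(2) _ z'(2)] jj show False by simp
qed

end


definition tau :: "int \<Rightarrow> int \<Rightarrow> pt \<Rightarrow> pt" where "tau M N z = (N + 1 - snd z, M + 1 - fst z)"

lemma tau_inv[simp]: "tau N M (tau M N z) = z" by (simp add: tau_def)
lemma tau_inj: "tau M N z = tau M N w \<longleftrightarrow> z = w" by (auto simp: tau_def prod_eq_iff)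
lemma tau_E: "Ep (tau M N z) = tau M N (Np z)" by (simp add: tau_def Ep_def Np_def)
lemma tau_N: "Np (tau M N z) = tau M N (Ep z)" by (simp add: tau_def Ep_def Np_def)
lemma tau_W: "Wp (tau M N z) = tau M N (Sp z)" by (simp add: tau_def Wp_def Sp_def)
lemma tau_S: "Sp (tau M N z) = tau M N (Wp z)" by (simp add: tau_def Wp_def Sp_def)
lemma tau_lvl: "lvl (tau M N z) = lvl z + M - N" by (simp add: tau_def lvl_def)
lemma tau_fst: "fst (tau M N z) = N + 1 - snd z" and tau_snd: "snd (tau M N z) = M + 1 - fst z"
  by (simp_all add: tau_def)

lemma tau_mem: "tau M N z \<in> set (map (tau M N) P) \<longleftrightarrow> z \<in> set P"
  by (auto simp: tau_inj)

lemma tau_mem': "y \<in> set (map (tau M N) P) \<longleftrightarrow> tau N M y \<in> set P"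
  by (metis tau_inv tau_mem)

lemma tau_lp: "lattice_path P \<Longrightarrow> lattice_path (map (tau M N) P)"
  unfolding lattice_path_def
  by (auto simp: tau_def)

lemma page_transpose:
  assumes "page M N I J h v" "I \<noteq> {}"
  shows "page N M J I (\<lambda>j. map (tau M N) (v j)) (\<lambda>i. map (tau M N) (h i))"
proof -
  interpret page M N I J h v by fact
  show ?thesis
  proof
    show "lattice_path (map (tau M N) (v j))" if "j \<in> J" for j using tau_lp v_lp that by blast
    show "lattice_path (map (tau M N) (h i))" if "i \<in> I" for i using tau_lp h_lp that by blast
    show "1 \<le> fst z \<and> fst z \<le> N \<and> 1 \<le> snd z \<and> snd z \<le> M" if "j \<in> J" "z \<in> set (map (tau M N) (v j))" for j z
      using that v_in[OF that(1)] by (auto simp: tau_def)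
    show "1 \<le> fst z \<and> fst z \<le> N \<and> 1 \<le> snd z \<and> snd z \<le> M" if "i \<in> I" "z \<in> set (map (tau M N) (h i))" for i z
      using that h_in[OF that(1)] by (auto simp: tau_def)
    show "snd (hd (map (tau M N) (v j))) = 1" if "j \<in> J" for j
      using v_hd[OF that] lp_nonempty[OF v_lp[OF that]] by (simp add: hd_map tau_def)
    show "snd (last (map (tau M N) (v j))) = M" if "j \<in> J" for j
      using v_last[OF that] lp_nonempty[OF v_lp[OF that]] by (simp add: last_map tau_def)
    show "fst (hd (map (tau M N) (h i))) = N" if "i \<in> I" for i
      using h_hd[OF that] lp_nonempty[OF h_lp[OF that]] by (simp add: hd_map tau_def)
    show "fst (last (map (tau M N) (h i))) = 1" if "i \<in> I" for i
      using h_last[OF that] lp_nonempty[OF h_lp[OF that]] by (simp add: last_map tau_def)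
    show "j = j'" if "j \<in> J" "j' \<in> J" "z \<in> set (map (tau M N) (v j))" "z \<in> set (map (tau M N) (v j'))" for j j' z
      using that(3,4) unfolding tau_mem' by (rule v_disj[OF that(1,2)])
    show "i = i'" if "i \<in> I" "i' \<in> I" "z \<in> set (map (tau M N) (h i))" "z \<in> set (map (tau M N) (h i'))" for i i' z
      using that(3,4) unfolding tau_mem' by (rule h_disj[OF that(1,2)])
    show "\<exists>i\<in>I. z \<in> set (map (tau M N) (h i))"
      if a: "j \<in> J" "z \<in> set (map (tau M N) (v j))"
        "Wp z \<in> set (map (tau M N) (v j)) \<and> Np z \<in> set (map (tau M N) (v j)) \<or>
         Sp z \<in> set (map (tau M N) (v j)) \<and> Ep z \<in> set (map (tau M N) (v j))" for j z
    proof -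
      obtain x where x: "z = tau M N x" by (metis tau_inv)
      have "x \<in> set (v j)" using a(2) unfolding x tau_mem .
      moreover have "Sp x \<in> set (v j) \<and> Ep x \<in> set (v j) \<or> Wp x \<in> set (v j) \<and> Np x \<in> set (v j)"
        using a(3) unfolding x tau_E tau_N tau_W tau_S tau_mem by blast
      ultimately obtain i where "i \<in> I" "x \<in> set (h i)" using v_str[OF a(1)] by blast
      then show ?thesis unfolding x tau_mem by blast
    qed
    show "\<exists>j\<in>J. z \<in> set (map (tau M N) (v j))"
      if a: "i \<in> I" "z \<in> set (map (tau M N) (h i))"
        "Wp z \<in> set (map (tau M N) (h i)) \<and> Np z \<in> set (map (tau M N) (h i)) \<or>
         Sp z \<in> set (map (tau M N) (h i)) \<and> Ep z \<in> set (map (tau M N) (h i))" for i z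
    proof -
      obtain x where x: "z = tau M N x" by (metis tau_inv)
      have "x \<in> set (h i)" using a(2) unfolding x tau_mem .
      moreover have "Sp x \<in> set (h i) \<and> Ep x \<in> set (h i) \<or> Wp x \<in> set (h i) \<and> Np x \<in> set (h i)"
        using a(3) unfolding x tau_E tau_N tau_W tau_S tau_mem by blast
      ultimately obtain j where "j \<in> J" "x \<in> set (v j)" using h_str[OF a(1)] by blast
      then show ?thesis unfolding x tau_mem by blast
    qed
    show "I \<noteq> {}" by fact
  qed
qed

context page begin

theorem L1':
  assumes I: "I \<noteq> {}" and j: "j \<in> J" "z \<in> set (v j)" "Ep z \<in> set (v j)"
  shows "\<exists>i\<in>I. z \<in> set (h i) \<and> Ep z \<in> set (h i)"
proof -
  interpret T: page N M J I "\<lambda>j. map (tau M N) (v j)" "\<lambda>i. map (tau M N) (h i)"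
    by (rule page_transpose[OF page_axioms I])
  have "tau M N z \<in> set (map (tau M N) (v j))" "Np (tau M N z) \<in> set (map (tau M N) (v j))"
    using j unfolding tau_N tau_mem by simp_all
  from T.L1[OF j(1) this] obtain i where "i \<in> I" "tau M N z \<in> set (map (tau M N) (h i))"
    "Np (tau M N z) \<in> set (map (tau M N) (h i))" by blast
  then show ?thesis unfolding tau_N tau_mem by blast
qed

theorem C4':
  assumes I: "I \<noteq> {}" and i: "i \<in> I" "i' \<in> I" and j: "j \<in> J"
    and ord: "\<forall>z\<in>set (h i). \<forall>z'\<in>set (h i'). snd z = snd z' \<longrightarrow> fst z' < fst z"
    and z: "z \<in> set (v j)" "z \<in> set (h i)" and z': "z' \<in> set (v j)" "z' \<in> set (h i')"
  shows "lvl z < lvl z'"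
proof -
  interpret T: page N M J I "\<lambda>j. map (tau M N) (v j)" "\<lambda>i. map (tau M N) (h i)"
    by (rule page_transpose[OF page_axioms I])
  have ord': "\<forall>y\<in>set (map (tau M N) (h i)). \<forall>y'\<in>set (map (tau M N) (h i')). fst y = fst y' \<longrightarrow> snd y < snd y'"
    using ord by (auto simp: tau_def)
  have "tau M N z \<in> set (map (tau M N) (v j))" "tau M N z \<in> set (map (tau M N) (h i))"
       "tau M N z' \<in> set (map (tau M N) (v j))" "tau M N z' \<in> set (map (tau M N) (h i'))"
    using z z' unfolding tau_mem by simp_all
  from T.C4[OF j i ord' this] show ?thesis by (simp add: tau_lvl)
qed

end


lemma convex_interval:
  assumes conv: "\<And>n1 n n2. n1 \<le> n \<Longrightarrow> n \<le> n2 \<Longrightarrow> n2 < length L \<Longrightarrow> f (L ! n1) \<Longrightarrow> f (L ! n2) \<Longrightarrow> f (L ! n)"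
    and ex: "\<exists>n<length L. f (L ! n)"
  obtains a b where "a < b" "b \<le> length L" "\<And>n. n < length L \<Longrightarrow> f (L ! n) \<longleftrightarrow> a \<le> n \<and> n < b"
proof -
  define Pr where "Pr n \<longleftrightarrow> n < length L \<and> f (L ! n)" for n
  from ex obtain k where k: "Pr k" by (auto simp: Pr_def)
  define a where "a = (LEAST n. Pr n)"
  define c where "c = (GREATEST n. Pr n)"
  have bnd: "\<And>y. Pr y \<Longrightarrow> y \<le> length L" by (auto simp: Pr_def)
  have Pa: "Pr a" unfolding a_def using k by (rule LeastI)
  have Pc: "Pr c" unfolding c_def using GreatestI_nat[of Pr k, OF k bnd] .
  have ak: "a \<le> k" unfolding a_def using k by (rule Least_le)
  have kc: "k \<le> c" unfolding c_def using Greatest_le_nat[of Pr k, OF k bnd] .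
  have le: "n \<le> c" if "Pr n" for n unfolding c_def using Greatest_le_nat[of Pr n, OF that bnd] .
  have ge: "a \<le> n" if "Pr n" for n unfolding a_def using that by (rule Least_le)
  show ?thesis
  proof (rule that[of a "Suc c"])
    show "a < Suc c" using ak kc by simp
    show "Suc c \<le> length L" using Pc by (simp add: Pr_def)
    fix n assume n: "n < length L"
    show "f (L ! n) \<longleftrightarrow> a \<le> n \<and> n < Suc c"
    proof
      assume "f (L ! n)" then have "Pr n" using n by (simp add: Pr_def)
      then show "a \<le> n \<and> n < Suc c" using le ge by fastforce
    next
      assume "a \<le> n \<and> n < Suc c"
      then show "f (L ! n)" using conv[of a n c] Pa Pc by (simp add: Pr_def)
    qed
  qed
qed

lemma filter_block:
  assumes ab: "a \<le> b" "b \<le> length L" and iff: "\<And>n. n < length L \<Longrightarrow> f (L ! n) \<longleftrightarrow> a \<le> n \<and> n < b"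
  shows "filter f L = take (b - a) (drop a L)" "L = take a L @ filter f L @ drop b L"
proof -
  have split: "L = take a L @ take (b - a) (drop a L) @ drop b L"
  proof -
    have "drop a L = take (b - a) (drop a L) @ drop (b - a) (drop a L)" by (rule append_take_drop_id[symmetric])
    moreover have "drop (b - a) (drop a L) = drop b L" using ab by simp
    ultimately show ?thesis by (metis append_take_drop_id)
  qed
  have f1: "filter f (take a L) = []"
  proof (rule filter_False, intro ballI)
    fix x assume "x \<in> set (take a L)"
    then obtain n where "n < length (take a L)" "take a L ! n = x" by (auto simp: in_set_conv_nth)
    then have "n < a" "n < length L" "L ! n = x" by auto
    then show "\<not> f x" using iff by auto
  qed
  have f2: "filter f (take (b - a) (drop a L)) = take (b - a) (drop a L)"
  proof (rule filter_True, intro ballI)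
    fix x assume "x \<in> set (take (b - a) (drop a L))"
    then obtain n where "n < length (take (b - a) (drop a L))" "take (b - a) (drop a L) ! n = x" by (auto simp: in_set_conv_nth)
    then have "n < b - a" "a + n < length L" "L ! (a + n) = x" using ab by auto
    then show "f x" using iff[of "a + n"] by auto
  qed
  have f3: "filter f (drop b L) = []"
  proof (rule filter_False, intro ballI)
    fix x assume "x \<in> set (drop b L)"
    then obtain n where "n < length (drop b L)" "drop b L ! n = x" by (auto simp: in_set_conv_nth)
    then have "b + n < length L" "L ! (b + n) = x" using ab by auto
    then show "\<not> f x" using iff[of "b + n"] by auto
  qed
  have "filter f L = filter f (take a L @ take (b - a) (drop a L) @ drop b L)" using split by metis
  also have "\<dots> = take (b - a) (drop a L)" using f1 f2 f3 by simp
  finally show "filter f L = take (b - a) (drop a L)" .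
  with split show "L = take a L @ filter f L @ drop b L" by simp
qed

lemma lp_block:
  assumes "lattice_path L" "a < b" "b \<le> length L"
  shows "lattice_path (take (b - a) (drop a L))"
  using assms unfolding lattice_path_def by auto

definition is_block :: "pt list \<Rightarrow> pt list \<Rightarrow> bool" where
  "is_block L Y \<longleftrightarrow> (\<exists>a b. a < b \<and> b \<le> length L \<and> Y = take (b - a) (drop a L))"

lemma horiz_gap:
  assumes L: "lattice_path L" and sa: "s \<le> a" "a < length L"
    and nov: "\<forall>n. s \<le> n \<longrightarrow> n < a \<longrightarrow> fst (L ! Suc n) = fst (L ! n)"
  shows "\<forall>d. s + d \<le> a \<longrightarrow> L ! (s + d) = (fst (L ! s), snd (L ! s) + int d)"
proof (intro allI impI)
  fix d assume "s + d \<le> a"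
  then show "L ! (s + d) = (fst (L ! s), snd (L ! s) + int d)"
  proof (induction d)
    case 0 then show ?case by simp
  next
    case (Suc d)
    then have IH: "L ! (s + d) = (fst (L ! s), snd (L ! s) + int d)" by simp
    have lt: "Suc (s + d) < length L" using Suc.prems sa by simp
    have "fst (L ! Suc (s + d)) = fst (L ! (s + d))" using nov Suc.prems by simp
    with lp_step[OF L lt] have "L ! Suc (s + d) = Ep (L ! (s + d))" by (auto simp: Np_def)
    with IH show ?case by (simp add: Ep_def)
  qed
qed

lemma hjoin_step:
  assumes L: "lattice_path L" and sa: "s \<le> a" "a < b" "b \<le> length L"
    and nov: "\<forall>n. s \<le> n \<longrightarrow> n < a \<longrightarrow> fst (L ! Suc n) = fst (L ! n)"
  shows "hjoin (take (Suc s) L) (take (b - a) (drop a L) # Ys) = hjoin (take b L) Ys"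
proof -
  define Y where "Y = take (b - a) (drop a L)"
  have al: "a < length L" using sa by simp
  have gap: "\<forall>d. s + d \<le> a \<longrightarrow> L ! (s + d) = (fst (L ! s), snd (L ! s) + int d)"
    using horiz_gap[OF L sa(1) al nov] .
  have La: "L ! a = (fst (L ! s), snd (L ! s) + int (a - s))" using gap[rule_format, of "a - s"] sa by simp
  have lt: "length (take (Suc s) L) = Suc s" using sa by simp
  have acc: "take (Suc s) L \<noteq> []" "last (take (Suc s) L) = L ! s"
  proof -
    show "take (Suc s) L \<noteq> []" using lt by auto
    then have "last (take (Suc s) L) = take (Suc s) L ! s" using lt by (simp add: last_conv_nth)
    then show "last (take (Suc s) L) = L ! s" by simp
  qed
  have Yne: "Y \<noteq> []" "hd Y = L ! a" using sa by (auto simp: Y_def hd_drop_conv_nth)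
  have cond: "fst (last (take (Suc s) L)) = fst (hd Y) \<and> snd (last (take (Suc s) L)) \<le> snd (hd Y)"
    using acc Yne La by simp
  have "take (Suc s) L @ map (\<lambda>j. (fst (L ! s), j)) [snd (L ! s) + 1 .. snd (L ! a) - 1]
          @ (if L ! s = L ! a then tl Y else Y) = take b L"
  proof (cases "a = s")
    case True
    then have "[snd (L ! s) + 1 .. snd (L ! a) - 1] = []" by simp
    moreover have "tl Y = take (b - Suc s) (drop (Suc s) L)" using True by (simp add: Y_def drop_Suc tl_take tl_drop)
    moreover have "take (Suc s) L @ take (b - Suc s) (drop (Suc s) L) = take b L"
      using True sa by (metis Suc_leI le_add_diff_inverse take_add)
    ultimately show ?thesis using True by simp
  next
    case False
    then have sa': "s < a" using sa by simp
    have neq: "L ! s \<noteq> L ! a" using La sa' by (auto simp: prod_eq_iff)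
    have seg: "map (\<lambda>j. (fst (L ! s), j)) [snd (L ! s) + 1 .. snd (L ! a) - 1] = take (a - Suc s) (drop (Suc s) L)"
    proof (rule nth_equalityI)
      show "length (map (\<lambda>j. (fst (L ! s), j)) [snd (L ! s) + 1 .. snd (L ! a) - 1]) = length (take (a - Suc s) (drop (Suc s) L))"
        using La sa' sa by simp
      fix i assume "i < length (map (\<lambda>j. (fst (L ! s), j)) [snd (L ! s) + 1 .. snd (L ! a) - 1])"
      then have i: "i < a - Suc s" using La sa' by simp
      then have "s + Suc i \<le> a" by simp
      from gap[rule_format, OF this] have "L ! (s + Suc i) = (fst (L ! s), snd (L ! s) + int (Suc i))" .
      then show "map (\<lambda>j. (fst (L ! s), j)) [snd (L ! s) + 1 .. snd (L ! a) - 1] ! i = take (a - Suc s) (drop (Suc s) L) ! i"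
        using i La sa by (simp add: add.commute)
    qed
    have "take (Suc s) L @ take (a - Suc s) (drop (Suc s) L) = take a L"
      using sa' by (metis Suc_leI le_add_diff_inverse take_add)
    moreover have "take a L @ Y = take b L" using sa by (metis Y_def le_add_diff_inverse less_imp_le take_add)
    ultimately show ?thesis using seg neq by (metis append.assoc)
  qed
  then show ?thesis using acc Yne cond by (simp add: Y_def[symmetric] Let_def)
qed

lemma hjoin_core:
  assumes L: "lattice_path L" and s: "s < length L"
    and blocks: "\<forall>Y\<in>set Ys. is_block L Y"
    and sorted: "sorted_wrt (\<lambda>Y Y'. \<forall>z\<in>set Y. \<forall>z'\<in>set Y'. lvl z \<le> lvl z') Ys"
    and after: "\<forall>Y\<in>set Ys. \<forall>z\<in>set Y. lvl (L ! s) \<le> lvl z"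
    and cover: "\<forall>n. s \<le> n \<longrightarrow> Suc n < length L \<longrightarrow> fst (L ! Suc n) \<noteq> fst (L ! n) \<longrightarrow>
                   (\<exists>Y\<in>set Ys. L ! n \<in> set Y \<and> L ! Suc n \<in> set Y)"
  shows "hjoin (take (Suc s) L) (Ys @ [[last L]]) = Some L"
  using s after cover blocks sorted
proof (induction Ys arbitrary: s)
  case Nil
  have ne: "L \<noteq> []" using lp_nonempty[OF L] .
  have "[last L] = take (length L - (length L - 1)) (drop (length L - 1) L)"
    using ne by (cases L rule: rev_cases) auto
  moreover have "hjoin (take (Suc s) L) (take (length L - (length L - 1)) (drop (length L - 1) L) # []) = hjoin (take (length L) L) []"
    by (rule hjoin_step[OF L]) (use Nil ne in auto)
  ultimately show ?case by simp
next
  case (Cons Y Ys)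
  obtain a b where ab: "a < b" "b \<le> length L" "Y = take (b - a) (drop a L)"
    using Cons.prems(4) by (auto simp: is_block_def)
  have hdY: "L ! a \<in> set Y"
  proof -
    have "take (b - a) (drop a L) ! 0 = L ! a" using ab by simp
    moreover have "0 < length (take (b - a) (drop a L))" using ab by simp
    ultimately show ?thesis using ab(3) by (metis nth_mem)
  qed
  have lastY: "L ! (b - 1) \<in> set Y"
  proof -
    have "take (b - a) (drop a L) ! (b - 1 - a) = L ! (b - 1)" using ab by simp
    moreover have "b - 1 - a < length (take (b - a) (drop a L))" using ab by simp
    ultimately show ?thesis using ab(3) by (metis nth_mem)
  qed
  have memY: "z \<in> set Y \<Longrightarrow> \<exists>n. a \<le> n \<and> n < b \<and> L ! n = z" for z
  proof -
    assume "z \<in> set Y"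
    then obtain i where "i < length Y" "Y ! i = z" by (auto simp: in_set_conv_nth)
    then show ?thesis using ab by (intro exI[of _ "a + i"]) auto
  qed
  have lvlL: "lvl (L ! n) = lvl (L ! 0) + int n" if "n < length L" for n using lp_lvl[OF L that] .
  have sa: "s \<le> a"
  proof -
    have "lvl (L ! s) \<le> lvl (L ! a)" using Cons.prems(2) hdY by simp
    then show ?thesis using lvlL[OF Cons.prems(1)] lvlL[of a] ab by simp
  qed
  have nov: "\<forall>n. s \<le> n \<longrightarrow> n < a \<longrightarrow> fst (L ! Suc n) = fst (L ! n)"
  proof (intro allI impI, rule ccontr)
    fix n assume n: "s \<le> n" "n < a" "fst (L ! Suc n) \<noteq> fst (L ! n)"
    have "Suc n < length L" using n ab by simp
    with Cons.prems(3) n obtain Y' where Y': "Y' \<in> set (Y # Ys)" "L ! n \<in> set Y'" by blast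
    have lvn: "lvl (L ! n) < lvl (L ! a)" using lvlL[of n] lvlL[of a] n ab by simp
    show False
    proof (cases "Y' = Y")
      case True
      then obtain k where "a \<le> k" "k < b" "L ! k = L ! n" using memY Y' by blast
      then show False using lvlL[of k] lvlL[of n] n ab by simp
    next
      case False
      then have "Y' \<in> set Ys" using Y' by simp
      with Cons.prems(5) hdY Y' have "lvl (L ! a) \<le> lvl (L ! n)" by simp
      with lvn show False by simp
    qed
  qed
  have step: "hjoin (take (Suc s) L) (Y # (Ys @ [[last L]])) = hjoin (take b L) (Ys @ [[last L]])"
    using hjoin_step[OF L sa ab(1,2) nov] ab(3) by simp
  have b1: "b - 1 < length L" using ab by simp
  have IH: "hjoin (take (Suc (b - 1)) L) (Ys @ [[last L]]) = Some L"
  proof (rule Cons.IH[OF b1])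
    show "\<forall>Y\<in>set Ys. \<forall>z\<in>set Y. lvl (L ! (b - 1)) \<le> lvl z" using Cons.prems(5) lastY by simp
    show "\<forall>n. b - 1 \<le> n \<longrightarrow> Suc n < length L \<longrightarrow> fst (L ! Suc n) \<noteq> fst (L ! n) \<longrightarrow>
              (\<exists>Y\<in>set Ys. L ! n \<in> set Y \<and> L ! Suc n \<in> set Y)"
    proof (intro allI impI)
      fix n assume n: "b - 1 \<le> n" "Suc n < length L" "fst (L ! Suc n) \<noteq> fst (L ! n)"
      have "s \<le> n" using sa ab n by simp
      with Cons.prems(3) n obtain Y' where Y': "Y' \<in> set (Y # Ys)" "L ! n \<in> set Y'" "L ! Suc n \<in> set Y'" by blast
      have "Y' \<noteq> Y"
      proof
        assume "Y' = Y"
        then obtain k where "a \<le> k" "k < b" "L ! k = L ! Suc n" using memY Y' by blast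
        with lvlL[of k] lvlL[of "Suc n"] n ab show False by simp
      qed
      with Y' show "\<exists>Y\<in>set Ys. L ! n \<in> set Y \<and> L ! Suc n \<in> set Y" by auto
    qed
    show "\<forall>Y\<in>set Ys. is_block L Y" using Cons.prems(4) by simp
    show "sorted_wrt (\<lambda>Y Y'. \<forall>z\<in>set Y. \<forall>z'\<in>set Y'. lvl z \<le> lvl z') Ys" using Cons.prems(5) by simp
  qed
  have "Suc (b - 1) = b" using ab by simp
  with step IH show ?case by simp
qed

lemma hjoin_main:
  assumes L: "lattice_path L"
    and blocks: "\<forall>Y\<in>set Ys. is_block L Y"
    and sorted: "sorted_wrt (\<lambda>Y Y'. \<forall>z\<in>set Y. \<forall>z'\<in>set Y'. lvl z \<le> lvl z') Ys"
    and cover: "\<forall>n. Suc n < length L \<longrightarrow> fst (L ! Suc n) \<noteq> fst (L ! n) \<longrightarrow>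
                   (\<exists>Y\<in>set Ys. L ! n \<in> set Y \<and> L ! Suc n \<in> set Y)"
  shows "hjoin [hd L] (Ys @ [[last L]]) = Some L"
proof -
  have ne: "L \<noteq> []" using lp_nonempty[OF L] .
  have "take (Suc 0) L = [hd L]" using ne by (cases L) auto
  moreover have "hjoin (take (Suc 0) L) (Ys @ [[last L]]) = Some L"
  proof (rule hjoin_core[OF L _ blocks sorted])
    show "0 < length L" using ne by simp
    show "\<forall>Y\<in>set Ys. \<forall>z\<in>set Y. lvl (L ! 0) \<le> lvl z"
    proof (intro ballI)
      fix Y z assume "Y \<in> set Ys" "z \<in> set Y"
      then obtain a b where "a < b" "b \<le> length L" "Y = take (b - a) (drop a L)" using blocks by (auto simp: is_block_def)
      with \<open>z \<in> set Y\<close> have "z \<in> set L" by (meson in_set_dropD in_set_takeD)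
      then show "lvl (L ! 0) \<le> lvl z" using lp_lvl_hd[OF L] ne by (simp add: hd_conv_nth)
    qed
    show "\<forall>n. 0 \<le> n \<longrightarrow> Suc n < length L \<longrightarrow> fst (L ! Suc n) \<noteq> fst (L ! n) \<longrightarrow>
                   (\<exists>Y\<in>set Ys. L ! n \<in> set Y \<and> L ! Suc n \<in> set Y)" using cover by simp
  qed
  ultimately show ?thesis by simp
qed


definition sw :: "pt \<Rightarrow> pt" where "sw z = (snd z, fst z)"
lemma sw_sw[simp]: "sw (sw z) = z" by (simp add: sw_def)
lemma sw_inj[simp]: "sw z = sw w \<longleftrightarrow> z = w" by (auto simp: sw_def prod_eq_iff)
lemma sw_fst[simp]: "fst (sw z) = snd z" and sw_snd[simp]: "snd (sw z) = fst z" by (simp_all add: sw_def)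
lemma sw_comp[simp]: "sw \<circ> sw = id" by (rule ext) simp
lemma map_sw_sw[simp]: "map sw (map sw xs) = xs"
proof -
  have "sw \<circ> sw = id" by (rule ext) simp
  then show ?thesis by (simp add: map.comp[symmetric])
qed

lemma vjoin_sw: "vjoin acc Ys = map_option (map sw) (hjoin (map sw acc) (map (map sw) Ys))"
proof (induction acc Ys rule: vjoin.induct)
  case (1 acc) then show ?case by simp
next
  case (2 acc Y Ys)
  show ?case
  proof (cases "acc \<noteq> [] \<and> Y \<noteq> [] \<and> snd (last acc) = snd (hd Y) \<and> fst (last acc) \<le> fst (hd Y)")
    case c: True
    have lm: "last (map sw acc) = sw (last acc)" "hd (map sw Y) = sw (hd Y)" using c by (simp_all add: last_map hd_map)
    have eq: "map sw (acc @ map (\<lambda>i. (i, snd (last acc))) [fst (last acc) + 1 .. fst (hd Y) - 1]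
                @ (if last acc = hd Y then tl Y else Y))
          = map sw acc @ map (\<lambda>j. (fst (last (map sw acc)), j)) [snd (last (map sw acc)) + 1 .. snd (hd (map sw Y)) - 1]
                @ (if last (map sw acc) = hd (map sw Y) then tl (map sw Y) else map sw Y)"
    proof -
      have i: "(if last (map sw acc) = hd (map sw Y) then tl (map sw Y) else map sw Y) = map sw (if last acc = hd Y then tl Y else Y)"
        using lm by (simp add: map_tl)
      have m: "map sw (map (\<lambda>i. (i, snd (last acc))) [fst (last acc) + 1 .. fst (hd Y) - 1])
          = map (\<lambda>j. (fst (last (map sw acc)), j)) [snd (last (map sw acc)) + 1 .. snd (hd (map sw Y)) - 1]"
        using lm by (simp add: sw_def)
      show ?thesis using i m by simp
    qed
    define A where "A = acc @ map (\<lambda>i. (i, snd (last acc))) [fst (last acc) + 1 .. fst (hd Y) - 1] @ (if last acc = hd Y then tl Y else Y)"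
    have L: "vjoin acc (Y # Ys) = vjoin A Ys" by (subst vjoin.simps, subst if_P[OF c]) (simp only: A_def)
    have hcond: "map sw acc \<noteq> [] \<and> map sw Y \<noteq> [] \<and> fst (last (map sw acc)) = fst (hd (map sw Y)) \<and> snd (last (map sw acc)) \<le> snd (hd (map sw Y))"
      using c lm by simp
    have R: "hjoin (map sw acc) (map (map sw) (Y # Ys)) = hjoin (map sw A) (map (map sw) Ys)"
      by (subst list.map(2), subst hjoin.simps, subst if_P[OF hcond]) (simp only: eq[folded A_def, symmetric])
    have IH: "vjoin A Ys = map_option (map sw) (hjoin (map sw A) (map (map sw) Ys))"
      using "2.IH"[OF c] by (simp only: A_def)
    show ?thesis using L R IH by simp
  next
    case nc: False
    then have hnc: "\<not> (map sw acc \<noteq> [] \<and> map sw Y \<noteq> [] \<and> fst (last (map sw acc)) = fst (hd (map sw Y)) \<and> snd (last (map sw acc)) \<le> snd (hd (map sw Y)))"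
      by (auto simp: last_map hd_map)
    have "vjoin acc (Y # Ys) = None" by (subst vjoin.simps, subst if_not_P[OF nc]) (rule refl)
    moreover have "hjoin (map sw acc) (map (map sw) (Y # Ys)) = None"
      by (subst list.map(2), subst hjoin.simps, subst if_not_P[OF hnc]) (rule refl)
    ultimately show ?thesis by simp
  qed
qed

lemma hjoin_inv:
  assumes "hjoin acc Ys = Some R" "successively Rel acc" "\<forall>Y\<in>set Ys. successively Rel Y"
    and rowrel: "\<And>x y. fst x = fst y \<Longrightarrow> Rel x y"
  shows "successively Rel R"
  using assms(1-3)
proof (induction acc Ys rule: hjoin.induct)
  case (1 acc) then show ?case by simp
next
  case (2 acc Y Ys)
  define c where "c = (acc \<noteq> [] \<and> Y \<noteq> [] \<and> fst (last acc) = fst (hd Y) \<and> snd (last acc) \<le> snd (hd Y))"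
  have c: c using "2.prems"(1) by (simp add: c_def split: if_splits)
  define seg where "seg = map (\<lambda>j. (fst (last acc), j)) [snd (last acc) + 1 .. snd (hd Y) - 1]"
  define Y' where "Y' = (if last acc = hd Y then tl Y else Y)"
  have rec: "hjoin (acc @ seg @ Y') Ys = Some R" using "2.prems"(1) c by (simp add: c_def seg_def Y'_def)
  have sY: "successively Rel Y" using "2.prems"(3) by simp
  have sseg: "successively Rel seg" unfolding seg_def successively_map
    by (rule successively_mono[OF _ ]) (auto intro: rowrel simp: successively_conv_nth)
  have sY': "successively Rel Y'" using sY by (cases Y) (auto simp: Y'_def successively_Cons)
  have j1: "acc = [] \<or> seg = [] \<or> Rel (last acc) (hd seg)"
  proof (cases "seg = []")
    case False
    then have "fst (hd seg) = fst (last acc)" by (simp add: seg_def hd_map)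
    then show ?thesis by (simp add: rowrel)
  qed simp
  have j2: "seg = [] \<or> Y' = [] \<or> Rel (last seg) (hd Y')"
  proof (cases "seg = [] \<or> Y' = []")
    case False
    then have ne: "seg \<noteq> []" "Y' \<noteq> []" by auto
    have "last acc \<noteq> hd Y"
    proof
      assume "last acc = hd Y"
      then have "[snd (last acc) + 1 .. snd (hd Y) - 1] = []" by simp
      with ne show False by (simp add: seg_def)
    qed
    then have "Y' = Y" by (simp add: Y'_def)
    have "fst (last seg) = fst (last acc)" using ne by (simp add: seg_def last_map)
    then have "fst (last seg) = fst (hd Y')" using c \<open>Y' = Y\<close> by (simp add: c_def)
    then show ?thesis by (simp add: rowrel)
  qed blast
  have j3: "acc = [] \<or> Y' = [] \<or> Rel (last acc) (hd Y')"
  proof (cases "acc = [] \<or> Y' = []")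
    case False
    show ?thesis
    proof (cases "last acc = hd Y")
      case True
      then have "Y' = tl Y" by (simp add: Y'_def)
      with False obtain y1 y2 ys where "Y = y1 # y2 # ys" by (cases Y; cases "tl Y") auto
      with sY True \<open>Y' = tl Y\<close> show ?thesis by (simp add: successively_Cons)
    next
      case F: False
      then have "Y' = Y" by (simp add: Y'_def)
      then show ?thesis using c by (simp add: c_def rowrel)
    qed
  qed blast
  have s2: "successively Rel (seg @ Y')" using sseg sY' j2 by (simp add: successively_append_iff)
  have j4: "acc = [] \<or> seg @ Y' = [] \<or> Rel (last acc) (hd (seg @ Y'))"
    using j1 j3 by (cases seg) auto
  have sacc: "successively Rel (acc @ seg @ Y')"
    using "2.prems"(2) s2 j4 by (simp add: successively_append_iff)
  have c': "acc \<noteq> [] \<and> Y \<noteq> [] \<and> fst (last acc) = fst (hd Y) \<and> snd (last acc) \<le> snd (hd Y)" using c by (simp add: c_def)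
  have "\<forall>Y\<in>set Ys. successively Rel Y" using "2.prems"(3) by simp
  from "2.IH"[OF c' rec[unfolded seg_def Y'_def] sacc[unfolded seg_def Y'_def] this] show ?case .
qed


lemma lp_map:
  assumes "lattice_path P" "\<And>z. f (Ep z) = Ep (f z)" "\<And>z. f (Np z) = Np (f z)"
  shows "lattice_path (map f P)"
proof -
  have "P \<noteq> []" using lp_nonempty[OF assms(1)] .
  moreover have "map f P ! Suc n = Ep (map f P ! n) \<or> map f P ! Suc n = Np (map f P ! n)"
    if "Suc n < length (map f P)" for n
  proof -
    have "Suc n < length P" using that by simp
    from lp_step[OF assms(1) this] have "f (P ! Suc n) = Ep (f (P ! n)) \<or> f (P ! Suc n) = Np (f (P ! n))"
      using assms(2,3) by metis
    then show ?thesis using \<open>Suc n < length P\<close> by simp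
  qed
  ultimately show ?thesis unfolding lattice_path_def Ep_def Np_def by auto
qed

lemma lp_rev_sw:
  assumes "lattice_path V"
  shows "lattice_path (map sw (rev V))"
proof -
  have ne: "V \<noteq> []" using lp_nonempty[OF assms] .
  have "map sw (rev V) ! Suc n = Ep (map sw (rev V) ! n) \<or> map sw (rev V) ! Suc n = Np (map sw (rev V) ! n)"
    if n: "Suc n < length (map sw (rev V))" for n
  proof -
    define k where "k = length V - Suc (Suc n)"
    have k: "Suc k < length V" "length V - Suc n = Suc k" using n by (auto simp: k_def)
    have e1: "map sw (rev V) ! n = sw (V ! Suc k)" using n k by (simp add: rev_nth)
    have e2: "map sw (rev V) ! Suc n = sw (V ! k)" using n k by (simp add: rev_nth k_def)
    from lp_step[OF assms k(1)] show ?thesis unfolding e1 e2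
      by (auto simp: Ep_def Np_def sw_def)
  qed
  moreover have "map sw (rev V) \<noteq> []" using ne by simp
  ultimately show ?thesis unfolding lattice_path_def Ep_def Np_def by blast
qed

lemma filter_is_block:
  assumes L: "lattice_path L"
    and conv: "\<And>z1 z2 w. z1 \<in> set L \<Longrightarrow> z2 \<in> set L \<Longrightarrow> w \<in> set L \<Longrightarrow> f z1 \<Longrightarrow> f z2 \<Longrightarrow>
                 lvl z1 \<le> lvl w \<Longrightarrow> lvl w \<le> lvl z2 \<Longrightarrow> f w"
    and ex: "\<exists>z\<in>set L. f z"
  shows "\<exists>a b. a < b \<and> b \<le> length L \<and> filter f L = take (b - a) (drop a L) \<and>
    L = take a L @ filter f L @ drop b L"
proof -
  have lv: "lvl (L ! n) = lvl (L ! 0) + int n" if "n < length L" for n using lp_lvl[OF L that] .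
  have c: "f (L ! n)" if "n1 \<le> n" "n \<le> n2" "n2 < length L" "f (L ! n1)" "f (L ! n2)" for n1 n n2
  proof -
    have l: "n1 < length L" "n < length L" using that by simp_all
    have "lvl (L ! n1) \<le> lvl (L ! n)" "lvl (L ! n) \<le> lvl (L ! n2)"
      using lv[OF l(1)] lv[OF l(2)] lv[OF that(3)] that(1,2) by linarith+
    moreover have "L ! n1 \<in> set L" "L ! n2 \<in> set L" "L ! n \<in> set L" using l that(3) by simp_all
    ultimately show ?thesis using conv that(4,5) by blast
  qed
  from ex obtain n where "n < length L" "f (L ! n)" by (auto simp: in_set_conv_nth)
  then have exn: "\<exists>n<length L. f (L ! n)" by blast
  have "\<exists>a b. a < b \<and> b \<le> length L \<and> (\<forall>n<length L. f (L ! n) \<longleftrightarrow> a \<le> n \<and> n < b)"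
  proof (rule convex_interval[of L f, OF c exn])
    fix a b assume "a < b" "b \<le> length L" "\<And>n. n < length L \<Longrightarrow> f (L ! n) \<longleftrightarrow> a \<le> n \<and> n < b"
    then show ?thesis by blast
  qed
  then obtain a b where ab: "a < b" "b \<le> length L" "\<forall>n<length L. f (L ! n) \<longleftrightarrow> a \<le> n \<and> n < b"
    by blast
  have "a \<le> b" using ab(1) by simp
  note fb = filter_block[of a b L f, OF this ab(2) ab(3)[rule_format]]
  from ab(1,2) fb show ?thesis by blast
qed

lemma filter_is_block':
  assumes L: "lattice_path L"
    and conv: "\<And>z1 z2 w. z1 \<in> set L \<Longrightarrow> z2 \<in> set L \<Longrightarrow> w \<in> set L \<Longrightarrow> f z1 \<Longrightarrow> f z2 \<Longrightarrow>
                 lvl z1 \<le> lvl w \<Longrightarrow> lvl w \<le> lvl z2 \<Longrightarrow> f w"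
    and ex: "\<exists>z\<in>set L. f z"
  shows "is_block L (filter f L)" "\<exists>xs ys. L = xs @ filter f L @ ys" "lattice_path (filter f L)"
    "filter f L \<noteq> []"
proof -
  from filter_is_block[OF L conv ex] obtain a where "\<exists>b. a < b \<and> b \<le> length L \<and> filter f L = take (b - a) (drop a L) \<and>
    L = take a L @ filter f L @ drop b L" by (rule exE)
  then obtain b where ab0: "a < b \<and> b \<le> length L \<and> filter f L = take (b - a) (drop a L) \<and>
    L = take a L @ filter f L @ drop b L" by (rule exE)
  have ab: "a < b" "b \<le> length L" "filter f L = take (b - a) (drop a L)"
    "L = take a L @ filter f L @ drop b L" using ab0 by (rule conjunct1 conjunct2[THEN conjunct1]
      conjunct2[THEN conjunct2, THEN conjunct1] conjunct2[THEN conjunct2, THEN conjunct2])+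
  show "is_block L (filter f L)" unfolding is_block_def using ab(1,2,3) by blast
  show "\<exists>xs ys. L = xs @ filter f L @ ys" using ab(4) by (intro exI)
  show "lattice_path (filter f L)" unfolding ab(3) using lp_block[OF L ab(1,2)] .
  show "filter f L \<noteq> []" using ex by (simp add: filter_empty_conv)
qed

lemma hjoin_main':
  assumes L: "lattice_path L"
    and blocks: "\<forall>Y\<in>set Ys. is_block L Y"
    and sorted: "sorted_wrt (\<lambda>Y Y'. \<forall>z\<in>set Y. \<forall>z'\<in>set Y'. lvl z \<le> lvl z') Ys"
    and cover: "\<And>z. z \<in> set L \<Longrightarrow> Np z \<in> set L \<Longrightarrow> \<exists>Y\<in>set Ys. z \<in> set Y \<and> Np z \<in> set Y"
  shows "hjoin [hd L] (Ys @ [[last L]]) = Some L"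
proof (rule hjoin_main[OF L blocks sorted], intro allI impI)
  fix n assume n: "Suc n < length L" "fst (L ! Suc n) \<noteq> fst (L ! n)"
  then have "L ! Suc n = Np (L ! n)" using lp_step[OF L n(1)] by (auto simp: Ep_def)
  moreover have "L ! n \<in> set L" "L ! Suc n \<in> set L" using n by simp_all
  ultimately show "\<exists>Y\<in>set Ys. L ! n \<in> set Y \<and> L ! Suc n \<in> set Y" using cover by metis
qed


definition off :: "(nat \<Rightarrow> 'v) \<Rightarrow> (nat \<Rightarrow> nat) \<Rightarrow> nat \<Rightarrow> nat" where
  "off c w k = (\<Sum>k'\<in>{k'\<in>{1..<k}. c k' = c k}. w k')"

definition tot :: "nat \<Rightarrow> (nat \<Rightarrow> 'v) \<Rightarrow> (nat \<Rightarrow> nat) \<Rightarrow> 'v \<Rightarrow> nat" where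
  "tot r c w x = (\<Sum>k'\<in>{k'\<in>{1..r}. c k' = x}. w k')"

lemma off_bound:
  assumes "1 \<le> k" "k \<le> r"
  shows "off c w k + w k \<le> tot r c w (c k)"
proof -
  have "insert k {k'\<in>{1..<k}. c k' = c k} \<subseteq> {k'\<in>{1..r}. c k' = c k}" using assms by auto
  moreover have "k \<notin> {k'\<in>{1..<k}. c k' = c k}" by simp
  ultimately have "(\<Sum>k'\<in>insert k {k'\<in>{1..<k}. c k' = c k}. w k') \<le> (\<Sum>k'\<in>{k'\<in>{1..r}. c k' = c k}. w k')"
    by (intro sum_mono2) auto
  then show ?thesis using \<open>k \<notin> _\<close> by (simp add: off_def tot_def add.commute)
qed

lemma off_mono:
  assumes "1 \<le> k" "k < k'" "c k = c k'"
  shows "off c w k + w k \<le> off c w k'"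
proof -
  have "insert k {k''\<in>{1..<k}. c k'' = c k} \<subseteq> {k''\<in>{1..<k'}. c k'' = c k'}" using assms by auto
  moreover have "k \<notin> {k''\<in>{1..<k}. c k'' = c k}" by simp
  ultimately have "(\<Sum>k''\<in>insert k {k''\<in>{1..<k}. c k'' = c k}. w k'') \<le> (\<Sum>k''\<in>{k''\<in>{1..<k'}. c k'' = c k'}. w k'')"
    by (intro sum_mono2) auto
  then show ?thesis using \<open>k \<notin> _\<close> by (simp add: off_def add.commute)
qed

lemma off_cover:
  assumes "1 \<le> j" "j \<le> tot r c w x"
  shows "\<exists>k\<in>{1..r}. c k = x \<and> off c w k < j \<and> j \<le> off c w k + w k"
  using assms(2)
proof (induction r)
  case 0 then show ?case using assms(1) by (simp add: tot_def)
next
  case (Suc r)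
  have split: "{k'\<in>{1..Suc r}. c k' = x} = {k'\<in>{1..r}. c k' = x} \<union> (if c (Suc r) = x then {Suc r} else {})"
    by (auto simp: le_Suc_eq)
  have tS: "tot (Suc r) c w x = tot r c w x + (if c (Suc r) = x then w (Suc r) else 0)"
    unfolding tot_def split by (auto simp: sum.union_disjoint)
  show ?case
  proof (cases "j \<le> tot r c w x")
    case True then show ?thesis using Suc.IH by force
  next
    case False
    then have cx: "c (Suc r) = x" using Suc.prems tS by (auto split: if_splits)
    have "{k'\<in>{1..<Suc r}. c k' = c (Suc r)} = {k'\<in>{1..r}. c k' = x}" using cx by auto
    then have "off c w (Suc r) = tot r c w x" by (simp add: off_def tot_def)
    then show ?thesis using False Suc.prems tS cx by (intro bexI[of _ "Suc r"]) auto
  qed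
qed

lemma restr_col:
  assumes P: "lattice_path P" and hd: "snd (hd P) = 1" and lst: "snd (last P) = B"
    and c0: "0 \<le> c0" "c0 + N \<le> B" "1 \<le> N"
  defines "R \<equiv> map (\<lambda>x. (fst x, snd x - c0)) (filter (\<lambda>x. c0 < snd x \<and> snd x \<le> c0 + N) P)"
  shows "lattice_path R" "snd (hd R) = 1" "snd (last R) = N"
    "\<And>x. x \<in> set R \<longleftrightarrow> (fst x, c0 + snd x) \<in> set P \<and> 1 \<le> snd x \<and> snd x \<le> N"
proof -
  define f where "f x \<longleftrightarrow> c0 < snd x \<and> snd x \<le> c0 + N" for x :: pt
  define F where "F = filter f P"
  have conv: "f w" if "z1 \<in> set P" "z2 \<in> set P" "w \<in> set P" "f z1" "f z2" "lvl z1 \<le> lvl w" "lvl w \<le> lvl z2" for z1 z2 w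
    using lp_order[OF P that(1) that(3) that(6)] lp_order[OF P that(3) that(2) that(7)] that(4,5) by (auto simp: f_def)
  have "\<exists>w\<in>set P. snd w = c0 + 1 \<and> lvl (hd P) \<le> lvl w"
    using col_fwd[OF P lp_hd_in[OF P], of "c0 + 1"] hd lst c0 by simp
  then obtain w1 where w1: "w1 \<in> set P" "snd w1 = c0 + 1" by blast
  have "f w1" using w1 c0 by (simp add: f_def)
  then have ex: "\<exists>z\<in>set P. f z" using w1(1) by blast
  have F: "lattice_path F" "F \<noteq> []" using filter_is_block'[OF P conv ex] by (simp_all add: F_def)
  have Fm: "z \<in> set F \<longleftrightarrow> z \<in> set P \<and> f z" for z by (simp add: F_def)
  have "\<exists>w\<in>set P. snd w = c0 + N \<and> lvl (hd P) \<le> lvl w"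
    using col_fwd[OF P lp_hd_in[OF P], of "c0 + N"] hd lst c0 by simp
  then obtain w2 where w2: "w2 \<in> set P" "snd w2 = c0 + N" by blast
  have w1F: "w1 \<in> set F" and w2F: "w2 \<in> set F" using w1 w2 c0 Fm by (auto simp: f_def)
  have hF: "snd (hd F) = c0 + 1"
  proof -
    have "f (hd F)" using lp_hd_in[OF F(1)] Fm by blast
    moreover have "snd (hd F) \<le> snd w1" using lp_order[OF F(1) lp_hd_in[OF F(1)] w1F lp_lvl_hd[OF F(1) w1F]] by simp
    ultimately show ?thesis using w1 by (simp add: f_def)
  qed
  have lF: "snd (last F) = c0 + N"
  proof -
    have "f (last F)" using lp_last_in[OF F(1)] Fm by blast
    moreover have "snd w2 \<le> snd (last F)" using lp_order[OF F(1) w2F lp_last_in[OF F(1)] lp_lvl_last[OF F(1) w2F]] by simp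
    ultimately show ?thesis using w2 by (simp add: f_def)
  qed
  have fe: "f = (\<lambda>x. c0 < snd x \<and> snd x \<le> c0 + N)" by (rule ext) (simp add: f_def)
  have RF: "R = map (\<lambda>x. (fst x, snd x - c0)) F" by (simp add: R_def F_def fe)
  show "lattice_path R" unfolding RF by (rule lp_map[OF F(1)]) (simp_all add: Ep_def Np_def)
  show "snd (hd R) = 1" using hF F(2) by (simp add: RF hd_map)
  show "snd (last R) = N" using lF F(2) by (simp add: RF last_map)
  fix x
  show "x \<in> set R \<longleftrightarrow> (fst x, c0 + snd x) \<in> set P \<and> 1 \<le> snd x \<and> snd x \<le> N"
  proof
    assume "x \<in> set R"
    then obtain y where "y \<in> set F" "x = (fst y, snd y - c0)" by (auto simp: RF)
    then show "(fst x, c0 + snd x) \<in> set P \<and> 1 \<le> snd x \<and> snd x \<le> N" using Fm by (auto simp: f_def)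
  next
    assume a: "(fst x, c0 + snd x) \<in> set P \<and> 1 \<le> snd x \<and> snd x \<le> N"
    then have "(fst x, c0 + snd x) \<in> set F" using Fm by (auto simp: f_def)
    moreover have "x = (fst (fst x, c0 + snd x), snd (fst x, c0 + snd x) - c0)" by simp
    ultimately show "x \<in> set R" unfolding RF by (metis (no_types, lifting) image_eqI set_map)
  qed
qed

lemma restr_row:
  assumes P: "lattice_path P" and hd: "fst (hd P) = A" and lst: "fst (last P) = 1"
    and r0: "0 \<le> r0" "r0 + M \<le> A" "1 \<le> M"
  defines "R \<equiv> map (\<lambda>x. (fst x - r0, snd x)) (filter (\<lambda>x. r0 < fst x \<and> fst x \<le> r0 + M) P)"
  shows "lattice_path R" "fst (hd R) = M" "fst (last R) = 1"
    "\<And>x. x \<in> set R \<longleftrightarrow> (r0 + fst x, snd x) \<in> set P \<and> 1 \<le> fst x \<and> fst x \<le> M"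
proof -
  define f where "f x \<longleftrightarrow> r0 < fst x \<and> fst x \<le> r0 + M" for x :: pt
  define F where "F = filter f P"
  have conv: "f w" if "z1 \<in> set P" "z2 \<in> set P" "w \<in> set P" "f z1" "f z2" "lvl z1 \<le> lvl w" "lvl w \<le> lvl z2" for z1 z2 w
    using lp_order[OF P that(1) that(3) that(6)] lp_order[OF P that(3) that(2) that(7)] that(4,5) by (auto simp: f_def)
  have "\<exists>w\<in>set P. fst w = r0 + M \<and> lvl (hd P) \<le> lvl w"
    using row_fwd[OF P lp_hd_in[OF P], of "r0 + M"] hd lst r0 by simp
  then obtain w1 where w1: "w1 \<in> set P" "fst w1 = r0 + M" by blast
  have "f w1" using w1 r0 by (simp add: f_def)
  then have ex: "\<exists>z\<in>set P. f z" using w1(1) by blast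
  have F: "lattice_path F" "F \<noteq> []" using filter_is_block'[OF P conv ex] by (simp_all add: F_def)
  have Fm: "z \<in> set F \<longleftrightarrow> z \<in> set P \<and> f z" for z by (simp add: F_def)
  have "\<exists>w\<in>set P. fst w = r0 + 1 \<and> lvl (hd P) \<le> lvl w"
    using row_fwd[OF P lp_hd_in[OF P], of "r0 + 1"] hd lst r0 by simp
  then obtain w2 where w2: "w2 \<in> set P" "fst w2 = r0 + 1" by blast
  have w1F: "w1 \<in> set F" and w2F: "w2 \<in> set F" using w1 w2 r0 Fm by (auto simp: f_def)
  have hF: "fst (hd F) = r0 + M"
  proof -
    have "f (hd F)" using lp_hd_in[OF F(1)] Fm by blast
    moreover have "fst w1 \<le> fst (hd F)" using lp_order[OF F(1) lp_hd_in[OF F(1)] w1F lp_lvl_hd[OF F(1) w1F]] by simp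
    ultimately show ?thesis using w1 by (simp add: f_def)
  qed
  have lF: "fst (last F) = r0 + 1"
  proof -
    have "f (last F)" using lp_last_in[OF F(1)] Fm by blast
    moreover have "fst (last F) \<le> fst w2" using lp_order[OF F(1) w2F lp_last_in[OF F(1)] lp_lvl_last[OF F(1) w2F]] by simp
    ultimately show ?thesis using w2 by (simp add: f_def)
  qed
  have fe: "f = (\<lambda>x. r0 < fst x \<and> fst x \<le> r0 + M)" by (rule ext) (simp add: f_def)
  have RF: "R = map (\<lambda>x. (fst x - r0, snd x)) F" by (simp add: R_def F_def fe)
  show "lattice_path R" unfolding RF by (rule lp_map[OF F(1)]) (simp_all add: Ep_def Np_def)
  show "fst (hd R) = M" using hF F(2) by (simp add: RF hd_map)
  show "fst (last R) = 1" using lF F(2) by (simp add: RF last_map)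
  fix x
  show "x \<in> set R \<longleftrightarrow> (r0 + fst x, snd x) \<in> set P \<and> 1 \<le> fst x \<and> fst x \<le> M"
  proof
    assume "x \<in> set R"
    then obtain y where "y \<in> set F" "x = (fst y - r0, snd y)" by (auto simp: RF)
    then show "(r0 + fst x, snd x) \<in> set P \<and> 1 \<le> fst x \<and> fst x \<le> M" using Fm by (auto simp: f_def)
  next
    assume a: "(r0 + fst x, snd x) \<in> set P \<and> 1 \<le> fst x \<and> fst x \<le> M"
    then have "(r0 + fst x, snd x) \<in> set F" using Fm by (auto simp: f_def)
    moreover have "x = (fst (r0 + fst x, snd x) - r0, snd (r0 + fst x, snd x))" by simp
    ultimately show "x \<in> set R" unfolding RF by (metis (no_types, lifting) image_eqI set_map)
  qed
qed


locale quiv =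
  fixes Vs Vt :: "'v set" and r :: nat and src tgt :: "nat \<Rightarrow> 'v"
    and m u :: "'v \<Rightarrow> nat" and H V :: "'v \<Rightarrow> nat \<Rightarrow> pt list"
  assumes bip: "Vs \<inter> Vt = {}"
    and arrows: "\<forall>k\<in>{1..r}. src k \<in> Vs \<and> tgt k \<in> Vt"
    and stdT: "\<forall>\<alpha>\<in>Vt. 0 < u \<alpha> \<and> u \<alpha> \<le> min (aT m \<alpha>) (bT r src tgt m \<alpha>) \<and> u \<alpha> \<le> vT r src tgt u \<alpha>"
    and stdS: "\<forall>\<beta>\<in>Vs. 0 < u \<beta> \<and> u \<beta> \<le> min (aS r src tgt m \<beta>) (bS m \<beta>) \<and> u \<beta> \<le> vS r src tgt u \<beta>"
    and rm: "road_map Vs Vt r src tgt m u H V"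
begin

abbreviation cO where "cO k \<equiv> colOff src tgt m k"
abbreviation rO where "rO k \<equiv> rowOff src tgt m k"
abbreviation eT where "eT k \<equiv> embT src tgt m k"
abbreviation eS where "eS k \<equiv> embS src tgt m k"
definition hR where "hR k p = restrT src tgt m k (H (tgt k) p)"
definition vR where "vR k q = restrS src tgt m k (V (src k) q)"
definition Mk where "Mk k = int (m (tgt k))"
definition Nk where "Nk k = int (m (src k))"

lemma cO_off: "cO k = int (off tgt (\<lambda>k. m (src k)) k)" by (simp add: colOff_def off_def)
lemma rO_off: "rO k = int (off src (\<lambda>k. m (tgt k)) k)" by (simp add: rowOff_def off_def)
lemma bT_tot: "bT r src tgt m \<alpha> = tot r tgt (\<lambda>k. m (src k)) \<alpha>" by (simp add: bT_def tot_def)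
lemma aS_tot: "aS r src tgt m \<beta> = tot r src (\<lambda>k. m (tgt k)) \<beta>" by (simp add: aS_def tot_def)

lemma Hf:
  assumes "\<alpha> \<in> Vt" "p \<in> {1..u \<alpha>}"
  shows "lattice_path (H \<alpha> p)" "in_grid (aT m \<alpha>) (bT r src tgt m \<alpha>) (H \<alpha> p)"
    "hd (H \<alpha> p) = (int (aT m \<alpha>) - int (u \<alpha>) + int p, 1)"
    "last (H \<alpha> p) = (int p, int (bT r src tgt m \<alpha>))"
  using rm assms unfolding road_map_def by blast+

lemma Hdisj:
  assumes "\<alpha> \<in> Vt" "p \<in> {1..u \<alpha>}" "p' \<in> {1..u \<alpha>}" "z \<in> set (H \<alpha> p)" "z \<in> set (H \<alpha> p')"
  shows "p = p'"
  using rm assms unfolding road_map_def by blast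

lemma Vf:
  assumes "\<beta> \<in> Vs" "q \<in> {1..u \<beta>}"
  shows "lattice_path (V \<beta> q)" "in_grid (aS r src tgt m \<beta>) (bS m \<beta>) (V \<beta> q)"
    "last (V \<beta> q) = (1, int (bS m \<beta>) - int (u \<beta>) + int q)"
    "hd (V \<beta> q) = (int (aS r src tgt m \<beta>), int q)"
  using rm assms unfolding road_map_def by blast+

lemma Vdisj:
  assumes "\<beta> \<in> Vs" "q \<in> {1..u \<beta>}" "q' \<in> {1..u \<beta>}" "z \<in> set (V \<beta> q)" "z \<in> set (V \<beta> q')"
  shows "q = q'"
  using rm assms unfolding road_map_def by blast

lemma karr: "k \<in> {1..r} \<Longrightarrow> src k \<in> Vs \<and> tgt k \<in> Vt" using arrows by blast

lemma m_pos: assumes "k \<in> {1..r}" shows "1 \<le> Mk k" "1 \<le> Nk k"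
proof -
  have "0 < u (tgt k)" "u (tgt k) \<le> aT m (tgt k)" using stdT karr[OF assms] by auto
  then show "1 \<le> Mk k" by (simp add: Mk_def aT_def)
  have "0 < u (src k)" "u (src k) \<le> bS m (src k)" using stdS karr[OF assms] by auto
  then show "1 \<le> Nk k" by (simp add: Nk_def bS_def)
qed

lemma col_bound: assumes "k \<in> {1..r}" shows "0 \<le> cO k" "cO k + Nk k \<le> int (bT r src tgt m (tgt k))"
proof -
  show "0 \<le> cO k" by (simp add: cO_off)
  have "off tgt (\<lambda>k. m (src k)) k + m (src k) \<le> tot r tgt (\<lambda>k. m (src k)) (tgt k)"
    using off_bound[of k r tgt "\<lambda>k. m (src k)"] assms by simp
  then show "cO k + Nk k \<le> int (bT r src tgt m (tgt k))" by (simp add: cO_off Nk_def bT_tot)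
qed

lemma row_bound: assumes "k \<in> {1..r}" shows "0 \<le> rO k" "rO k + Mk k \<le> int (aS r src tgt m (src k))"
proof -
  show "0 \<le> rO k" by (simp add: rO_off)
  have "off src (\<lambda>k. m (tgt k)) k + m (tgt k) \<le> tot r src (\<lambda>k. m (tgt k)) (src k)"
    using off_bound[of k r src "\<lambda>k. m (tgt k)"] assms by simp
  then show "rO k + Mk k \<le> int (aS r src tgt m (src k))" by (simp add: rO_off Mk_def aS_tot)
qed

lemma col_disj:
  assumes "k \<in> {1..r}" "k' \<in> {1..r}" "tgt k = tgt k'" "cO k < j" "j \<le> cO k + Nk k" "cO k' < j" "j \<le> cO k' + Nk k'"
  shows "k = k'"
proof (rule ccontr)
  assume "k \<noteq> k'"
  then consider "k < k'" | "k' < k" by linarith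
  then show False
  proof cases
    case 1
    have "off tgt (\<lambda>k. m (src k)) k + m (src k) \<le> off tgt (\<lambda>k. m (src k)) k'"
      using off_mono[of k k' tgt] 1 assms by simp
    then show False using assms by (simp add: cO_off Nk_def)
  next
    case 2
    have "off tgt (\<lambda>k. m (src k)) k' + m (src k') \<le> off tgt (\<lambda>k. m (src k)) k"
      using off_mono[of k' k tgt] 2 assms by simp
    then show False using assms by (simp add: cO_off Nk_def)
  qed
qed

lemma row_disj:
  assumes "k \<in> {1..r}" "k' \<in> {1..r}" "src k = src k'" "rO k < j" "j \<le> rO k + Mk k" "rO k' < j" "j \<le> rO k' + Mk k'"
  shows "k = k'"
proof (rule ccontr)
  assume "k \<noteq> k'"
  then consider "k < k'" | "k' < k" by linarith
  then show False
  proof cases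
    case 1
    have "off src (\<lambda>k. m (tgt k)) k + m (tgt k) \<le> off src (\<lambda>k. m (tgt k)) k'"
      using off_mono[of k k' src] 1 assms by simp
    then show False using assms by (simp add: rO_off Mk_def)
  next
    case 2
    have "off src (\<lambda>k. m (tgt k)) k' + m (tgt k') \<le> off src (\<lambda>k. m (tgt k)) k"
      using off_mono[of k' k src] 2 assms by simp
    then show False using assms by (simp add: rO_off Mk_def)
  qed
qed

lemma col_cover:
  assumes "\<alpha> \<in> Vt" "1 \<le> j" "j \<le> int (bT r src tgt m \<alpha>)"
  shows "\<exists>k\<in>{1..r}. tgt k = \<alpha> \<and> cO k < j \<and> j \<le> cO k + Nk k"
proof -
  have "1 \<le> nat j" "nat j \<le> tot r tgt (\<lambda>k. m (src k)) \<alpha>" using assms by (simp_all add: bT_tot)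
  from off_cover[OF this] obtain k where "k \<in> {1..r}" "tgt k = \<alpha>"
    "off tgt (\<lambda>k. m (src k)) k < nat j" "nat j \<le> off tgt (\<lambda>k. m (src k)) k + m (src k)" by blast
  then show ?thesis using assms(2) by (intro bexI[of _ k]) (auto simp: cO_off Nk_def)
qed

lemma row_cover:
  assumes "\<beta> \<in> Vs" "1 \<le> i" "i \<le> int (aS r src tgt m \<beta>)"
  shows "\<exists>k\<in>{1..r}. src k = \<beta> \<and> rO k < i \<and> i \<le> rO k + Mk k"
proof -
  have "1 \<le> nat i" "nat i \<le> tot r src (\<lambda>k. m (tgt k)) \<beta>" using assms by (simp_all add: aS_tot)
  from off_cover[OF this] obtain k where "k \<in> {1..r}" "src k = \<beta>"
    "off src (\<lambda>k. m (tgt k)) k < nat i" "nat i \<le> off src (\<lambda>k. m (tgt k)) k + m (tgt k)" by blast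
  then show ?thesis using assms(2) by (intro bexI[of _ k]) (auto simp: rO_off Mk_def)
qed

lemma hR:
  assumes k: "k \<in> {1..r}" and p: "p \<in> {1..u (tgt k)}"
  shows "lattice_path (hR k p)" "snd (hd (hR k p)) = 1" "snd (last (hR k p)) = Nk k"
    "\<And>x. x \<in> set (hR k p) \<longleftrightarrow> eT k x \<in> set (H (tgt k) p) \<and> 1 \<le> snd x \<and> snd x \<le> Nk k"
proof -
  have a: "tgt k \<in> Vt" using karr[OF k] by simp
  note H = Hf[OF a p]
  have hR_eq: "hR k p = map (\<lambda>x. (fst x, snd x - cO k)) (filter (\<lambda>x. cO k < snd x \<and> snd x \<le> cO k + Nk k) (H (tgt k) p))"
    by (simp add: hR_def restrT_def Nk_def)
  note R = restr_col[OF H(1) _ _ col_bound[OF k] m_pos(2)[OF k], folded hR_eq]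
  have hh: "snd (hd (H (tgt k) p)) = 1" "snd (last (H (tgt k) p)) = int (bT r src tgt m (tgt k))" using H(3,4) by simp_all
  show "lattice_path (hR k p)" "snd (hd (hR k p)) = 1" "snd (last (hR k p)) = Nk k" using R[OF hh] by simp_all
  fix x show "x \<in> set (hR k p) \<longleftrightarrow> eT k x \<in> set (H (tgt k) p) \<and> 1 \<le> snd x \<and> snd x \<le> Nk k"
    using R(4)[OF hh, of x] by (simp add: embT_def)
qed

lemma vR:
  assumes k: "k \<in> {1..r}" and q: "q \<in> {1..u (src k)}"
  shows "lattice_path (vR k q)" "fst (hd (vR k q)) = Mk k" "fst (last (vR k q)) = 1"
    "\<And>x. x \<in> set (vR k q) \<longleftrightarrow> eS k x \<in> set (V (src k) q) \<and> 1 \<le> fst x \<and> fst x \<le> Mk k"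
proof -
  have b: "src k \<in> Vs" using karr[OF k] by simp
  note VV = Vf[OF b q]
  have vR_eq: "vR k q = map (\<lambda>x. (fst x - rO k, snd x)) (filter (\<lambda>x. rO k < fst x \<and> fst x \<le> rO k + Mk k) (V (src k) q))"
    by (simp add: vR_def restrS_def Mk_def)
  note R = restr_row[OF VV(1) _ _ row_bound[OF k] m_pos(1)[OF k], folded vR_eq]
  have hh: "fst (hd (V (src k) q)) = int (aS r src tgt m (src k))" "fst (last (V (src k) q)) = 1" using VV(3,4) by simp_all
  show "lattice_path (vR k q)" "fst (hd (vR k q)) = Mk k" "fst (last (vR k q)) = 1" using R[OF hh] by simp_all
  fix x show "x \<in> set (vR k q) \<longleftrightarrow> eS k x \<in> set (V (src k) q) \<and> 1 \<le> fst x \<and> fst x \<le> Mk k"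
    using R(4)[OF hh, of x] by (simp add: embS_def)
qed

lemma eT_nb: "eT k (Ep z) = Ep (eT k z)" "eT k (Np z) = Np (eT k z)" "eT k (Wp z) = Wp (eT k z)" "eT k (Sp z) = Sp (eT k z)"
  by (simp_all add: embT_def Ep_def Np_def Wp_def Sp_def)
lemma eS_nb: "eS k (Ep z) = Ep (eS k z)" "eS k (Np z) = Np (eS k z)" "eS k (Wp z) = Wp (eS k z)" "eS k (Sp z) = Sp (eS k z)"
  by (simp_all add: embS_def Ep_def Np_def Wp_def Sp_def)
lemma eT_inj: "eT k x = eT k y \<longleftrightarrow> x = y" by (auto simp: embT_def prod_eq_iff)
lemma eS_inj: "eS k x = eS k y \<longleftrightarrow> x = y" by (auto simp: embS_def prod_eq_iff)
lemma eT_lvl: "lvl (eT k x) = lvl x + cO k" by (simp add: embT_def lvl_def)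
lemma eS_lvl: "lvl (eS k x) = lvl x - rO k" by (simp add: embS_def lvl_def)

lemma hR_in: assumes "k \<in> {1..r}" "p \<in> {1..u (tgt k)}" "z \<in> set (hR k p)"
  shows "1 \<le> fst z \<and> fst z \<le> Mk k \<and> 1 \<le> snd z \<and> snd z \<le> Nk k"
proof -
  have "eT k z \<in> set (H (tgt k) p)" "1 \<le> snd z" "snd z \<le> Nk k" using hR(4)[OF assms(1,2)] assms(3) by auto
  moreover have "tgt k \<in> Vt" using karr[OF assms(1)] by simp
  ultimately show ?thesis using Hf(2)[OF _ assms(2)] by (auto simp: in_grid_def embT_def Mk_def aT_def)
qed

lemma vR_in: assumes "k \<in> {1..r}" "q \<in> {1..u (src k)}" "z \<in> set (vR k q)"
  shows "1 \<le> fst z \<and> fst z \<le> Mk k \<and> 1 \<le> snd z \<and> snd z \<le> Nk k"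
proof -
  have "eS k z \<in> set (V (src k) q)" "1 \<le> fst z" "fst z \<le> Mk k" using vR(4)[OF assms(1,2)] assms(3) by auto
  moreover have "src k \<in> Vs" using karr[OF assms(1)] by simp
  ultimately show ?thesis using Vf(2)[OF _ assms(2)] by (auto simp: in_grid_def embS_def Nk_def bS_def)
qed

lemma page_k:
  assumes st: "straight_road_map Vs Vt r src tgt m u H V" and k: "k \<in> {1..r}"
  shows "page (Mk k) (Nk k) {1..u (tgt k)} {1..u (src k)} (hR k) (vR k)"
proof
  have a: "tgt k \<in> Vt" and b: "src k \<in> Vs" using karr[OF k] by auto
  show "lattice_path (hR k p)" if "p \<in> {1..u (tgt k)}" for p using hR[OF k that] by blast
  show "lattice_path (vR k q)" if "q \<in> {1..u (src k)}" for q using vR[OF k that] by blast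
  show "1 \<le> fst z \<and> fst z \<le> Mk k \<and> 1 \<le> snd z \<and> snd z \<le> Nk k" if "p \<in> {1..u (tgt k)}" "z \<in> set (hR k p)" for p z
    using hR_in[OF k that] .
  show "1 \<le> fst z \<and> fst z \<le> Mk k \<and> 1 \<le> snd z \<and> snd z \<le> Nk k" if "q \<in> {1..u (src k)}" "z \<in> set (vR k q)" for q z
    using vR_in[OF k that] .
  show "snd (hd (hR k p)) = 1" "snd (last (hR k p)) = Nk k" if "p \<in> {1..u (tgt k)}" for p using hR[OF k that] by blast+
  show "fst (hd (vR k q)) = Mk k" "fst (last (vR k q)) = 1" if "q \<in> {1..u (src k)}" for q using vR[OF k that] by blast+
  show "p = p'" if "p \<in> {1..u (tgt k)}" "p' \<in> {1..u (tgt k)}" "z \<in> set (hR k p)" "z \<in> set (hR k p')" for p p' z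
    using Hdisj[OF a that(1,2)] hR(4)[OF k that(1)] hR(4)[OF k that(2)] that(3,4) by blast
  show "q = q'" if "q \<in> {1..u (src k)}" "q' \<in> {1..u (src k)}" "z \<in> set (vR k q)" "z \<in> set (vR k q')" for q q' z
    using Vdisj[OF b that(1,2)] vR(4)[OF k that(1)] vR(4)[OF k that(2)] that(3,4) by blast
  show "{1..u (src k)} \<noteq> {}" using stdS b by force
  show "\<exists>q\<in>{1..u (src k)}. z \<in> set (vR k q)"
    if p: "p \<in> {1..u (tgt k)}" and z: "z \<in> set (hR k p)"
      and c: "Wp z \<in> set (hR k p) \<and> Np z \<in> set (hR k p) \<or> Sp z \<in> set (hR k p) \<and> Ep z \<in> set (hR k p)" for p z
  proof -
    note mem = hR(4)[OF k p]
    have Hl: "lattice_path (H (tgt k) p)" using Hf(1)[OF a p] .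
    have ez: "eT k z \<in> set (H (tgt k) p)" using mem z by blast
    have "eT k z \<in> corners (H (tgt k) p)"
      using c
    proof
      assume "Wp z \<in> set (hR k p) \<and> Np z \<in> set (hR k p)"
      then have "Wp (eT k z) \<in> set (H (tgt k) p)" "Np (eT k z) \<in> set (H (tgt k) p)"
        using mem eT_nb by metis+
      from corner_WN[OF Hl ez this] show ?thesis .
    next
      assume "Sp z \<in> set (hR k p) \<and> Ep z \<in> set (hR k p)"
      then have "Sp (eT k z) \<in> set (H (tgt k) p)" "Ep (eT k z) \<in> set (H (tgt k) p)"
        using mem eT_nb by metis+
      from corner_SE[OF Hl ez this] show ?thesis .
    qed
    with st a p obtain k' x where k': "k' \<in> {1..r}" "tgt k' = tgt k"
      "1 \<le> fst x" "fst x \<le> int (m (tgt k'))" "1 \<le> snd x" "snd x \<le> int (m (src k'))"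
      "eT k z = eT k' x" "\<exists>q\<in>{1..u (src k')}. eS k' x \<in> set (V (src k') q)"
      unfolding straight_road_map_def by blast
    have zr: "1 \<le> snd z" "snd z \<le> Nk k" using mem z by auto
    have "cO k + snd z = cO k' + snd x" using k'(7) by (simp add: embT_def)
    then have "k = k'" using col_disj[OF k k'(1) k'(2)[symmetric], of "cO k + snd z"] zr k'(5,6)
      by (simp add: Nk_def)
    with k'(7) have "x = z" by (simp add: eT_inj)
    with k'(8) \<open>k = k'\<close> obtain q where q: "q \<in> {1..u (src k)}" "eS k z \<in> set (V (src k) q)" by blast
    have "1 \<le> fst z" "fst z \<le> Mk k" using hR_in[OF k p z] by auto
    with q vR(4)[OF k q(1)] show ?thesis by blast
  qed
  show "\<exists>p\<in>{1..u (tgt k)}. z \<in> set (hR k p)"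
    if q: "q \<in> {1..u (src k)}" and z: "z \<in> set (vR k q)"
      and c: "Wp z \<in> set (vR k q) \<and> Np z \<in> set (vR k q) \<or> Sp z \<in> set (vR k q) \<and> Ep z \<in> set (vR k q)" for q z
  proof -
    note mem = vR(4)[OF k q]
    have Vl: "lattice_path (V (src k) q)" using Vf(1)[OF b q] .
    have ez: "eS k z \<in> set (V (src k) q)" using mem z by blast
    have "eS k z \<in> corners (V (src k) q)"
      using c
    proof
      assume "Wp z \<in> set (vR k q) \<and> Np z \<in> set (vR k q)"
      then have "Wp (eS k z) \<in> set (V (src k) q)" "Np (eS k z) \<in> set (V (src k) q)"
        using mem eS_nb by metis+
      from corner_WN[OF Vl ez this] show ?thesis .
    next
      assume "Sp z \<in> set (vR k q) \<and> Ep z \<in> set (vR k q)"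
      then have "Sp (eS k z) \<in> set (V (src k) q)" "Ep (eS k z) \<in> set (V (src k) q)"
        using mem eS_nb by metis+
      from corner_SE[OF Vl ez this] show ?thesis .
    qed
    with st b q obtain k' x where k': "k' \<in> {1..r}" "src k' = src k"
      "1 \<le> fst x" "fst x \<le> int (m (tgt k'))" "1 \<le> snd x" "snd x \<le> int (m (src k'))"
      "eS k z = eS k' x" "\<exists>p\<in>{1..u (tgt k')}. eT k' x \<in> set (H (tgt k') p)"
      unfolding straight_road_map_def by blast
    have zr: "1 \<le> fst z" "fst z \<le> Mk k" using mem z by auto
    have "rO k + fst z = rO k' + fst x" using k'(7) by (simp add: embS_def)
    then have "k = k'" using row_disj[OF k k'(1) k'(2)[symmetric], of "rO k + fst z"] zr k'(3,4)
      by (simp add: Mk_def)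
    with k'(7) have "x = z" by (simp add: eS_inj)
    with k'(8) \<open>k = k'\<close> obtain p where p: "p \<in> {1..u (tgt k)}" "eT k z \<in> set (H (tgt k) p)" by blast
    have "1 \<le> snd z" "snd z \<le> Nk k" using vR_in[OF k q z] by auto
    with p hR(4)[OF k p(1)] show ?thesis by blast
  qed
qed

end


lemma hcol_order:
  assumes P: "lattice_path P" and Q: "lattice_path Q"
    and hdP: "snd (hd P) = 1" and hdQ: "snd (hd Q) = 1" and lastP: "snd (last P) = B"
    and Qcols: "\<forall>z\<in>set Q. 1 \<le> snd z \<and> snd z \<le> B"
    and start: "fst (hd P) < fst (hd Q)" and disj: "set P \<inter> set Q = {}"
  shows "\<forall>z\<in>set P. \<forall>z'\<in>set Q. snd z = snd z' \<longrightarrow> fst z < fst z'"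
proof (intro ballI impI, rule ccontr)
  fix z z' assume z: "z \<in> set P" and z': "z' \<in> set Q" and c: "snd z = snd z'" and n: "\<not> fst z < fst z'"
  obtain Q' where Q': "lattice_path Q'" "hd Q' = hd Q" "last Q' = z'" "set Q' \<subseteq> set Q"
    using lp_prefix[OF Q z'] by metis
  have "\<exists>u. u \<in> set P \<and> u \<in> set Q'"
  proof (rule cross[OF P Q'(1)])
    show "\<forall>z\<in>set Q'. snd (hd P) \<le> snd z \<and> snd z \<le> snd (last P)" using Qcols Q'(4) hdP lastP by auto
    show "\<exists>p\<in>set P. snd p = snd (hd Q') \<and> fst p \<le> fst (hd Q')"
      using lp_hd_in[OF P] hdP hdQ Q'(2) start by (intro bexI[of _ "hd P"]) auto
    show "\<exists>p\<in>set P. snd p = snd (last Q') \<and> fst (last Q') \<le> fst p"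
      using z c n Q'(3) by (intro bexI[of _ z]) auto
  qed
  then show False using disj Q'(4) by blast
qed

lemma sorted_concat_map2:
  assumes "sorted_wrt (<) ks" "\<And>k. sorted_wrt (<) (qs k)"
    and R: "\<And>k q k' q'. k \<in> set ks \<Longrightarrow> k' \<in> set ks \<Longrightarrow> q \<in> set (qs k) \<Longrightarrow> q' \<in> set (qs k') \<Longrightarrow>
              k < k' \<or> (k = k' \<and> q < q') \<Longrightarrow> Rel (Y k q) (Y k' q')"
  shows "sorted_wrt Rel (concat (map (\<lambda>k. map (Y k) (qs k)) ks))"
  using assms(1) R
proof (induction ks)
  case Nil then show ?case by simp
next
  case (Cons k ks)
  have s1: "sorted_wrt Rel (map (Y k) (qs k))"
    unfolding sorted_wrt_map
    using sorted_wrt_mono_rel[OF _ assms(2)[of k], of "\<lambda>q q'. Rel (Y k q) (Y k q')"] Cons.prems(2)[of k k] by auto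
  have s2: "sorted_wrt Rel (concat (map (\<lambda>k. map (Y k) (qs k)) ks))"
    using Cons.IH Cons.prems by simp
  have s3: "\<forall>x\<in>set (map (Y k) (qs k)). \<forall>y\<in>set (concat (map (\<lambda>k. map (Y k) (qs k)) ks)). Rel x y"
    using Cons.prems by auto
  show ?case using s1 s2 s3 by (simp add: sorted_wrt_append)
qed

lemma map_filter_shift:
  assumes "\<And>z. g (f z) = z"
  shows "map g (filter P (map f (filter Q L))) = filter (\<lambda>z. Q z \<and> P (f z)) L"
proof -
  have "map g (filter P (map f (filter Q L))) = map g (map f (filter (P \<circ> f) (filter Q L)))"
    by (simp add: filter_map)
  also have "\<dots> = filter (P \<circ> f) (filter Q L)" using assms by (induct L) auto
  also have "\<dots> = filter (\<lambda>z. Q z \<and> P (f z)) L" by (simp add: conj_commute)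
  finally show ?thesis .
qed

lemma map_sw_rev_filter: "map sw (rev (filter P L)) = filter (\<lambda>y. P (sw y)) (map sw (rev L))"
proof -
  have "map sw (rev (filter P L)) = map sw (filter P (rev L))" by (simp add: rev_filter)
  also have "\<dots> = filter (\<lambda>y. P (sw y)) (map sw (rev L))" by (induct L rule: rev_induct) auto
  finally show ?thesis .
qed

lemma lvl_sw: "lvl (sw z) = - lvl z" by (simp add: sw_def lvl_def)


lemma fib:
  assumes L: "lattice_path L"
    and conv: "\<And>z1 z2 w. z1 \<in> set L \<Longrightarrow> z2 \<in> set L \<Longrightarrow> w \<in> set L \<Longrightarrow> f z1 \<Longrightarrow> f z2 \<Longrightarrow>
                 lvl z1 \<le> lvl w \<Longrightarrow> lvl w \<le> lvl z2 \<Longrightarrow> f w"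
    and ex: "\<exists>z\<in>set L. f z"
  shows "is_block L (filter f L)" "\<exists>xs ys. L = xs @ filter f L @ ys" "lattice_path (filter f L)"
    "filter f L \<noteq> []"
proof -
  show "is_block L (filter f L)" by (rule filter_is_block'(1)[OF L _ ex], (rule conv; assumption))
  show "\<exists>xs ys. L = xs @ filter f L @ ys" by (rule filter_is_block'(2)[OF L _ ex], (rule conv; assumption))
  show "lattice_path (filter f L)" by (rule filter_is_block'(3)[OF L _ ex], (rule conv; assumption))
  show "filter f L \<noteq> []" by (rule filter_is_block'(4)[OF L _ ex], (rule conv; assumption))
qed

context quiv begin

lemma H_order:
  assumes a: "\<alpha> \<in> Vt" and p: "p \<in> {1..u \<alpha>}" "p' \<in> {1..u \<alpha>}" "p < p'"
  shows "\<forall>z\<in>set (H \<alpha> p). \<forall>z'\<in>set (H \<alpha> p'). snd z = snd z' \<longrightarrow> fst z < fst z'"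
proof (rule hcol_order[OF Hf(1)[OF a p(1)] Hf(1)[OF a p(2)]])
  show "snd (hd (H \<alpha> p)) = 1" using Hf(3)[OF a p(1)] by simp
  show "snd (hd (H \<alpha> p')) = 1" using Hf(3)[OF a p(2)] by simp
  show "snd (last (H \<alpha> p)) = int (bT r src tgt m \<alpha>)" using Hf(4)[OF a p(1)] by simp
  show "\<forall>z\<in>set (H \<alpha> p'). 1 \<le> snd z \<and> snd z \<le> int (bT r src tgt m \<alpha>)" using Hf(2)[OF a p(2)] by (auto simp: in_grid_def)
  show "fst (hd (H \<alpha> p)) < fst (hd (H \<alpha> p'))" using Hf(3)[OF a p(1)] Hf(3)[OF a p(2)] p(3) by simp
  show "set (H \<alpha> p) \<inter> set (H \<alpha> p') = {}" using Hdisj[OF a p(1,2)] p(3) by auto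
qed

lemma V_order:
  assumes b: "\<beta> \<in> Vs" and q: "q \<in> {1..u \<beta>}" "q' \<in> {1..u \<beta>}" "q < q'"
  shows "\<forall>z\<in>set (V \<beta> q). \<forall>z'\<in>set (V \<beta> q'). fst z = fst z' \<longrightarrow> snd z < snd z'"
proof -
  define A where "A = int (aS r src tgt m \<beta>)"
  define B where "B = int (bS m \<beta>)"
  have l1: "lattice_path (V \<beta> q)" and l2: "lattice_path (V \<beta> q')" using Vf(1)[OF b] q by auto
  have T: "\<forall>y\<in>set (map (tau A B) (V \<beta> q')). \<forall>y'\<in>set (map (tau A B) (V \<beta> q)). snd y = snd y' \<longrightarrow> fst y < fst y'"
  proof (rule hcol_order[OF tau_lp[OF l2] tau_lp[OF l1]])
    show "snd (hd (map (tau A B) (V \<beta> q'))) = 1" using Vf(4)[OF b q(2)] lp_nonempty[OF l2]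
      by (simp add: hd_map tau_def A_def)
    show "snd (hd (map (tau A B) (V \<beta> q))) = 1" using Vf(4)[OF b q(1)] lp_nonempty[OF l1]
      by (simp add: hd_map tau_def A_def)
    show "snd (last (map (tau A B) (V \<beta> q'))) = A" using Vf(3)[OF b q(2)] lp_nonempty[OF l2]
      by (simp add: last_map tau_def)
    show "\<forall>z\<in>set (map (tau A B) (V \<beta> q)). 1 \<le> snd z \<and> snd z \<le> A" using Vf(2)[OF b q(1)]
      by (auto simp: in_grid_def tau_def A_def)
    show "fst (hd (map (tau A B) (V \<beta> q'))) < fst (hd (map (tau A B) (V \<beta> q)))"
      using Vf(4)[OF b q(1)] Vf(4)[OF b q(2)] lp_nonempty[OF l1] lp_nonempty[OF l2] q(3)
      by (simp add: hd_map tau_def)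
    show "set (map (tau A B) (V \<beta> q')) \<inter> set (map (tau A B) (V \<beta> q)) = {}"
      using Vdisj[OF b q(1,2)] q(3) by (auto simp: tau_inj)
  qed
  show ?thesis
  proof (intro ballI impI)
    fix z z' assume z: "z \<in> set (V \<beta> q)" and z': "z' \<in> set (V \<beta> q')" and e: "fst z = fst z'"
    have "tau A B z' \<in> set (map (tau A B) (V \<beta> q'))" "tau A B z \<in> set (map (tau A B) (V \<beta> q))"
      using z z' by simp_all
    from T[rule_format, OF this] e show "snd z < snd z'" by (simp add: tau_def)
  qed
qed

lemma vR_order:
  assumes k: "k \<in> {1..r}" and q: "q \<in> {1..u (src k)}" "q' \<in> {1..u (src k)}" "q < q'"
  shows "\<forall>x\<in>set (vR k q). \<forall>x'\<in>set (vR k q'). fst x = fst x' \<longrightarrow> snd x < snd x'"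
proof (intro ballI impI)
  fix x x' assume x: "x \<in> set (vR k q)" and x': "x' \<in> set (vR k q')" and e: "fst x = fst x'"
  have "eS k x \<in> set (V (src k) q)" "eS k x' \<in> set (V (src k) q')" using vR(4)[OF k q(1)] vR(4)[OF k q(2)] x x' by auto
  from V_order[OF _ q, rule_format, OF _ this] karr[OF k] e show "snd x < snd x'" by (simp add: embS_def)
qed

lemma hR_order:
  assumes k: "k \<in> {1..r}" and p: "p \<in> {1..u (tgt k)}" "p' \<in> {1..u (tgt k)}" "p < p'"
  shows "\<forall>x\<in>set (hR k p'). \<forall>x'\<in>set (hR k p). snd x = snd x' \<longrightarrow> fst x' < fst x"
proof (intro ballI impI)
  fix x x' assume x: "x \<in> set (hR k p')" and x': "x' \<in> set (hR k p)" and e: "snd x = snd x'"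
  have "eT k x' \<in> set (H (tgt k) p)" "eT k x \<in> set (H (tgt k) p')" using hR(4)[OF k p(1)] hR(4)[OF k p(2)] x x' by auto
  from H_order[OF _ p, rule_format, OF _ this] karr[OF k] e show "fst x' < fst x" by (simp add: embT_def)
qed

theorem part_a:
  assumes st: "straight_road_map Vs Vt r src tgt m u H V" and k: "k \<in> {1..r}"
    and p: "p \<in> {1..u (tgt k)}" and q: "q \<in> {1..u (src k)}"
  shows "connected_inter src tgt m H V k p q"
proof -
  interpret pg: page "Mk k" "Nk k" "{1..u (tgt k)}" "{1..u (src k)}" "hR k" "vR k" by (rule page_k[OF st k])
  have rT: "restrT src tgt m k (H (tgt k) p) = hR k p" and rS: "restrS src tgt m k (V (src k) q) = vR k q"
    by (simp_all add: hR_def vR_def)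
  have sH: "segH src tgt m H V k p q = filter (\<lambda>x. x \<in> set (vR k q)) (hR k p)" by (simp add: segH_def rT rS)
  have sV: "segV src tgt m H V k p q = filter (\<lambda>x. x \<in> set (hR k p)) (vR k q)" by (simp add: segV_def rT rS)
  define fH where "fH x \<longleftrightarrow> x \<in> set (vR k q)" for x
  define fV where "fV x \<longleftrightarrow> x \<in> set (hR k p)" for x
  have exH: "\<exists>z\<in>set (hR k p). fH z" using pg.C2[OF p q] by (auto simp: fH_def)
  have exV: "\<exists>z\<in>set (vR k q). fV z" using pg.C2[OF p q] by (auto simp: fV_def)
  have convH: "fH w" if "z1 \<in> set (hR k p)" "z2 \<in> set (hR k p)" "w \<in> set (hR k p)"
    "fH z1" "fH z2" "lvl z1 \<le> lvl w" "lvl w \<le> lvl z2" for z1 z2 w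
    using pg.C3h[OF p q that(1) that(4)[unfolded fH_def] that(2) that(5)[unfolded fH_def] that(3,6,7)] by (simp add: fH_def)
  have convV: "fV w" if "z1 \<in> set (vR k q)" "z2 \<in> set (vR k q)" "w \<in> set (vR k q)"
    "fV z1" "fV z2" "lvl z1 \<le> lvl w" "lvl w \<le> lvl z2" for z1 z2 w
    using pg.C3v[OF p q that(4)[unfolded fV_def] that(1) that(5)[unfolded fV_def] that(2,3,6,7)] by (simp add: fV_def)
  have BH: "is_block (hR k p) (filter fH (hR k p))" "\<exists>xs ys. hR k p = xs @ filter fH (hR k p) @ ys"
    "lattice_path (filter fH (hR k p))" "filter fH (hR k p) \<noteq> []"
    by (rule fib[OF hR(1)[OF k p] _ exH], (rule convH; assumption))+
  have BV: "is_block (vR k q) (filter fV (vR k q))" "\<exists>xs ys. vR k q = xs @ filter fV (vR k q) @ ys"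
    "lattice_path (filter fV (vR k q))" "filter fV (vR k q) \<noteq> []"
    by (rule fib[OF vR(1)[OF k q] _ exV], (rule convV; assumption))+
  have e1: "filter fH (hR k p) = filter (\<lambda>x. x \<in> set (vR k q)) (hR k p)" by (simp add: fH_def[abs_def])
  have e2: "filter fV (vR k q) = filter (\<lambda>x. x \<in> set (hR k p)) (vR k q)" by (simp add: fV_def[abs_def])
  note BH = BH[unfolded e1] and BV = BV[unfolded e2]
  show ?thesis unfolding connected_inter_def sH sV rT rS using BH(2,3,4) BV(2) by blast
qed

end


lemma arrows_into_sorted: "sorted_wrt (<) (arrows_into r tgt \<alpha>)"
  unfolding arrows_into_def by (rule sorted_wrt_filter) (rule sorted_wrt_upt)
lemma arrows_from_sorted: "sorted_wrt (<) (arrows_from r src \<beta>)"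
  unfolding arrows_from_def by (rule sorted_wrt_filter) (rule sorted_wrt_upt)
lemma arrows_into_mem: "k \<in> set (arrows_into r tgt \<alpha>) \<longleftrightarrow> k \<in> {1..r} \<and> tgt k = \<alpha>"
  by (auto simp: arrows_into_def)
lemma arrows_from_mem: "k \<in> set (arrows_from r src \<beta>) \<longleftrightarrow> k \<in> {1..r} \<and> src k = \<beta>"
  by (auto simp: arrows_from_def)

context quiv begin

definition shT where "shT k z = (fst z, snd z - cO k)"
lemma eT_shT[simp]: "eT k (shT k z) = z" by (simp add: shT_def embT_def)
lemma shT_eT[simp]: "shT k (eT k z) = z" by (simp add: shT_def embT_def)
lemma shT_lvl: "lvl (shT k z) = lvl z - cO k" by (simp add: shT_def lvl_def)
lemma shT_N: "shT k (Np z) = Np (shT k z)" by (simp add: shT_def Np_def)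

lemma hR_mem_shT:
  assumes k: "k \<in> {1..r}" and p: "p \<in> {1..u (tgt k)}" and z: "z \<in> set (H (tgt k) p)"
    and c: "cO k < snd z" "snd z \<le> cO k + Nk k"
  shows "shT k z \<in> set (hR k p)"
  using hR(4)[OF k p, of "shT k z"] z c by (simp add: shT_def embT_def)

theorem part_b:
  assumes st: "straight_road_map Vs Vt r src tgt m u H V" and a: "\<alpha> \<in> Vt" and p: "p \<in> {1..u \<alpha>}"
  shows "hjoin [(int (aT m \<alpha>) - int (u \<alpha>) + int p, 1)]
               (pieces_H r src tgt m u H V \<alpha> p @ [[(int p, int (bT r src tgt m \<alpha>))]])
         = Some (H \<alpha> p)"
proof -
  define L where "L = H \<alpha> p"
  have Ll: "lattice_path L" using Hf(1)[OF a p] by (simp add: L_def)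
  have hdL: "hd L = (int (aT m \<alpha>) - int (u \<alpha>) + int p, 1)" using Hf(3)[OF a p] by (simp add: L_def)
  have lastL: "last L = (int p, int (bT r src tgt m \<alpha>))" using Hf(4)[OF a p] by (simp add: L_def)
  define fP where "fP k q z \<longleftrightarrow> cO k < snd z \<and> snd z \<le> cO k + Nk k \<and> shT k z \<in> set (vR k q)" for k q z
  define Y where "Y k q = filter (fP k q) L" for k q
  let ?ks = "arrows_into r tgt \<alpha>"
  let ?qs = "\<lambda>k. [1..<Suc (u (src k))]"
  have kmem: "k \<in> set ?ks \<Longrightarrow> k \<in> {1..r} \<and> tgt k = \<alpha>" for k by (simp add: arrows_into_mem)
  have qmem: "q \<in> set (?qs k) \<longleftrightarrow> q \<in> {1..u (src k)}" for k q by auto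
  have pk: "k \<in> set ?ks \<Longrightarrow> p \<in> {1..u (tgt k)}" for k using kmem p by auto
  have piece_eq: "map (eT k) (segH src tgt m H V k p q) = Y k q" if k: "k \<in> set ?ks" for k q
  proof -
    have tk: "tgt k = \<alpha>" using kmem[OF k] by simp
    have "segH src tgt m H V k p q = filter (\<lambda>x. x \<in> set (vR k q)) (hR k p)"
      by (simp add: segH_def hR_def vR_def)
    moreover have "hR k p = map (shT k) (filter (\<lambda>x. cO k < snd x \<and> snd x \<le> cO k + Nk k) L)"
      using tk by (simp add: hR_def restrT_def L_def Nk_def shT_def[abs_def])
    ultimately have "map (eT k) (segH src tgt m H V k p q)
       = map (eT k) (filter (\<lambda>x. x \<in> set (vR k q)) (map (shT k) (filter (\<lambda>x. cO k < snd x \<and> snd x \<le> cO k + Nk k) L)))"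
      by simp
    also have "\<dots> = filter (\<lambda>z. (cO k < snd z \<and> snd z \<le> cO k + Nk k) \<and> shT k z \<in> set (vR k q)) L"
      by (rule map_filter_shift) simp
    also have "\<dots> = Y k q" by (simp add: Y_def fP_def[abs_def])
    finally show ?thesis .
  qed
  have pieces: "pieces_H r src tgt m u H V \<alpha> p = concat (map (\<lambda>k. map (Y k) (?qs k)) ?ks)"
  proof -
    have "map (\<lambda>k. map (\<lambda>q. map (eT k) (segH src tgt m H V k p q)) (?qs k)) ?ks = map (\<lambda>k. map (Y k) (?qs k)) ?ks"
    proof (rule map_cong[OF refl])
      fix k assume "k \<in> set ?ks"
      then show "map (\<lambda>q. map (eT k) (segH src tgt m H V k p q)) (?qs k) = map (Y k) (?qs k)"
        using piece_eq by (intro map_cong) auto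
    qed
    then show ?thesis unfolding pieces_H_def by (rule arg_cong[where f = concat])
  qed
  have inL: "eT k x \<in> set L \<longleftrightarrow> x \<in> set (hR k p) \<or> \<not> (1 \<le> snd x \<and> snd x \<le> Nk k) \<and> eT k x \<in> set L"
    if "k \<in> set ?ks" for k x using hR(4)[OF _ pk[OF that]] kmem[OF that] by (auto simp: L_def)
  have blk: "is_block L (Y k q)" if k: "k \<in> set ?ks" and q: "q \<in> {1..u (src k)}" for k q
  proof -
    have k1: "k \<in> {1..r}" and tk: "tgt k = \<alpha>" using kmem[OF k] by auto
    interpret pg: page "Mk k" "Nk k" "{1..u (tgt k)}" "{1..u (src k)}" "hR k" "vR k" by (rule page_k[OF st k1])
    have pk': "p \<in> {1..u (tgt k)}" using pk[OF k] .
    have memh: "z \<in> set L \<Longrightarrow> cO k < snd z \<Longrightarrow> snd z \<le> cO k + Nk k \<Longrightarrow> shT k z \<in> set (hR k p)" for z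
      using hR_mem_shT[OF k1 pk'] tk by (simp add: L_def)
    have conv: "fP k q w" if "z1 \<in> set L" "z2 \<in> set L" "w \<in> set L" "fP k q z1" "fP k q z2"
      "lvl z1 \<le> lvl w" "lvl w \<le> lvl z2" for z1 z2 w
    proof -
      have o1: "snd z1 \<le> snd w" using lp_order[OF Ll that(1,3,6)] by simp
      have o2: "snd w \<le> snd z2" using lp_order[OF Ll that(3,2,7)] by simp
      have cw: "cO k < snd w" "snd w \<le> cO k + Nk k" using o1 o2 that(4,5) by (auto simp: fP_def)
      have h1: "shT k z1 \<in> set (hR k p)" "shT k z2 \<in> set (hR k p)" "shT k w \<in> set (hR k p)"
        using memh that(1-5) cw by (auto simp: fP_def)
      have v1: "shT k z1 \<in> set (vR k q)" "shT k z2 \<in> set (vR k q)" using that(4,5) by (auto simp: fP_def)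
      have "lvl (shT k z1) \<le> lvl (shT k w)" "lvl (shT k w) \<le> lvl (shT k z2)" using that(6,7) by (simp_all add: shT_lvl)
      from pg.C3h[OF pk' q h1(1) v1(1) h1(2) v1(2) h1(3) this] cw show ?thesis by (simp add: fP_def)
    qed
    have ex: "\<exists>z\<in>set L. fP k q z"
    proof -
      obtain x where x: "x \<in> set (hR k p)" "x \<in> set (vR k q)" using pg.C2[OF pk' q] by blast
      have "eT k x \<in> set L" "1 \<le> snd x" "snd x \<le> Nk k" using hR(4)[OF k1 pk'] x(1) tk by (auto simp: L_def)
      moreover have "fP k q (eT k x)" using x(2) \<open>1 \<le> snd x\<close> \<open>snd x \<le> Nk k\<close> unfolding fP_def shT_eT
        by (simp add: embT_def)
      ultimately show ?thesis by blast
    qed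
    show ?thesis unfolding Y_def by (rule fib(1)[OF Ll _ ex], (rule conv; assumption))
  qed
  have blocks: "\<forall>Z\<in>set (concat (map (\<lambda>k. map (Y k) (?qs k)) ?ks)). is_block L Z"
    using blk by auto
  have ord: "\<forall>z\<in>set (Y k q). \<forall>z'\<in>set (Y k' q'). lvl z \<le> lvl z'"
    if k: "k \<in> set ?ks" "k' \<in> set ?ks" and q: "q \<in> set (?qs k)" "q' \<in> set (?qs k')"
      and lt: "k < k' \<or> (k = k' \<and> q < q')" for k q k' q'
  proof (intro ballI)
    fix z z' assume z: "z \<in> set (Y k q)" and z': "z' \<in> set (Y k' q')"
    have zL: "z \<in> set L" "fP k q z" and zL': "z' \<in> set L" "fP k' q' z'" using z z' by (auto simp: Y_def)
    have k1: "k \<in> {1..r}" "tgt k = \<alpha>" and k1': "k' \<in> {1..r}" "tgt k' = \<alpha>" using kmem k by auto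
    show "lvl z \<le> lvl z'"
      using lt
    proof
      assume kk: "k < k'"
      have "off tgt (\<lambda>k. m (src k)) k + m (src k) \<le> off tgt (\<lambda>k. m (src k)) k'"
        using off_mono[of k k' tgt] kk k1 k1' by simp
      then have "cO k + Nk k \<le> cO k'" by (simp add: cO_off Nk_def)
      then have "snd z < snd z'" using zL(2) zL'(2) by (auto simp: fP_def)
      show ?thesis
      proof (rule ccontr)
        assume "\<not> ?thesis"
        then have "lvl z' \<le> lvl z" by simp
        from lp_order[OF Ll zL'(1) zL(1) this] \<open>snd z < snd z'\<close> show False by simp
      qed
    next
      assume kk: "k = k' \<and> q < q'"
      then have qq: "q \<in> {1..u (src k)}" "q' \<in> {1..u (src k)}" "q < q'" using q by auto
      interpret pg: page "Mk k" "Nk k" "{1..u (tgt k)}" "{1..u (src k)}" "hR k" "vR k" by (rule page_k[OF st k1(1)])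
      have pk': "p \<in> {1..u (tgt k)}" using pk[OF k(1)] .
      have "shT k z \<in> set (hR k p)" "shT k z' \<in> set (hR k p)"
        using hR_mem_shT[OF k1(1) pk'] zL zL' kk k1 by (auto simp: fP_def L_def)
      moreover have "shT k z \<in> set (vR k q)" "shT k z' \<in> set (vR k q')" using zL(2) zL'(2) kk by (auto simp: fP_def)
      ultimately have "lvl (shT k z) < lvl (shT k z')"
        using pg.C4[OF pk' qq(1) qq(2) vR_order[OF k1(1) qq]] by blast
      then show ?thesis by (simp add: shT_lvl)
    qed
  qed
  have sorted: "sorted_wrt (\<lambda>Y Y'. \<forall>z\<in>set Y. \<forall>z'\<in>set Y'. lvl z \<le> lvl z') (concat (map (\<lambda>k. map (Y k) (?qs k)) ?ks))"
    by (rule sorted_concat_map2[OF arrows_into_sorted sorted_wrt_upt]) (rule ord; assumption)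
  have cover: "\<exists>Z\<in>set (concat (map (\<lambda>k. map (Y k) (?qs k)) ?ks)). z \<in> set Z \<and> Np z \<in> set Z"
    if z: "z \<in> set L" "Np z \<in> set L" for z
  proof -
    have "1 \<le> snd z" "snd z \<le> int (bT r src tgt m \<alpha>)" using Hf(2)[OF a p] z(1) by (auto simp: in_grid_def L_def)
    from col_cover[OF a this] obtain k where k: "k \<in> {1..r}" "tgt k = \<alpha>" "cO k < snd z" "snd z \<le> cO k + Nk k" by blast
    have ks: "k \<in> set ?ks" using k by (simp add: arrows_into_mem)
    interpret pg: page "Mk k" "Nk k" "{1..u (tgt k)}" "{1..u (src k)}" "hR k" "vR k" by (rule page_k[OF st k(1)])
    have pk': "p \<in> {1..u (tgt k)}" using pk[OF ks] .
    have "shT k z \<in> set (hR k p)" "shT k (Np z) \<in> set (hR k p)"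
      using hR_mem_shT[OF k(1) pk'] z k by (auto simp: L_def Np_def)
    then have "shT k z \<in> set (hR k p)" "Np (shT k z) \<in> set (hR k p)" by (simp_all add: shT_N)
    from pg.L1[OF pk' this] obtain q where q: "q \<in> {1..u (src k)}" "shT k z \<in> set (vR k q)" "Np (shT k z) \<in> set (vR k q)"
      by blast
    have "snd (Np z) = snd z" by (simp add: Np_def)
    then have "fP k q z" "fP k q (Np z)" using q k unfolding fP_def shT_N by auto
    then have "z \<in> set (Y k q)" "Np z \<in> set (Y k q)" using z by (auto simp: Y_def)
    moreover have "Y k q \<in> set (concat (map (\<lambda>k. map (Y k) (?qs k)) ?ks))"
    proof -
      have "q \<in> set (?qs k)" using q(1) by auto
      then have i1: "Y k q \<in> set (map (Y k) (?qs k))" by (simp only: set_map) (rule imageI)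
      have i2: "map (Y k) (?qs k) \<in> set (map (\<lambda>k. map (Y k) (?qs k)) ?ks)" using ks
        by (simp only: set_map) (rule imageI)
      show ?thesis using i1 i2 by (simp only: set_concat) blast
    qed
    ultimately show ?thesis by blast
  qed
  have "hjoin [hd L] (concat (map (\<lambda>k. map (Y k) (?qs k)) ?ks) @ [[last L]]) = Some L"
    by (rule hjoin_main'[OF Ll blocks sorted cover])
  then show ?thesis using hdL lastL pieces by (simp add: L_def)
qed

end


context quiv begin

definition shS where "shS k z = (fst z - rO k, snd z)"
lemma eS_shS[simp]: "eS k (shS k z) = z" by (simp add: shS_def embS_def)
lemma shS_eS[simp]: "shS k (eS k z) = z" by (simp add: shS_def embS_def)
lemma shS_lvl: "lvl (shS k z) = lvl z + rO k" by (simp add: shS_def lvl_def)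
lemma shS_E: "shS k (Ep z) = Ep (shS k z)" by (simp add: shS_def Ep_def)

lemma vR_mem_shS:
  assumes k: "k \<in> {1..r}" and q: "q \<in> {1..u (src k)}" and z: "z \<in> set (V (src k) q)"
    and c: "rO k < fst z" "fst z \<le> rO k + Mk k"
  shows "shS k z \<in> set (vR k q)"
  using vR(4)[OF k q, of "shS k z"] z c by (simp add: shS_def embS_def)

lemma sw_mem: "y \<in> set (map sw (rev W)) \<longleftrightarrow> sw y \<in> set W"
proof -
  have "y \<in> sw ` set W \<longleftrightarrow> sw y \<in> set W"
  proof
    assume "y \<in> sw ` set W" then obtain x where "x \<in> set W" "y = sw x" by blast
    then show "sw y \<in> set W" by simp
  next
    assume "sw y \<in> set W" then have "sw (sw y) \<in> sw ` set W" by (rule imageI)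
    then show "y \<in> sw ` set W" by simp
  qed
  then show ?thesis by (simp only: set_map set_rev)
qed

theorem part_c:
  assumes st: "straight_road_map Vs Vt r src tgt m u H V" and b: "\<beta> \<in> Vs" and q: "q \<in> {1..u \<beta>}"
  shows "vjoin [(1, int (bS m \<beta>) - int (u \<beta>) + int q)]
               (pieces_V r src tgt m u H V \<beta> q @ [[(int (aS r src tgt m \<beta>), int q)]])
         = Some (rev (V \<beta> q))"
proof -
  define W where "W = V \<beta> q"
  have Wl: "lattice_path W" using Vf(1)[OF b q] by (simp add: W_def)
  define L where "L = map sw (rev W)"
  have Ll: "lattice_path L" using lp_rev_sw[OF Wl] by (simp add: L_def)
  have Wne: "W \<noteq> []" using lp_nonempty[OF Wl] .
  have hdL: "hd L = sw (1, int (bS m \<beta>) - int (u \<beta>) + int q)"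
    using Vf(3)[OF b q] Wne by (simp add: L_def W_def hd_map hd_rev)
  have lastL: "last L = sw (int (aS r src tgt m \<beta>), int q)"
    using Vf(4)[OF b q] Wne by (simp add: L_def W_def last_map last_rev)
  have Lm: "y \<in> set L \<longleftrightarrow> sw y \<in> set W" for y unfolding L_def by (rule sw_mem)
  define gP where "gP k p y \<longleftrightarrow> rO k < fst (sw y) \<and> fst (sw y) \<le> rO k + Mk k \<and> shS k (sw y) \<in> set (hR k p)" for k p y
  define Z where "Z k p = filter (gP k p) L" for k p
  let ?ks = "arrows_from r src \<beta>"
  let ?ps = "\<lambda>k. [1..<Suc (u (tgt k))]"
  have kmem: "k \<in> set ?ks \<Longrightarrow> k \<in> {1..r} \<and> src k = \<beta>" for k by (simp add: arrows_from_mem)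
  have qk: "k \<in> set ?ks \<Longrightarrow> q \<in> {1..u (src k)}" for k using kmem q by auto
  have piece_eq: "map sw (rev (map (eS k) (segV src tgt m H V k p q))) = Z k p" if k: "k \<in> set ?ks" for k p
  proof -
    have sk: "src k = \<beta>" using kmem[OF k] by simp
    have "segV src tgt m H V k p q = filter (\<lambda>x. x \<in> set (hR k p)) (vR k q)"
      by (simp add: segV_def hR_def vR_def)
    moreover have "vR k q = map (shS k) (filter (\<lambda>x. rO k < fst x \<and> fst x \<le> rO k + Mk k) W)"
      using sk by (simp add: vR_def restrS_def W_def Mk_def shS_def[abs_def])
    ultimately have "map (eS k) (segV src tgt m H V k p q)
       = map (eS k) (filter (\<lambda>x. x \<in> set (hR k p)) (map (shS k) (filter (\<lambda>x. rO k < fst x \<and> fst x \<le> rO k + Mk k) W)))"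
      by simp
    also have "\<dots> = filter (\<lambda>z. (rO k < fst z \<and> fst z \<le> rO k + Mk k) \<and> shS k z \<in> set (hR k p)) W"
      by (rule map_filter_shift) simp
    finally have "map sw (rev (map (eS k) (segV src tgt m H V k p q)))
        = map sw (rev (filter (\<lambda>z. (rO k < fst z \<and> fst z \<le> rO k + Mk k) \<and> shS k z \<in> set (hR k p)) W))"
      by simp
    also have "\<dots> = Z k p" by (simp add: map_sw_rev_filter Z_def gP_def[abs_def] L_def)
    finally show ?thesis .
  qed
  have pieces: "map (map sw) (pieces_V r src tgt m u H V \<beta> q) = concat (map (\<lambda>k. map (Z k) (?ps k)) ?ks)"
  proof -
    have "map (map sw) (pieces_V r src tgt m u H V \<beta> q)
        = concat (map (\<lambda>k. map (\<lambda>p. map sw (rev (map (eS k) (segV src tgt m H V k p q)))) (?ps k)) ?ks)"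
      by (simp add: pieces_V_def map_concat comp_def)
    also have "\<dots> = concat (map (\<lambda>k. map (Z k) (?ps k)) ?ks)"
    proof (rule arg_cong[where f = concat], rule map_cong[OF refl])
      fix k assume "k \<in> set ?ks"
      then show "map (\<lambda>p. map sw (rev (map (eS k) (segV src tgt m H V k p q)))) (?ps k) = map (Z k) (?ps k)"
        using piece_eq by (intro map_cong) auto
    qed
    finally show ?thesis .
  qed
  have blk: "is_block L (Z k p)" if k: "k \<in> set ?ks" and p: "p \<in> {1..u (tgt k)}" for k p
  proof -
    have k1: "k \<in> {1..r}" and sk: "src k = \<beta>" using kmem[OF k] by auto
    interpret pg: page "Mk k" "Nk k" "{1..u (tgt k)}" "{1..u (src k)}" "hR k" "vR k" by (rule page_k[OF st k1])
    have qk': "q \<in> {1..u (src k)}" using qk[OF k] .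
    have memv: "z \<in> set W \<Longrightarrow> rO k < fst z \<Longrightarrow> fst z \<le> rO k + Mk k \<Longrightarrow> shS k z \<in> set (vR k q)" for z
      using vR_mem_shS[OF k1 qk'] sk by (simp add: W_def)
    have conv: "gP k p w" if "y1 \<in> set L" "y2 \<in> set L" "w \<in> set L" "gP k p y1" "gP k p y2"
      "lvl y1 \<le> lvl w" "lvl w \<le> lvl y2" for y1 y2 w
    proof -
      have W3: "sw y1 \<in> set W" "sw y2 \<in> set W" "sw w \<in> set W" using that(1-3) Lm by auto
      have l1: "lvl (sw y2) \<le> lvl (sw w)" "lvl (sw w) \<le> lvl (sw y1)" using that(6,7) by (simp_all add: lvl_sw)
      have o1: "fst (sw w) \<le> fst (sw y2)" using lp_order[OF Wl W3(2) W3(3) l1(1)] by simp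
      have o2: "fst (sw y1) \<le> fst (sw w)" using lp_order[OF Wl W3(3) W3(1) l1(2)] by simp
      have cw: "rO k < fst (sw w)" "fst (sw w) \<le> rO k + Mk k" using o1 o2 that(4,5) by (auto simp: gP_def)
      have v1: "shS k (sw y1) \<in> set (vR k q)" "shS k (sw y2) \<in> set (vR k q)" "shS k (sw w) \<in> set (vR k q)"
        using memv W3 that(4,5) cw by (auto simp: gP_def)
      have h1: "shS k (sw y1) \<in> set (hR k p)" "shS k (sw y2) \<in> set (hR k p)" using that(4,5) by (auto simp: gP_def)
      have "lvl (shS k (sw y2)) \<le> lvl (shS k (sw w))" "lvl (shS k (sw w)) \<le> lvl (shS k (sw y1))"
        using l1 by (simp_all add: shS_lvl)
      from pg.C3v[OF p qk' h1(2) v1(2) h1(1) v1(1) v1(3) this] cw show ?thesis by (simp add: gP_def)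
    qed
    have ex: "\<exists>y\<in>set L. gP k p y"
    proof -
      obtain x where x: "x \<in> set (hR k p)" "x \<in> set (vR k q)" using pg.C2[OF p qk'] by blast
      have "eS k x \<in> set W" "1 \<le> fst x" "fst x \<le> Mk k" using vR(4)[OF k1 qk'] x(2) sk by (auto simp: W_def)
      then have "sw (eS k x) \<in> set L" by (simp add: Lm)
      moreover have "gP k p (sw (eS k x))" using x(1) \<open>1 \<le> fst x\<close> \<open>fst x \<le> Mk k\<close> unfolding gP_def sw_sw shS_eS
        by (simp add: embS_def)
      ultimately show ?thesis by blast
    qed
    show ?thesis unfolding Z_def by (rule fib(1)[OF Ll _ ex], (rule conv; assumption))
  qed
  have blocks: "\<forall>Y\<in>set (concat (map (\<lambda>k. map (Z k) (?ps k)) ?ks)). is_block L Y"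
    using blk by auto
  have ord: "\<forall>y\<in>set (Z k p). \<forall>y'\<in>set (Z k' p'). lvl y \<le> lvl y'"
    if k: "k \<in> set ?ks" "k' \<in> set ?ks" and p: "p \<in> set (?ps k)" "p' \<in> set (?ps k')"
      and lt: "k < k' \<or> (k = k' \<and> p < p')" for k p k' p'
  proof (intro ballI)
    fix y y' assume y: "y \<in> set (Z k p)" and y': "y' \<in> set (Z k' p')"
    have yL: "y \<in> set L" "gP k p y" and yL': "y' \<in> set L" "gP k' p' y'" using y y' by (auto simp: Z_def)
    have zW: "sw y \<in> set W" "sw y' \<in> set W" using yL(1) yL'(1) Lm by auto
    have k1: "k \<in> {1..r}" "src k = \<beta>" and k1': "k' \<in> {1..r}" "src k' = \<beta>" using kmem k by auto
    have "lvl (sw y') \<le> lvl (sw y)"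
      using lt
    proof
      assume kk: "k < k'"
      have "off src (\<lambda>k. m (tgt k)) k + m (tgt k) \<le> off src (\<lambda>k. m (tgt k)) k'"
        using off_mono[of k k' src] kk k1 k1' by simp
      then have "rO k + Mk k \<le> rO k'" by (simp add: rO_off Mk_def)
      then have "fst (sw y) < fst (sw y')" using yL(2) yL'(2) by (auto simp: gP_def)
      show ?thesis
      proof (rule ccontr)
        assume "\<not> ?thesis"
        then have "lvl (sw y) \<le> lvl (sw y')" by simp
        from lp_order[OF Wl zW(1) zW(2) this] \<open>fst (sw y) < fst (sw y')\<close> show False by simp
      qed
    next
      assume kk: "k = k' \<and> p < p'"
      then have pp: "p \<in> {1..u (tgt k)}" "p' \<in> {1..u (tgt k)}" "p < p'" using p by auto
      interpret pg: page "Mk k" "Nk k" "{1..u (tgt k)}" "{1..u (src k)}" "hR k" "vR k" by (rule page_k[OF st k1(1)])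
      have qk': "q \<in> {1..u (src k)}" using qk[OF k(1)] .
      have Ine: "{1..u (tgt k)} \<noteq> {}" using pp by auto
      have "shS k (sw y) \<in> set (vR k q)" "shS k (sw y') \<in> set (vR k q)"
        using vR_mem_shS[OF k1(1) qk'] zW yL(2) yL'(2) kk k1 by (auto simp: gP_def W_def)
      moreover have "shS k (sw y) \<in> set (hR k p)" "shS k (sw y') \<in> set (hR k p')" using yL(2) yL'(2) kk by (auto simp: gP_def)
      ultimately have "lvl (shS k (sw y')) < lvl (shS k (sw y))"
        using pg.C4'[OF Ine pp(2) pp(1) qk' hR_order[OF k1(1) pp]] by blast
      then show ?thesis by (simp add: shS_lvl)
    qed
    then show "lvl y \<le> lvl y'" by (simp add: lvl_sw)
  qed
  have sorted: "sorted_wrt (\<lambda>Y Y'. \<forall>z\<in>set Y. \<forall>z'\<in>set Y'. lvl z \<le> lvl z') (concat (map (\<lambda>k. map (Z k) (?ps k)) ?ks))"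
    by (rule sorted_concat_map2[OF arrows_from_sorted sorted_wrt_upt]) (rule ord; assumption)
  have cover: "\<exists>Y\<in>set (concat (map (\<lambda>k. map (Z k) (?ps k)) ?ks)). y \<in> set Y \<and> Np y \<in> set Y"
    if y: "y \<in> set L" "Np y \<in> set L" for y
  proof -
    define z0 where "z0 = sw (Np y)"
    have zz: "sw y = Ep z0" by (simp add: z0_def sw_def Np_def Ep_def)
    have z0W: "z0 \<in> set W" "Ep z0 \<in> set W" using y Lm zz by (auto simp: z0_def)
    have "1 \<le> fst z0" "fst z0 \<le> int (aS r src tgt m \<beta>)" using Vf(2)[OF b q] z0W(1) by (auto simp: in_grid_def W_def)
    from row_cover[OF b this] obtain k where k: "k \<in> {1..r}" "src k = \<beta>" "rO k < fst z0" "fst z0 \<le> rO k + Mk k" by blast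
    have ks: "k \<in> set ?ks" using k by (simp add: arrows_from_mem)
    interpret pg: page "Mk k" "Nk k" "{1..u (tgt k)}" "{1..u (src k)}" "hR k" "vR k" by (rule page_k[OF st k(1)])
    have qk': "q \<in> {1..u (src k)}" using qk[OF ks] .
    have Ine: "{1..u (tgt k)} \<noteq> {}" using stdT karr[OF k(1)] by force
    have "shS k z0 \<in> set (vR k q)" "shS k (Ep z0) \<in> set (vR k q)"
      using vR_mem_shS[OF k(1) qk'] z0W k by (auto simp: W_def Ep_def)
    then have "shS k z0 \<in> set (vR k q)" "Ep (shS k z0) \<in> set (vR k q)" by (simp_all add: shS_E)
    from pg.L1'[OF Ine qk' this] obtain p where p: "p \<in> {1..u (tgt k)}" "shS k z0 \<in> set (hR k p)" "Ep (shS k z0) \<in> set (hR k p)"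
      by blast
    have "fst (sw y) = fst z0" by (simp add: zz Ep_def)
    then have "gP k p y" "gP k p (Np y)" using p k zz unfolding gP_def z0_def[symmetric] by (auto simp: shS_E)
    then have "y \<in> set (Z k p)" "Np y \<in> set (Z k p)" using y by (auto simp: Z_def)
    moreover have "Z k p \<in> set (concat (map (\<lambda>k. map (Z k) (?ps k)) ?ks))"
    proof -
      have "p \<in> set (?ps k)" using p(1) by auto
      then have i1: "Z k p \<in> set (map (Z k) (?ps k))" by (simp only: set_map) (rule imageI)
      have i2: "map (Z k) (?ps k) \<in> set (map (\<lambda>k. map (Z k) (?ps k)) ?ks)" using ks
        by (simp only: set_map) (rule imageI)
      show ?thesis using i1 i2 by (simp only: set_concat) blast
    qed
    ultimately show ?thesis by blast
  qed
  have hj: "hjoin [hd L] (concat (map (\<lambda>k. map (Z k) (?ps k)) ?ks) @ [[last L]]) = Some L"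
    by (rule hjoin_main'[OF Ll blocks sorted cover])
  have "vjoin [(1, int (bS m \<beta>) - int (u \<beta>) + int q)] (pieces_V r src tgt m u H V \<beta> q @ [[(int (aS r src tgt m \<beta>), int q)]])
      = map_option (map sw) (hjoin [hd L] (concat (map (\<lambda>k. map (Z k) (?ps k)) ?ks) @ [[last L]]))"
  proof -
    have e1: "map sw [(1, int (bS m \<beta>) - int (u \<beta>) + int q)] = [hd L]" by (simp add: hdL)
    have e2: "map (map sw) (pieces_V r src tgt m u H V \<beta> q @ [[(int (aS r src tgt m \<beta>), int q)]])
        = map (map sw) (pieces_V r src tgt m u H V \<beta> q) @ [[last L]]" by (simp add: lastL)
    show ?thesis unfolding vjoin_sw e1 e2 pieces ..
  qed
  also have "\<dots> = Some (rev W)" using hj by (simp add: L_def)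
  finally show ?thesis by (simp add: W_def)
qed

end


lemma corner_pair:
  assumes "c \<in> corners P"
  obtains n where "0 < n" "Suc n < length P" "P ! n = c"
    "fst (P ! (n - 1)) \<noteq> fst (P ! n) \<or> fst (P ! n) \<noteq> fst (P ! Suc n)"
  using assms unfolding corners_def by blast

context quiv begin

theorem part_conv:
  assumes cb: "\<forall>\<alpha>\<in>Vt. \<forall>p\<in>{1..u \<alpha>}.
         hjoin [(int (aT m \<alpha>) - int (u \<alpha>) + int p, 1)]
               (pieces_H r src tgt m u H V \<alpha> p @ [[(int p, int (bT r src tgt m \<alpha>))]])
         = Some (H \<alpha> p)"
    and cc: "\<forall>\<beta>\<in>Vs. \<forall>q\<in>{1..u \<beta>}.
         vjoin [(1, int (bS m \<beta>) - int (u \<beta>) + int q)]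
               (pieces_V r src tgt m u H V \<beta> q @ [[(int (aS r src tgt m \<beta>), int q)]])
         = Some (rev (V \<beta> q))"
  shows "straight_road_map Vs Vt r src tgt m u H V"
  unfolding straight_road_map_def
proof (intro conjI ballI)
  fix \<alpha> p c assume a: "\<alpha> \<in> Vt" and p: "p \<in> {1..u \<alpha>}" and c: "c \<in> corners (H \<alpha> p)"
  define S where "S = \<Union> (set ` set (pieces_H r src tgt m u H V \<alpha> p))"
  define Rel where "Rel x y \<longleftrightarrow> fst x = fst y \<or> (x \<in> S \<and> y \<in> S)" for x y :: pt
  have hj: "hjoin [(int (aT m \<alpha>) - int (u \<alpha>) + int p, 1)]
               (pieces_H r src tgt m u H V \<alpha> p @ [[(int p, int (bT r src tgt m \<alpha>))]]) = Some (H \<alpha> p)"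
    using cb a p by blast
  have sY: "\<forall>Y\<in>set (pieces_H r src tgt m u H V \<alpha> p @ [[(int p, int (bT r src tgt m \<alpha>))]]). successively Rel Y"
  proof
    fix Y assume Y: "Y \<in> set (pieces_H r src tgt m u H V \<alpha> p @ [[(int p, int (bT r src tgt m \<alpha>))]])"
    show "successively Rel Y"
    proof (cases "Y \<in> set (pieces_H r src tgt m u H V \<alpha> p)")
      case True
      then have "set Y \<subseteq> S" by (auto simp: S_def)
      then show ?thesis unfolding successively_conv_nth Rel_def by auto
    next
      case False
      then have "Y = [(int p, int (bT r src tgt m \<alpha>))]" using Y by simp
      then show ?thesis by simp
    qed
  qed
  have sH: "successively Rel (H \<alpha> p)"
    by (rule hjoin_inv[OF hj _ sY]) (simp_all add: Rel_def)
  obtain n where n: "0 < n" "Suc n < length (H \<alpha> p)" "H \<alpha> p ! n = c"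
    "fst (H \<alpha> p ! (n - 1)) \<noteq> fst (H \<alpha> p ! n) \<or> fst (H \<alpha> p ! n) \<noteq> fst (H \<alpha> p ! Suc n)"
    using corner_pair[OF c] by blast
  have r1: "Rel (H \<alpha> p ! (n - 1)) (H \<alpha> p ! n)" using successively_nth[OF sH, of "n - 1"] n by simp
  have r2: "Rel (H \<alpha> p ! n) (H \<alpha> p ! Suc n)" using successively_nth[OF sH, of n] n by simp
  have "c \<in> S" using r1 r2 n unfolding Rel_def by auto
  then obtain Y where Y: "Y \<in> set (pieces_H r src tgt m u H V \<alpha> p)" "c \<in> set Y" by (auto simp: S_def)
  then obtain k q where kq: "k \<in> set (arrows_into r tgt \<alpha>)" "q \<in> set [1..<Suc (u (src k))]"
    "Y = map (eT k) (segH src tgt m H V k p q)"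
    unfolding pieces_H_def by auto
  have k: "k \<in> {1..r}" "tgt k = \<alpha>" using kq(1) by (simp_all add: arrows_into_mem)
  have q: "q \<in> {1..u (src k)}" using kq(2) by auto
  have pk: "p \<in> {1..u (tgt k)}" using p k by simp
  obtain x where x: "x \<in> set (segH src tgt m H V k p q)" "c = eT k x" using Y(2) kq(3) by auto
  have xh: "x \<in> set (hR k p)" and xv: "x \<in> set (vR k q)" using x(1) by (auto simp: segH_def hR_def vR_def)
  have "eT k x \<in> set (H (tgt k) p)" "1 \<le> snd x" "snd x \<le> Nk k" using hR(4)[OF k(1) pk] xh by auto
  moreover have "eS k x \<in> set (V (src k) q)" "1 \<le> fst x" "fst x \<le> Mk k" using vR(4)[OF k(1) q] xv by auto
  ultimately show "\<exists>k\<in>{1..r}. \<exists>x. tgt k = \<alpha> \<and>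
          1 \<le> fst x \<and> fst x \<le> int (m (tgt k)) \<and> 1 \<le> snd x \<and> snd x \<le> int (m (src k)) \<and>
          c = embT src tgt m k x \<and>
          (\<exists>q\<in>{1..u (src k)}. embS src tgt m k x \<in> set (V (src k) q))"
    using k q x(2) by (intro bexI[of _ k] exI[of _ x]) (auto simp: Mk_def Nk_def)
next
  fix \<beta> q c assume b: "\<beta> \<in> Vs" and q: "q \<in> {1..u \<beta>}" and c: "c \<in> corners (V \<beta> q)"
  define S where "S = \<Union> (set ` set (pieces_V r src tgt m u H V \<beta> q))"
  define Rel where "Rel x y \<longleftrightarrow> fst x = fst y \<or> (sw x \<in> S \<and> sw y \<in> S)" for x y :: pt
  have vj: "vjoin [(1, int (bS m \<beta>) - int (u \<beta>) + int q)]
               (pieces_V r src tgt m u H V \<beta> q @ [[(int (aS r src tgt m \<beta>), int q)]]) = Some (rev (V \<beta> q))"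
    using cc b q by blast
  then obtain R where R: "hjoin (map sw [(1, int (bS m \<beta>) - int (u \<beta>) + int q)])
      (map (map sw) (pieces_V r src tgt m u H V \<beta> q @ [[(int (aS r src tgt m \<beta>), int q)]])) = Some R"
      "map sw R = rev (V \<beta> q)"
    unfolding vjoin_sw by blast
  have sY: "\<forall>Y\<in>set (map (map sw) (pieces_V r src tgt m u H V \<beta> q @ [[(int (aS r src tgt m \<beta>), int q)]])). successively Rel Y"
  proof
    fix Y assume Y: "Y \<in> set (map (map sw) (pieces_V r src tgt m u H V \<beta> q @ [[(int (aS r src tgt m \<beta>), int q)]]))"
    then obtain Y0 where Y0: "Y0 \<in> set (pieces_V r src tgt m u H V \<beta> q @ [[(int (aS r src tgt m \<beta>), int q)]])" "Y = map sw Y0"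
      by (simp only: set_map) blast
    show "successively Rel Y"
    proof (cases "Y0 \<in> set (pieces_V r src tgt m u H V \<beta> q)")
      case True
      then have "set Y0 \<subseteq> S" by (auto simp: S_def)
      then show ?thesis unfolding Y0(2) successively_map successively_conv_nth Rel_def by auto
    next
      case False
      then have "Y0 = [(int (aS r src tgt m \<beta>), int q)]" using Y0 by simp
      then show ?thesis using Y0(2) by simp
    qed
  qed
  have sR: "successively Rel R"
    by (rule hjoin_inv[OF R(1) _ sY]) (simp_all add: Rel_def)
  have "R = map sw (rev (V \<beta> q))" using R(2) by (metis map_sw_sw)
  with sR have sV: "successively (\<lambda>x y. snd y = snd x \<or> (x \<in> S \<and> y \<in> S)) (V \<beta> q)"
    by (simp add: successively_map Rel_def conj_commute)
  have Vl: "lattice_path (V \<beta> q)" using Vf(1)[OF b q] .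
  obtain n where n: "0 < n" "Suc n < length (V \<beta> q)" "V \<beta> q ! n = c"
    "fst (V \<beta> q ! (n - 1)) \<noteq> fst (V \<beta> q ! n) \<or> fst (V \<beta> q ! n) \<noteq> fst (V \<beta> q ! Suc n)"
    using corner_pair[OF c] by blast
  have xor: "(fst (V \<beta> q ! (n - 1)) = fst (V \<beta> q ! n)) \<noteq> (fst (V \<beta> q ! n) = fst (V \<beta> q ! Suc n))"
    using c n(3) unfolding corners_def
    by (smt (verit) mem_Collect_eq n(1) n(2) nth_eq_iff_index_eq lp_distinct[OF Vl] Suc_lessD)
  have st1: "V \<beta> q ! n = Ep (V \<beta> q ! (n - 1)) \<or> V \<beta> q ! n = Np (V \<beta> q ! (n - 1))"
    using lp_step[OF Vl, of "n - 1"] n by simp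
  have st2: "V \<beta> q ! Suc n = Ep (V \<beta> q ! n) \<or> V \<beta> q ! Suc n = Np (V \<beta> q ! n)"
    using lp_step[OF Vl, of n] n by simp
  have r1: "snd (V \<beta> q ! n) = snd (V \<beta> q ! (n - 1)) \<or> (V \<beta> q ! (n - 1) \<in> S \<and> V \<beta> q ! n \<in> S)"
    using successively_nth[OF sV, of "n - 1"] n by simp
  have r2: "snd (V \<beta> q ! Suc n) = snd (V \<beta> q ! n) \<or> (V \<beta> q ! n \<in> S \<and> V \<beta> q ! Suc n \<in> S)"
    using successively_nth[OF sV, of n] n by simp
  have "c \<in> S"
  proof (cases "fst (V \<beta> q ! (n - 1)) = fst (V \<beta> q ! n)")
    case True
    have "V \<beta> q ! n \<noteq> Np (V \<beta> q ! (n - 1))"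
    proof
      assume "V \<beta> q ! n = Np (V \<beta> q ! (n - 1))"
      then have "fst (V \<beta> q ! n) = fst (V \<beta> q ! (n - 1)) - 1" by (simp add: Np_def)
      with True show False by simp
    qed
    then have "V \<beta> q ! n = Ep (V \<beta> q ! (n - 1))" using st1 by blast
    then have "snd (V \<beta> q ! n) \<noteq> snd (V \<beta> q ! (n - 1))" by (simp add: Ep_def)
    then show ?thesis using r1 n(3) by blast
  next
    case False
    then have "fst (V \<beta> q ! n) = fst (V \<beta> q ! Suc n)" using xor by blast
    have "V \<beta> q ! Suc n \<noteq> Np (V \<beta> q ! n)"
    proof
      assume "V \<beta> q ! Suc n = Np (V \<beta> q ! n)"
      then have "fst (V \<beta> q ! Suc n) = fst (V \<beta> q ! n) - 1" by (simp add: Np_def)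
      with \<open>fst (V \<beta> q ! n) = fst (V \<beta> q ! Suc n)\<close> show False by simp
    qed
    then have "V \<beta> q ! Suc n = Ep (V \<beta> q ! n)" using st2 by blast
    then have "snd (V \<beta> q ! Suc n) \<noteq> snd (V \<beta> q ! n)" by (simp add: Ep_def)
    then show ?thesis using r2 n(3) by blast
  qed
  then obtain Y where Y: "Y \<in> set (pieces_V r src tgt m u H V \<beta> q)" "c \<in> set Y" by (auto simp: S_def)
  then obtain k p where kp: "k \<in> set (arrows_from r src \<beta>)" "p \<in> set [1..<Suc (u (tgt k))]"
    "Y = rev (map (eS k) (segV src tgt m H V k p q))"
    unfolding pieces_V_def by auto
  have k: "k \<in> {1..r}" "src k = \<beta>" using kp(1) by (simp_all add: arrows_from_mem)
  have p: "p \<in> {1..u (tgt k)}" using kp(2) by auto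
  have qk: "q \<in> {1..u (src k)}" using q k by simp
  obtain x where x: "x \<in> set (segV src tgt m H V k p q)" "c = eS k x" using Y(2) kp(3) by auto
  have xh: "x \<in> set (hR k p)" and xv: "x \<in> set (vR k q)" using x(1) by (auto simp: segV_def hR_def vR_def)
  have "eT k x \<in> set (H (tgt k) p)" "1 \<le> snd x" "snd x \<le> Nk k" using hR(4)[OF k(1) p] xh by auto
  moreover have "eS k x \<in> set (V (src k) q)" "1 \<le> fst x" "fst x \<le> Mk k" using vR(4)[OF k(1) qk] xv by auto
  ultimately show "\<exists>k\<in>{1..r}. \<exists>x. src k = \<beta> \<and>
          1 \<le> fst x \<and> fst x \<le> int (m (tgt k)) \<and> 1 \<le> snd x \<and> snd x \<le> int (m (src k)) \<and>
          c = embS src tgt m k x \<and>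
          (\<exists>p\<in>{1..u (tgt k)}. embT src tgt m k x \<in> set (H (tgt k) p))"
    using k p x(2) by (intro bexI[of _ k] exI[of _ x]) (auto simp: Mk_def Nk_def)
qed

end


theorem lemma2p2:
  fixes Vs Vt :: "'v set" and r :: nat and src tgt :: "nat \<Rightarrow> 'v"
    and m u :: "'v \<Rightarrow> nat" and H V :: "'v \<Rightarrow> nat \<Rightarrow> pt list"
  assumes bip: "Vs \<inter> Vt = {}"
    and arrows: "\<forall>k\<in>{1..r}. src k \<in> Vs \<and> tgt k \<in> Vt"
    and stdT: "\<forall>\<alpha>\<in>Vt. 0 < u \<alpha> \<and> u \<alpha> \<le> min (aT m \<alpha>) (bT r src tgt m \<alpha>) \<and> u \<alpha> \<le> vT r src tgt u \<alpha>"
    and stdS: "\<forall>\<beta>\<in>Vs. 0 < u \<beta> \<and> u \<beta> \<le> min (aS r src tgt m \<beta>) (bS m \<beta>) \<and> u \<beta> \<le> vS r src tgt u \<beta>"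
    and rm: "road_map Vs Vt r src tgt m u H V"
  shows "straight_road_map Vs Vt r src tgt m u H V \<longleftrightarrow>
     ((\<forall>k\<in>{1..r}. \<forall>p\<in>{1..u (tgt k)}. \<forall>q\<in>{1..u (src k)}. connected_inter src tgt m H V k p q) \<and>
      (\<forall>\<alpha>\<in>Vt. \<forall>p\<in>{1..u \<alpha>}.
         hjoin [(int (aT m \<alpha>) - int (u \<alpha>) + int p, 1)]
               (pieces_H r src tgt m u H V \<alpha> p @ [[(int p, int (bT r src tgt m \<alpha>))]])
         = Some (H \<alpha> p)) \<and>
      (\<forall>\<beta>\<in>Vs. \<forall>q\<in>{1..u \<beta>}.
         vjoin [(1, int (bS m \<beta>) - int (u \<beta>) + int q)]
               (pieces_V r src tgt m u H V \<beta> q @ [[(int (aS r src tgt m \<beta>), int q)]])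
         = Some (rev (V \<beta> q))))"
proof -
  interpret quiv Vs Vt r src tgt m u H V
    using bip arrows stdT stdS rm by (rule quiv.intro)
  show ?thesis
  proof
    assume st: "straight_road_map Vs Vt r src tgt m u H V"
    show "(\<forall>k\<in>{1..r}. \<forall>p\<in>{1..u (tgt k)}. \<forall>q\<in>{1..u (src k)}. connected_inter src tgt m H V k p q) \<and>
      (\<forall>\<alpha>\<in>Vt. \<forall>p\<in>{1..u \<alpha>}.
         hjoin [(int (aT m \<alpha>) - int (u \<alpha>) + int p, 1)]
               (pieces_H r src tgt m u H V \<alpha> p @ [[(int p, int (bT r src tgt m \<alpha>))]])
         = Some (H \<alpha> p)) \<and>
      (\<forall>\<beta>\<in>Vs. \<forall>q\<in>{1..u \<beta>}.
         vjoin [(1, int (bS m \<beta>) - int (u \<beta>) + int q)]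
               (pieces_V r src tgt m u H V \<beta> q @ [[(int (aS r src tgt m \<beta>), int q)]])
         = Some (rev (V \<beta> q)))"
      using part_a[OF st] part_b[OF st] part_c[OF st] by blast
  next
    assume h: "(\<forall>k\<in>{1..r}. \<forall>p\<in>{1..u (tgt k)}. \<forall>q\<in>{1..u (src k)}. connected_inter src tgt m H V k p q) \<and>
      (\<forall>\<alpha>\<in>Vt. \<forall>p\<in>{1..u \<alpha>}.
         hjoin [(int (aT m \<alpha>) - int (u \<alpha>) + int p, 1)]
               (pieces_H r src tgt m u H V \<alpha> p @ [[(int p, int (bT r src tgt m \<alpha>))]])
         = Some (H \<alpha> p)) \<and>
      (\<forall>\<beta>\<in>Vs. \<forall>q\<in>{1..u \<beta>}.
         vjoin [(1, int (bS m \<beta>) - int (u \<beta>) + int q)]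
               (pieces_V r src tgt m u H V \<beta> q @ [[(int (aS r src tgt m \<beta>), int q)]])
         = Some (rev (V \<beta> q)))"
    show "straight_road_map Vs Vt r src tgt m u H V"
      by (rule part_conv) (use h in blast)+
  qed
qed


end
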